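(* The classes $\#\mathrm{para}_{W}\text{-}\mathrm{L}$ and $\#\mathrm{para}_{\beta}\text{-}\mathrm{L}$ are closed under para-logspace parsimonious reductions: if $F\le^{\mathrm{plog}}_{\mathrm{pars}}F'$ and $F'$ belongs to the class, then $F$ belongs to the class.
   Context: Inputs are pairs $(x,k)$, $x\in\{0,1\}^*$, parameter $k\in\mathbb N$; parameterised functions are $F:\{0,1\}^*\times\mathbb N\to\mathbb N$. Machines are TMs with random access to the input; a nondeterministic TM is a deterministic TM with an extra read-only choice tape (not counted for space), a nondeterministic step being a step in which the choice-tape head visits a new cell; $\#\mathrm{acc}_M(x,k)$ is the number of accepting computation paths. A $\mathrm{para}\text{-}\mathrm{L}$-machine uses space $O(\log|x|+f(k))$ for some computable $f$. A nondeterministic machine is $k$-bounded if for a computable $f$ it reads at most $f(k)\cdot\log|x|$ choice-tape bits on every input $(x,k)$; read-once access means the choice-tape head moves only one way. $\#\mathrm{para}_{W}\text{-}\mathrm{L}$: parameterised functions $F$ with a $k$-bounded nondeterministic $\mathrm{para}\text{-}\mathrm{L}$-machine $M$ such that $\#\mathrm{acc}_M(x,k)=F(x,k)$ for all $(x,k)$; $\#\mathrm{para}_{\beta}\text{-}\mathrm{L}$: the same with $M$ additionally having read-once access. $F\le^{\mathrm{plog}}_{\mathrm{pars}}F'$ (para-logspace parsimonious reduction) means there is a $\mathrm{para}\text{-}\mathrm{L}$ oracle TM (oracle tape exempt from space bounds) computing $F$ with oracle $F'$ such that the parameter of any oracle query is bounded by a computable function of the input parameter and the machine returns the answer of its first (only)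 oracle query. *)

theory Defs
  imports Main "HOL-Library.Discrete_Functions"
begin

datatype recf = Zr | Sc | Proj nat | Comp recf "recf list" | Prim recf recf | Mu recf

inductive reval :: "recf \<Rightarrow> nat list \<Rightarrow> nat \<Rightarrow> bool" where
  "reval Zr xs 0"
| "reval Sc (x # xs) (Suc x)"
| "i < length xs \<Longrightarrow> reval (Proj i) xs (xs ! i)"
| "list_all2 (\<lambda>g y. reval g xs y) gs ys \<Longrightarrow> reval f ys z \<Longrightarrow> reval (Comp f gs) xs z"
| "reval f xs z \<Longrightarrow> reval (Prim f g) (0 # xs) z"
| "reval (Prim f g) (n # xs) y \<Longrightarrow> reval g (y # n # xs) z \<Longrightarrow> reval (Prim f g) (Suc n # xs) z"
| "reval f (n # xs) 0 \<Longrightarrow> (\<forall>m<n. \<exists>y>0. reval f (m # xs) y) \<Longrightarrow> reval (Mu f) xs n"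

definition computable :: "(nat \<Rightarrow> nat) \<Rightarrow> bool" where
  "computable f \<longleftrightarrow> (\<exists>r. \<forall>n. reval r [n] (f n))"

fun bin :: "nat \<Rightarrow> bool list" where
  "bin 0 = []"
| "bin (Suc n) = odd (Suc n) # bin (Suc n div 2)"

text \<open>Input symbols: 0, 1 for bits, 2 for the separator; parameter in binary (LSB first).\<close>
definition enc :: "bool list \<Rightarrow> nat \<Rightarrow> nat list" where
  "enc x k = map (\<lambda>b. if b then 1 else 0) x @ [2] @ map (\<lambda>b. if b then 1 else 0) (bin k)"

text \<open>Logarithm of the input length (bit length convention, at least 1).\<close>
definition lg :: "nat \<Rightarrow> nat" where
  "lg n = floor_log n + 1"

datatype move = L | N | R

fun mv :: "move \<Rightarrow> nat \<Rightarrow> nat" where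
  "mv L h = h - 1" | "mv N h = h" | "mv R h = h + 1"

text \<open>A machine has a work tape, an index tape (alphabet: 0 blank, 1 bit 0, 2 bit 1) giving random
  access to the input, a read-only choice tape (cell 0 is a left-end marker, cells 1,2,... hold
  the choice bits), and a write-only append-only oracle tape (exempt from the space bound).
  Transition arguments: state, input symbol at index (None if out of range), work symbol,
  index symbol, choice symbol (None = left marker).  Result: new state, work symbol written,
  work move, index symbol written, index move, choice move, oracle symbol appended (if any).\<close>
record tm =
  nstates :: nat
  nsyms :: nat
  delta :: "nat \<Rightarrow> nat option \<Rightarrow> nat \<Rightarrow> nat \<Rightarrow> bool option
            \<Rightarrow> nat \<times> nat \<times> move \<times> nat \<times> move \<times> move \<times> nat option"
  accst :: nat
  rejst :: nat

definition wf_tm :: "tm \<Rightarrow> bool" where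
  "wf_tm M \<longleftrightarrow> 0 < nstates M \<and> accst M < nstates M \<and> rejst M < nstates M \<and> accst M \<noteq> rejst M
     \<and> 3 \<le> nsyms M \<and>
     (\<forall>q a s i c. q < nstates M \<longrightarrow> s < nsyms M \<longrightarrow> i < nsyms M \<longrightarrow>
        (case delta M q a s i c of (q', s', _, i', _, _, ow) \<Rightarrow>
           q' < nstates M \<and> s' < nsyms M \<and> i' < nsyms M \<and> (\<forall>b. ow = Some b \<longrightarrow> b < 3)))"

record cfg =
  st :: nat
  wt :: "nat \<Rightarrow> nat"
  wh :: nat
  it :: "nat \<Rightarrow> nat"
  ih :: nat
  ch :: nat
  orc :: "nat list"

definition idxval :: "(nat \<Rightarrow> nat) \<Rightarrow> nat" where
  "idxval t = (\<Sum>i\<in>{i. t i = 2}. 2 ^ i)"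

definition inp :: "nat list \<Rightarrow> nat \<Rightarrow> nat option" where
  "inp w p = (if p < length w then Some (w ! p) else None)"

definition chsym :: "(nat \<Rightarrow> bool) \<Rightarrow> nat \<Rightarrow> bool option" where
  "chsym c h = (if h = 0 then None else Some (c (h - 1)))"

definition init_cfg :: cfg where
  "init_cfg = \<lparr>st = 0, wt = (\<lambda>_. 0), wh = 0, it = (\<lambda>_. 0), ih = 0, ch = 0, orc = []\<rparr>"

definition step :: "tm \<Rightarrow> nat list \<Rightarrow> (nat \<Rightarrow> bool) \<Rightarrow> cfg \<Rightarrow> cfg" where
  "step M w c C =
    (if st C = accst M \<or> st C = rejst M then C else
      (case delta M (st C) (inp w (idxval (it C))) (wt C (wh C)) (it C (ih C)) (chsym c (ch C)) of
        (q', s', mw, i', mi, mc, ow) \<Rightarrow>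
          C\<lparr>st := q', wt := (wt C)(wh C := s'), wh := mv mw (wh C),
            it := (it C)(ih C := i'), ih := mv mi (ih C), ch := mv mc (ch C),
            orc := orc C @ (case ow of None \<Rightarrow> [] | Some b \<Rightarrow> [b])\<rparr>))"

definition run :: "tm \<Rightarrow> nat list \<Rightarrow> (nat \<Rightarrow> bool) \<Rightarrow> nat \<Rightarrow> cfg" where
  "run M w c t = (step M w c ^^ t) init_cfg"

text \<open>Accepting computation paths: a path is identified with the finite sequence of choice bits
  it reads (the cells visited by the choice head, i.e. its nondeterministic steps).\<close>
definition acc_path :: "tm \<Rightarrow> nat list \<Rightarrow> bool list \<Rightarrow> bool" where
  "acc_path M w u \<longleftrightarrow>
     (let c = (\<lambda>i. i < length u \<and> u ! i) in
      \<exists>t. st (run M w c t) = accst M \<and> (\<forall>t'\<le>t. ch (run M w c t') \<le> length u)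
          \<and> (\<exists>t'\<le>t. ch (run M w c t') = length u))"

definition nacc :: "tm \<Rightarrow> nat list \<Rightarrow> nat" where
  "nacc M w = card {u. acc_path M w u}"

definition paraL_space :: "tm \<Rightarrow> bool" where
  "paraL_space M \<longleftrightarrow> (\<exists>f c. computable f \<and>
     (\<forall>x k ch' t. wh (run M (enc x k) ch' t) + ih (run M (enc x k) ch' t)
                    \<le> c * (lg (length x) + f k)))"

definition k_bounded :: "tm \<Rightarrow> bool" where
  "k_bounded M \<longleftrightarrow> (\<exists>f. computable f \<and>
     (\<forall>x k c t. ch (run M (enc x k) c t) \<le> f k * lg (length x)))"

definition read_once :: "tm \<Rightarrow> bool" where
  "read_once M \<longleftrightarrow> (\<forall>x k c t. ch (run M (enc x k) c t) \<le> ch (run M (enc x k) c (Suc t)))"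

definition deterministic :: "tm \<Rightarrow> bool" where
  "deterministic M \<longleftrightarrow> (\<forall>w t. ch (run M w (\<lambda>_. False) t) = 0)"

definition sharp_para_W_L :: "(bool list \<Rightarrow> nat \<Rightarrow> nat) set" where
  "sharp_para_W_L = {F. \<exists>M. wf_tm M \<and> paraL_space M \<and> k_bounded M \<and>
                          (\<forall>x k. nacc M (enc x k) = F x k)}"

definition sharp_para_beta_L :: "(bool list \<Rightarrow> nat \<Rightarrow> nat) set" where
  "sharp_para_beta_L = {F. \<exists>M. wf_tm M \<and> paraL_space M \<and> k_bounded M \<and> read_once M \<and>
                          (\<forall>x k. nacc M (enc x k) = F x k)}"

text \<open>A deterministic para-L oracle machine that halts on every input, having written its single
  oracle query (x', k') (encoded as enc x' k') on the oracle tape; it returns the oracle answer,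
  so F x k = F' x' k'.\<close>
definition plog_pars_red :: "(bool list \<Rightarrow> nat \<Rightarrow> nat) \<Rightarrow> (bool list \<Rightarrow> nat \<Rightarrow> nat) \<Rightarrow> bool" where
  "plog_pars_red F F' \<longleftrightarrow> (\<exists>M g. wf_tm M \<and> deterministic M \<and> paraL_space M \<and> computable g \<and>
     (\<forall>x k. \<exists>t x' k'. (st (run M (enc x k) (\<lambda>_. False) t) = accst M \<or>
                        st (run M (enc x k) (\<lambda>_. False) t) = rejst M)
                     \<and> orc (run M (enc x k) (\<lambda>_. False) t) = enc x' k'
                     \<and> k' \<le> g k \<and> F x k = F' x' k'))"

end

theory Submission
  imports Defs "HOL-Library.Nat_Bijection"
begin

section \<open>Computability toolkit\<close>

lemma reval_proj: "i < length xs \<Longrightarrow> y = xs ! i \<Longrightarrow> reval (Proj i) xs y"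
  using reval.intros(3) by simp

lemmas rv = reval.intros(1,2,4,5,6,7) reval_proj

definition radd :: recf where "radd = Prim (Proj 0) (Comp Sc [Proj 0])"

lemma reval_add: "reval radd [n, m] (n + m)"
proof (induction n)
  case 0
  then show ?case unfolding radd_def by (rule reval.intros(5)) (rule reval_proj; simp)
next
  case (Suc n)
  have "reval (Comp Sc [Proj 0]) [n + m, n, m] (Suc (n + m))"
    by (rule reval.intros(4)[where ys="[n+m]"]) (auto intro: rv)
  then show ?case using Suc unfolding radd_def by (auto intro: rv)
qed

definition rmul :: recf where "rmul = Prim Zr (Comp radd [Proj 0, Proj 2])"

lemma reval_mul: "reval rmul [n, m] (n * m)"
proof (induction n)
  case 0
  then show ?case unfolding rmul_def by (auto intro: rv)
next
  case (Suc n)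
  have "reval (Comp radd [Proj 0, Proj 2]) [n * m, n, m] (n * m + m)"
    by (rule reval.intros(4)[where ys="[n*m, m]"]) (auto intro: rv reval_add)
  then show ?case using Suc unfolding rmul_def by (auto intro: rv simp: add.commute)
qed

lemma computable_const: "computable (\<lambda>_. c)"
proof (induction c)
  case 0
  then show ?case unfolding computable_def by (auto intro: rv)
next
  case (Suc c)
  then obtain r where r: "\<forall>n. reval r [n] c" unfolding computable_def by auto
  have "reval (Comp Sc [r]) [n] (Suc c)" for n
    by (rule reval.intros(4)[where ys="[c]"]) (use r in \<open>auto intro: rv\<close>)
  then show ?case unfolding computable_def by blast
qed

lemma computable_id: "computable (\<lambda>n. n)"
  unfolding computable_def by (rule exI[of _ "Proj 0"]) (auto intro: rv)

lemma computable_comp: "computable f \<Longrightarrow> computable g \<Longrightarrow> computable (\<lambda>n. f (g n))"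
proof -
  assume "computable f" "computable g"
  then obtain rf rg where rf: "\<forall>n. reval rf [n] (f n)" and rg: "\<forall>n. reval rg [n] (g n)"
    unfolding computable_def by auto
  have "reval (Comp rf [rg]) [n] (f (g n))" for n
    by (rule reval.intros(4)[where ys="[g n]"]) (use rf rg in auto)
  then show ?thesis unfolding computable_def by blast
qed

lemma computable_add: "computable f \<Longrightarrow> computable g \<Longrightarrow> computable (\<lambda>n. f n + g n)"
proof -
  assume "computable f" "computable g"
  then obtain rf rg where rf: "\<forall>n. reval rf [n] (f n)" and rg: "\<forall>n. reval rg [n] (g n)"
    unfolding computable_def by auto
  have "reval (Comp radd [rf, rg]) [n] (f n + g n)" for n
    by (rule reval.intros(4)[where ys="[f n, g n]"]) (use rf rg reval_add in auto)
  then show ?thesis unfolding computable_def by blast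
qed

lemma computable_mul: "computable f \<Longrightarrow> computable g \<Longrightarrow> computable (\<lambda>n. f n * g n)"
proof -
  assume "computable f" "computable g"
  then obtain rf rg where rf: "\<forall>n. reval rf [n] (f n)" and rg: "\<forall>n. reval rg [n] (g n)"
    unfolding computable_def by auto
  have "reval (Comp rmul [rf, rg]) [n] (f n * g n)" for n
    by (rule reval.intros(4)[where ys="[f n, g n]"]) (use rf rg reval_mul in auto)
  then show ?thesis unfolding computable_def by blast
qed

lemma computable_sum: "computable f \<Longrightarrow> computable (\<lambda>n. \<Sum>j\<le>n. f j)"
proof -
  assume "computable f"
  then obtain rf where rf: "\<forall>n. reval rf [n] (f n)" unfolding computable_def by auto
  define base where "base = Comp rf [Zr]"
  define stp where "stp = Comp radd [Proj 0, Comp rf [Comp Sc [Proj 1]]]"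
  have b: "reval base [] (f 0)" unfolding base_def
    by (rule reval.intros(4)[where ys="[0]"]) (use rf in \<open>auto intro: rv\<close>)
  have s: "reval stp [y, n] (y + f (Suc n))" for y n
  proof -
    have 1: "reval (Comp Sc [Proj 1]) [y, n] (Suc n)"
      by (rule reval.intros(4)[where ys="[n]"]) (auto intro: rv)
    have 2: "reval (Comp rf [Comp Sc [Proj 1]]) [y, n] (f (Suc n))"
      by (rule reval.intros(4)[where ys="[Suc n]"]) (use 1 rf in auto)
    show ?thesis unfolding stp_def
      by (rule reval.intros(4)[where ys="[y, f (Suc n)]"]) (use 2 reval_add in \<open>auto intro: rv\<close>)
  qed
  have "reval (Prim base stp) [n] (\<Sum>j\<le>n. f j)" for n
  proof (induction n)
    case 0 then show ?case using b by (auto intro: rv)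
  next
    case (Suc n)
    show ?case using reval.intros(6)[OF Suc.IH s[of "\<Sum>j\<le>n. f j" n]] by simp
  qed
  then show ?thesis unfolding computable_def by blast
qed


section \<open>Generic facts about runs\<close>

lemma run_0[simp]: "run M w c 0 = init_cfg" by (simp add: run_def)
lemma run_Suc: "run M w c (Suc t) = step M w c (run M w c t)" by (simp add: run_def)
lemma run_add: "run M w c (t + s) = (step M w c ^^ s) (run M w c t)"
  by (simp add: run_def funpow_add add.commute)

definition halted :: "tm \<Rightarrow> cfg \<Rightarrow> bool" where
  "halted M C \<longleftrightarrow> st C = accst M \<or> st C = rejst M"

lemma step_unfold:
  assumes "\<not> halted M C"
    and "delta M (st C) (inp w (idxval (it C))) (wt C (wh C)) (it C (ih C)) (chsym c (ch C)) = (q', s', mw, i', mi, mc, ow)"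
  shows "step M w c C = C\<lparr>st := q', wt := (wt C)(wh C := s'), wh := mv mw (wh C),
            it := (it C)(ih C := i'), ih := mv mi (ih C), ch := mv mc (ch C),
            orc := orc C @ (case ow of None \<Rightarrow> [] | Some b \<Rightarrow> [b])\<rparr>"
  using assms unfolding step_def halted_def by simp

lemma delta_obtain:
  obtains q' s' mw i' mi mc ow where
    "delta M (st C) (inp w (idxval (it C))) (wt C (wh C)) (it C (ih C)) (chsym c (ch C)) = (q', s', mw, i', mi, mc, ow)"
  by (metis prod_cases7)

lemma step_halted: "halted M C \<Longrightarrow> step M w c C = C"
  by (simp add: step_def halted_def)

lemma run_halted_stay: assumes "halted M (run M w c t)" "t \<le> t'" shows "run M w c t' = run M w c t"
  using assms(2,1) proof (induction t' rule: dec_induct)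
  case base then show ?case by simp
next
  case (step n) then show ?case by (simp add: run_Suc step_halted)
qed

lemma step_orc: "\<exists>zs. orc (step M w c C) = orc C @ zs \<and> length zs \<le> 1"
proof (cases "halted M C")
  case True then show ?thesis by (simp add: step_halted)
next
  case False
  obtain q' s' mw i' mi mc ow where d: "delta M (st C) (inp w (idxval (it C))) (wt C (wh C)) (it C (ih C)) (chsym c (ch C)) = (q', s', mw, i', mi, mc, ow)"
    by (rule delta_obtain)
  show ?thesis by (simp add: step_unfold[OF False d] split: option.splits)
qed

lemma run_orc_prefix: assumes "t \<le> t'" shows "\<exists>zs. orc (run M w c t') = orc (run M w c t) @ zs"
  using assms proof (induction t' rule: dec_induct)
  case base then show ?case by simp
next
  case (step n) then show ?case using step_orc[of M w c "run M w c n"] by (auto simp: run_Suc)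
qed

lemma run_orc_len: "length (orc (run M w c t)) \<le> t"
proof (induction t)
  case 0 then show ?case by (simp add: init_cfg_def)
next
  case (Suc t) then show ?case using step_orc[of M w c "run M w c t"] by (auto simp: run_Suc)
qed

lemma wf_delta:
  assumes "wf_tm M" "q < nstates M" "s < nsyms M" "i < nsyms M"
    "delta M q a s i c = (q', s', mw, i', mi, mc, ow)"
  shows "q' < nstates M \<and> s' < nsyms M \<and> i' < nsyms M \<and> (\<forall>b. ow = Some b \<longrightarrow> b < 3)"
proof -
  note A = assms(1)[unfolded wf_tm_def, THEN conjunct2, THEN conjunct2, THEN conjunct2, THEN conjunct2, THEN conjunct2]
  note B = A[THEN spec[where x=q], THEN spec[where x=a], THEN spec[where x=s], THEN spec[where x=i], THEN spec[where x=c]]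
  from B assms(2-4) have "case delta M q a s i c of (q', s', _, i', _, _, ow) \<Rightarrow>
           q' < nstates M \<and> s' < nsyms M \<and> i' < nsyms M \<and> (\<forall>b. ow = Some b \<longrightarrow> b < 3)"
    by (elim impE)
  then show ?thesis using assms(5) by simp
qed

lemma wf_run_inv:
  assumes "wf_tm M"
  shows "st (run M w c t) < nstates M \<and> (\<forall>j. wt (run M w c t) j < nsyms M) \<and> (\<forall>j. it (run M w c t) j < nsyms M)"
proof (induction t)
  case 0 then show ?case using assms by (simp add: init_cfg_def wf_tm_def)
next
  case (Suc t)
  let ?C = "run M w c t"
  show ?case
  proof (cases "st ?C = accst M \<or> st ?C = rejst M")
    case True then show ?thesis using Suc by (simp add: run_Suc step_halted halted_def)
  next
    case False
    then have F: "\<not> halted M ?C" by (simp add: halted_def)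
    obtain q' s' mw i' mi mc ow where d: "delta M (st ?C) (inp w (idxval (it ?C))) (wt ?C (wh ?C)) (it ?C (ih ?C)) (chsym c (ch ?C)) = (q', s', mw, i', mi, mc, ow)"
      by (rule delta_obtain)
    have "q' < nstates M \<and> s' < nsyms M \<and> i' < nsyms M"
      using wf_delta[OF assms, of "st ?C" "wt ?C (wh ?C)" "it ?C (ih ?C)"] Suc d by auto
    then show ?thesis using Suc by (simp add: run_Suc step_unfold[OF F d])
  qed
qed

lemma run_blank_beyond:
  assumes "\<And>t. wh (run M w c t) \<le> S" "\<And>t. ih (run M w c t) \<le> S" "S < j"
  shows "wt (run M w c t) j = 0 \<and> it (run M w c t) j = 0"
proof (induction t)
  case 0 then show ?case by (simp add: init_cfg_def)
next
  case (Suc t)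
  have ne: "wh (run M w c t) \<noteq> j" "ih (run M w c t) \<noteq> j" using assms(1,2)[of t] assms(3) by auto
  show ?case
  proof (cases "halted M (run M w c t)")
    case True then show ?thesis using Suc by (simp add: run_Suc step_halted)
  next
    case False
    obtain q' s' mw i' mi mc ow where d: "delta M (st (run M w c t)) (inp w (idxval (it (run M w c t)))) (wt (run M w c t) (wh (run M w c t))) (it (run M w c t) (ih (run M w c t))) (chsym c (ch (run M w c t))) = (q', s', mw, i', mi, mc, ow)"
      by (rule delta_obtain)
    show ?thesis using Suc ne by (simp add: run_Suc step_unfold[OF False d])
  qed
qed

section \<open>Pigeonhole bound on the halting time of a deterministic bounded machine\<close>

definition core :: "cfg \<Rightarrow> nat \<times> (nat \<Rightarrow> nat) \<times> nat \<times> (nat \<Rightarrow> nat) \<times> nat \<times> nat" where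
  "core C = (st C, wt C, wh C, it C, ih C, ch C)"

lemma core_step: assumes "core C1 = core C2" shows "core (step M w c C1) = core (step M w c C2)"
proof -
  have e: "st C1 = st C2" "wt C1 = wt C2" "wh C1 = wh C2" "it C1 = it C2" "ih C1 = ih C2" "ch C1 = ch C2"
    using assms by (auto simp: core_def)
  show ?thesis
  proof (cases "halted M C1")
    case True then show ?thesis using e assms by (simp add: step_halted halted_def)
  next
    case False
    then have F2: "\<not> halted M C2" using e by (simp add: halted_def)
    obtain q' s' mw i' mi mc ow where d: "delta M (st C1) (inp w (idxval (it C1))) (wt C1 (wh C1)) (it C1 (ih C1)) (chsym c (ch C1)) = (q', s', mw, i', mi, mc, ow)"
      by (rule delta_obtain)
    then have d2: "delta M (st C2) (inp w (idxval (it C2))) (wt C2 (wh C2)) (it C2 (ih C2)) (chsym c (ch C2)) = (q', s', mw, i', mi, mc, ow)"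
      using e by simp
    show ?thesis using e by (simp add: step_unfold[OF False d] step_unfold[OF F2 d2] core_def)
  qed
qed

lemma core_shift:
  assumes "core (run M w c t1) = core (run M w c t2)"
  shows "core (run M w c (t1 + s)) = core (run M w c (t2 + s))"
  using assms by (induction s) (auto simp: run_Suc intro: core_step)

definition codeL :: "nat \<Rightarrow> cfg \<Rightarrow> nat list" where
  "codeL S C = [st C] @ map (wt C) [0..<Suc S] @ map (\<lambda>j. if j = wh C then 1 else 0) [0..<Suc S]
     @ map (it C) [0..<Suc S] @ map (\<lambda>j. if j = ih C then 1 else 0) [0..<Suc S]"

lemma codeL_len: "length (codeL S C) = 4 * S + 5" by (simp add: codeL_def)

lemma map_upt_eq: "map f [0..<n] = map g [0..<n] \<Longrightarrow> j < n \<Longrightarrow> f j = g j"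
  by (simp add: map_eq_conv)

lemma codeL_inj:
  assumes "codeL S C1 = codeL S C2" "wh C1 \<le> S" "wh C2 \<le> S" "ih C1 \<le> S" "ih C2 \<le> S"
    "\<forall>j>S. wt C1 j = 0 \<and> it C1 j = 0" "\<forall>j>S. wt C2 j = 0 \<and> it C2 j = 0" "ch C1 = ch C2"
  shows "core C1 = core C2"
proof -
  let ?n = "Suc S"
  have e: "st C1 = st C2" and
    a: "map (wt C1) [0..<?n] = map (wt C2) [0..<?n]" and
    b: "map (\<lambda>j. if j = wh C1 then 1::nat else 0) [0..<?n] = map (\<lambda>j. if j = wh C2 then 1 else 0) [0..<?n]" and
    c: "map (it C1) [0..<?n] = map (it C2) [0..<?n]" and
    d: "map (\<lambda>j. if j = ih C1 then 1::nat else 0) [0..<?n] = map (\<lambda>j. if j = ih C2 then 1 else 0) [0..<?n]"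
    using assms(1) unfolding codeL_def by auto
  have "wt C1 = wt C2"
  proof
    fix j show "wt C1 j = wt C2 j"
      using map_upt_eq[OF a, of j] assms(6,7) by (cases "j < ?n") auto
  qed
  moreover have "it C1 = it C2"
  proof
    fix j show "it C1 j = it C2 j"
      using map_upt_eq[OF c, of j] assms(6,7) by (cases "j < ?n") auto
  qed
  moreover have "wh C1 = wh C2"
    using map_upt_eq[OF b, of "wh C1"] assms(2) by (auto split: if_splits)
  moreover have "ih C1 = ih C2"
    using map_upt_eq[OF d, of "ih C1"] assms(4) by (auto split: if_splits)
  ultimately show ?thesis using e assms(8) by (simp add: core_def)
qed

lemma codeL_range:
  assumes "st C < V" "\<forall>j. wt C j < V" "\<forall>j. it C j < V" "2 \<le> V"
  shows "set (codeL S C) \<subseteq> {..<V}"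
  using assms unfolding codeL_def by auto

lemma halting_time_bound:
  assumes wf: "wf_tm M"
    and bw: "\<And>t. wh (run M w c t) \<le> S" and bi: "\<And>t. ih (run M w c t) \<le> S"
    and chc: "\<And>t. ch (run M w c t) = 0"
    and h: "halted M (run M w c th)"
    and hmin: "\<And>t. t < th \<Longrightarrow> \<not> halted M (run M w c t)"
  shows "th \<le> (max (nstates M) (nsyms M)) ^ (4 * S + 5)"
proof -
  let ?V = "max (nstates M) (nsyms M)"
  let ?f = "\<lambda>t. codeL S (run M w c t)"
  have V2: "2 \<le> ?V" using wf by (auto simp: wf_tm_def)
  have inj: "inj_on ?f {..<th}"
  proof (rule inj_onI)
    fix t1 t2 assume t1: "t1 \<in> {..<th}" and t2: "t2 \<in> {..<th}" and eq: "?f t1 = ?f t2"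
    have blank: "\<forall>j>S. wt (run M w c t) j = 0 \<and> it (run M w c t) j = 0" for t
      using run_blank_beyond[OF bw bi] by blast
    have core_eq: "core (run M w c t1) = core (run M w c t2)"
      by (rule codeL_inj[OF eq bw bw bi bi blank blank]) (simp add: chc)
    show "t1 = t2"
    proof (rule ccontr)
      assume ne: "t1 \<noteq> t2"
      { fix a b assume ab: "a < b" "b < th" and ce: "core (run M w c a) = core (run M w c b)"
        have "core (run M w c (a + (th - b))) = core (run M w c (b + (th - b)))"
          by (rule core_shift[OF ce])
        then have "st (run M w c (a + (th - b))) = st (run M w c th)"
          using ab by (simp add: core_def)
        then have "halted M (run M w c (a + (th - b)))" using h by (simp add: halted_def)
        moreover have "a + (th - b) < th" using ab by simp
        ultimately have False using hmin by blast }
      then show False using ne core_eq t1 t2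
        by (metis lessThan_iff linorder_neqE_nat)
    qed
  qed
  have sub: "?f ` {..<th} \<subseteq> {xs. set xs \<subseteq> {..<?V} \<and> length xs = 4 * S + 5}"
  proof
    fix xs assume "xs \<in> ?f ` {..<th}"
    then obtain t where xs: "xs = ?f t" by auto
    have "st (run M w c t) < ?V" "\<forall>j. wt (run M w c t) j < ?V" "\<forall>j. it (run M w c t) j < ?V"
      using wf_run_inv[OF wf, of w c t] by (auto simp: less_max_iff_disj)
    then show "xs \<in> {xs. set xs \<subseteq> {..<?V} \<and> length xs = 4 * S + 5}"
      using codeL_range[OF _ _ _ V2] xs codeL_len by auto
  qed
  have "th = card (?f ` {..<th})" using card_image[OF inj] by simp
  also have "\<dots> \<le> card {xs. set xs \<subseteq> {..<?V} \<and> length xs = 4 * S + 5}"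
    by (rule card_mono[OF _ sub]) (rule finite_lists_length_eq, simp)
  also have "\<dots> = ?V ^ (4 * S + 5)" by (subst card_lists_length_eq) auto
  finally show ?thesis .
qed

section \<open>Logarithm facts\<close>

lemma lg_pos: "1 \<le> lg n" by (simp add: lg_def)

lemma lg_mono: "m \<le> n \<Longrightarrow> lg m \<le> lg n"
  by (simp add: lg_def floor_log_le_iff)

lemma lg_lt_pow: "n < 2 ^ lg n"
  using floor_log_exp2_gt[of n] by (simp add: lg_def)

lemma lg_le_of_lt_pow: assumes "0 < n" "n < 2 ^ m" shows "lg n \<le> m"
proof -
  have "2 ^ floor_log n \<le> n" using floor_log_exp2_le assms(1) by auto
  then have "2 ^ floor_log n < (2::nat) ^ m" using assms(2) by linarith
  then have "floor_log n < m" by (simp add: power_strict_increasing_iff)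
  then show ?thesis by (simp add: lg_def)
qed

lemma lg_pow: assumes "1 \<le> a" "m \<noteq> 0" shows "lg (a ^ m) \<le> m * lg a"
proof -
  note False = assms(2)
  have "a < 2 ^ lg a" by (rule lg_lt_pow)
  then have "a ^ m < (2 ^ lg a) ^ m" using False by (simp add: power_strict_mono)
  then have "a ^ m < 2 ^ (m * lg a)" by (metis power_mult mult.commute)
  moreover have "0 < a ^ m" using assms by simp
  ultimately show ?thesis using lg_le_of_lt_pow by blast
qed


section \<open>The composite machine: abstract data\<close>

datatype job = GW1 | GX1 | RST | GW2 | GX2 | CMP | AW2 | AX2 | INC | AW1 | AX1
datatype phase = INIT | TOP | ACC | REJ | MHEAD | MSTEP | COMMIT | SR job | SL job

fun jn :: "job \<Rightarrow> nat" where
  "jn GW1 = 0" | "jn GX1 = 1" | "jn RST = 2" | "jn GW2 = 3" | "jn GX2 = 4" | "jn CMP = 5"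
| "jn AW2 = 6" | "jn AX2 = 7" | "jn INC = 8" | "jn AW1 = 9" | "jn AX1 = 10"

definition jd :: "nat \<Rightarrow> job" where
  "jd n = [GW1, GX1, RST, GW2, GX2, CMP, AW2, AX2, INC, AW1, AX1] ! n"

lemma jd_jn[simp]: "jd (jn j) = j" by (cases j) (simp_all add: jd_def)
lemma jn_lt: "jn j < 11" by (cases j) simp_all

fun phn :: "phase \<Rightarrow> nat" where
  "phn INIT = 0" | "phn TOP = 1" | "phn ACC = 2" | "phn REJ = 3" | "phn MHEAD = 4" | "phn MSTEP = 5"
| "phn COMMIT = 6" | "phn (SR j) = 7 + jn j" | "phn (SL j) = 18 + jn j"

definition phd :: "nat \<Rightarrow> phase" where
  "phd n = (if n = 0 then INIT else if n = 1 then TOP else if n = 2 then ACC else if n = 3 then REJ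
     else if n = 4 then MHEAD else if n = 5 then MSTEP else if n = 6 then COMMIT
     else if n < 18 then SR (jd (n - 7)) else SL (jd (n - 18)))"

lemma phd_phn[simp]: "phd (phn p) = p"
proof (cases p)
  case (SR j) then show ?thesis using jn_lt[of j] by (simp add: phd_def)
next
  case (SL j) then show ?thesis using jn_lt[of j] by (simp add: phd_def)
qed (simp_all add: phd_def)

lemma phn_lt: "phn p < 29"
proof (cases p)
  case (SR j) then show ?thesis using jn_lt[of j] by simp
next
  case (SL j) then show ?thesis using jn_lt[of j] by simp
qed simp_all

fun mvn :: "move \<Rightarrow> nat" where "mvn L = 0" | "mvn N = 1" | "mvn R = 2"
definition mvd :: "nat \<Rightarrow> move" where "mvd n = (if n = 0 then L else if n = 1 then N else R)"
lemma mvd_mvn[simp]: "mvd (mvn m) = m" by (cases m) (simp_all add: mvd_def)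
lemma mvn_lt: "mvn m < 3" by (cases m) simp_all

definition bn :: "bool \<Rightarrow> nat" where "bn b = (if b then 1 else 0)"
lemma bn_lt: "bn b < 2" by (simp add: bn_def)
lemma bn_inv[simp]: "(bn b = 1) = b" by (simp add: bn_def)
lemma bn_inv'[simp]: "(bn b = Suc 0) = b" by (simp add: bn_def)

record cell =
  org :: bool
  w1 :: nat
  m1 :: bool
  x1 :: nat
  n1 :: bool
  w2 :: nat
  m2 :: bool
  n2 :: bool
  bt :: bool

record ast =
  ph :: phase
  q1 :: nat
  q2 :: nat
  av :: nat
  s1 :: nat
  i1 :: nat
  s2 :: nat
  i2 :: nat
  eqf :: bool
  inc :: bool
  wv1 :: nat
  xv1 :: nat
  wm1 :: move
  xm1 :: move
  wv2 :: nat
  xv2 :: nat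
  wm2 :: move
  xm2 :: move
  pnd :: bool
  dn :: bool
  cry :: bool

definition clist :: "cell \<Rightarrow> nat list" where
  "clist c = [bn (org c), w1 c, bn (m1 c), x1 c, bn (n1 c), w2 c, bn (m2 c), bn (n2 c), bn (bt c)]"

definition cfrom :: "nat list \<Rightarrow> cell" where
  "cfrom l = \<lparr>org = (l!0 = 1), w1 = l!1, m1 = (l!2 = 1), x1 = l!3, n1 = (l!4 = 1), w2 = l!5,
     m2 = (l!6 = 1), n2 = (l!7 = 1), bt = (l!8 = 1)\<rparr>"

lemma cfrom_clist[simp]: "cfrom (clist c) = c" by (simp add: cfrom_def clist_def)

definition slist :: "ast \<Rightarrow> nat list" where
  "slist S = [phn (ph S), q1 S, q2 S, av S, s1 S, i1 S, s2 S, i2 S, bn (eqf S), bn (inc S),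
     wv1 S, xv1 S, mvn (wm1 S), mvn (xm1 S), wv2 S, xv2 S, mvn (wm2 S), mvn (xm2 S),
     bn (pnd S), bn (dn S), bn (cry S)]"

definition sfrom :: "nat list \<Rightarrow> ast" where
  "sfrom l = \<lparr>ph = phd (l!0), q1 = l!1, q2 = l!2, av = l!3, s1 = l!4, i1 = l!5, s2 = l!6, i2 = l!7,
     eqf = (l!8 = 1), inc = (l!9 = 1), wv1 = l!10, xv1 = l!11, wm1 = mvd (l!12), xm1 = mvd (l!13),
     wv2 = l!14, xv2 = l!15, wm2 = mvd (l!16), xm2 = mvd (l!17), pnd = (l!18 = 1), dn = (l!19 = 1),
     cry = (l!20 = 1)\<rparr>"

lemma sfrom_slist[simp]: "sfrom (slist S) = S" by (simp add: sfrom_def slist_def)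

definition S0 :: ast where
  "S0 = \<lparr>ph = INIT, q1 = 0, q2 = 0, av = 0, s1 = 0, i1 = 0, s2 = 0, i2 = 0, eqf = False, inc = False,
     wv1 = 0, xv1 = 0, wm1 = N, xm1 = N, wv2 = 0, xv2 = 0, wm2 = N, xm2 = N, pnd = False, dn = False,
     cry = False\<rparr>"

definition encS :: "ast \<Rightarrow> nat" where
  "encS S = (if S = S0 then 0 else Suc (list_encode (slist S)))"
definition decS :: "nat \<Rightarrow> ast" where
  "decS n = (if n = 0 then S0 else sfrom (list_decode (n - 1)))"

lemma decS_encS[simp]: "decS (encS S) = S" by (simp add: encS_def decS_def)
lemma encS_inj: "encS S = encS S' \<longleftrightarrow> S = S'" by (metis decS_encS)
lemma encS_S0[simp]: "encS S0 = 0" by (simp add: encS_def)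

definition encC :: "cell option \<Rightarrow> nat" where
  "encC co = (case co of None \<Rightarrow> 0 | Some c \<Rightarrow> Suc (list_encode (clist c)))"
definition decC :: "nat \<Rightarrow> cell option" where
  "decC n = (if n = 0 then None else Some (cfrom (list_decode (n - 1))))"

lemma decC_encC[simp]: "decC (encC co) = co" by (cases co) (simp_all add: encC_def decC_def)
lemma encC_None[simp]: "encC None = 0" by (simp add: encC_def)

definition cdef :: cell where
  "cdef = \<lparr>org = False, w1 = 0, m1 = False, x1 = 0, n1 = False, w2 = 0, m2 = False, n2 = False, bt = False\<rparr>"
definition cinit :: cell where "cinit = cdef\<lparr>org := True, m1 := True, n1 := True\<rparr>"

definition ACCs :: ast where "ACCs = S0\<lparr>ph := ACC\<rparr>"
definition REJs :: ast where "REJs = S0\<lparr>ph := REJ\<rparr>"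

definition orgo :: "cell option \<Rightarrow> bool" where "orgo co = (case co of None \<Rightarrow> False | Some c \<Rightarrow> org c)"

definition avd :: "nat \<Rightarrow> nat option" where "avd n = (if n = 0 then None else Some (n - 1))"

definition startR :: "job \<Rightarrow> ast \<Rightarrow> ast" where
  "startR j S = S\<lparr>ph := SR j, pnd := False, dn := False, cry := True, eqf := True\<rparr>"

fun getm :: "job \<Rightarrow> cell \<Rightarrow> bool" where
  "getm AW1 c = m1 c" | "getm AX1 c = n1 c" | "getm AW2 c = m2 c" | "getm AX2 c = n2 c" | "getm _ c = False"
fun setm :: "job \<Rightarrow> bool \<Rightarrow> cell \<Rightarrow> cell" where
  "setm AW1 b c = c\<lparr>m1 := b\<rparr>" | "setm AX1 b c = c\<lparr>n1 := b\<rparr>" | "setm AW2 b c = c\<lparr>m2 := b\<rparr>"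
| "setm AX2 b c = c\<lparr>n2 := b\<rparr>" | "setm _ b c = c"
fun setv :: "job \<Rightarrow> nat \<Rightarrow> cell \<Rightarrow> nat \<Rightarrow> cell \<times> nat" where
  "setv AW1 v c r = (c\<lparr>w1 := v\<rparr>, r)" | "setv AX1 v c r = (c\<lparr>x1 := v\<rparr>, r)"
| "setv AW2 v c r = (c\<lparr>w2 := v\<rparr>, r)" | "setv AX2 v c r = (c, v)" | "setv _ v c r = (c, r)"
fun jval :: "job \<Rightarrow> ast \<Rightarrow> nat" where
  "jval AW1 S = wv1 S" | "jval AX1 S = xv1 S" | "jval AW2 S = wv2 S" | "jval AX2 S = xv2 S" | "jval _ S = 0"
fun jmv :: "job \<Rightarrow> ast \<Rightarrow> move" where
  "jmv AW1 S = wm1 S" | "jmv AX1 S = xm1 S" | "jmv AW2 S = wm2 S" | "jmv AX2 S = xm2 S" | "jmv _ S = N"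

definition isap :: "job \<Rightarrow> bool" where "isap j \<longleftrightarrow> j \<in> {AW1, AX1, AW2, AX2}"

definition rstep :: "job \<Rightarrow> ast \<Rightarrow> cell option \<Rightarrow> nat \<Rightarrow> ast \<times> cell option \<times> nat \<times> bool" where
  "rstep j S co r = (case co of
     None \<Rightarrow> (if pnd S then (S\<lparr>pnd := False, dn := True\<rparr>, Some (setm j True cdef), r, True)
              else if j = INC \<and> cry S then (S\<lparr>cry := False\<rparr>, Some (cdef\<lparr>bt := True\<rparr>), r, True)
              else (S, None, r, False))
   | Some c \<Rightarrow> (case j of
       GW1 \<Rightarrow> (if m1 c then S\<lparr>s1 := w1 c\<rparr> else S, Some c, r, True)
     | GX1 \<Rightarrow> (if n1 c then S\<lparr>i1 := x1 c\<rparr> else S, Some c, r, True)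
     | RST \<Rightarrow> (S, Some (c\<lparr>w2 := 0, m2 := org c, n2 := org c, bt := False\<rparr>), 0, True)
     | GW2 \<Rightarrow> (if m2 c then S\<lparr>s2 := w2 c\<rparr> else S, Some c, r, True)
     | GX2 \<Rightarrow> (if n2 c then S\<lparr>i2 := r\<rparr> else S, Some c, r, True)
     | CMP \<Rightarrow> (S\<lparr>eqf := (eqf S \<and> (bt c \<longleftrightarrow> x1 c = 2))\<rparr>, Some c, r, True)
     | INC \<Rightarrow> (S\<lparr>cry := (cry S \<and> bt c)\<rparr>, Some (c\<lparr>bt := (bt c \<noteq> cry S)\<rparr>), r, True)
     | _ \<Rightarrow> (if pnd S then (S\<lparr>pnd := False, dn := True\<rparr>, Some (setm j True c), r, True)
            else if getm j c \<and> \<not> dn S then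
              (case setv j (jval j S) c r of (c1, r1) \<Rightarrow>
                 if jmv j S = R then (S\<lparr>pnd := True, dn := True\<rparr>, Some (setm j False c1), r1, True)
                 else (S\<lparr>dn := True\<rparr>, Some c1, r1, True))
            else (S, Some c, r, True))))"

definition lstep :: "job \<Rightarrow> ast \<Rightarrow> cell option \<Rightarrow> nat \<Rightarrow> ast \<times> cell option \<times> nat" where
  "lstep j S co r = (case co of None \<Rightarrow> (S, co, r) | Some c \<Rightarrow>
     (if isap j \<and> jmv j S = L then
        (if pnd S then (S\<lparr>pnd := False, dn := True\<rparr>, Some (setm j True c), r)
         else if getm j c \<and> \<not> dn S \<and> \<not> org c then (S\<lparr>pnd := True, dn := True\<rparr>, Some (setm j False c), r)
         else (S, co, r))
      else (S, co, r)))"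

definition finish :: "job \<Rightarrow> ast \<Rightarrow> ast" where
  "finish j S = (case j of
     GW1 \<Rightarrow> startR GX1 S | GX1 \<Rightarrow> startR RST S | RST \<Rightarrow> S\<lparr>ph := MHEAD, q2 := 0\<rparr>
   | GW2 \<Rightarrow> startR GX2 S | GX2 \<Rightarrow> startR CMP S | CMP \<Rightarrow> S\<lparr>ph := MSTEP\<rparr>
   | AW2 \<Rightarrow> startR AX2 S | AX2 \<Rightarrow> (if inc S then startR INC S else S\<lparr>ph := MHEAD\<rparr>)
   | INC \<Rightarrow> S\<lparr>ph := MHEAD\<rparr> | AW1 \<Rightarrow> startR AX1 S | AX1 \<Rightarrow> S\<lparr>ph := TOP\<rparr>)"

record acfg =
  AS :: ast
  AT :: "nat \<Rightarrow> cell option"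
  AH :: nat
  AR :: "nat \<Rightarrow> nat"
  AG :: nat
  AC :: nat

definition A0 :: acfg where
  "A0 = \<lparr>AS = S0, AT = (\<lambda>_. None), AH = 0, AR = (\<lambda>_. 0), AG = 0, AC = 0\<rparr>"

definition conc :: "acfg \<Rightarrow> cfg" where
  "conc A = \<lparr>st = encS (AS A), wt = (\<lambda>j. encC (AT A j)), wh = AH A, it = AR A, ih = AG A, ch = AC A, orc = []\<rparr>"

lemma conc_A0: "conc A0 = init_cfg"
  by (simp add: conc_def A0_def init_cfg_def)

definition ahalted :: "ast \<Rightarrow> bool" where "ahalted S \<longleftrightarrow> S = ACCs \<or> S = REJs"

locale cc =
  fixes Mr Mp :: tm
  assumes wfr: "wf_tm Mr" and wfp: "wf_tm Mp"
begin

definition adelta :: "ast \<Rightarrow> nat option \<Rightarrow> cell option \<Rightarrow> nat \<Rightarrow> bool option \<Rightarrow> ast \<times> cell option \<times> nat \<times> move \<times> move \<times> move" where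
  "adelta S a co r c = (case ph S of
     INIT \<Rightarrow> (S0\<lparr>ph := TOP\<rparr>, Some cinit, r, N, N, N)
   | TOP \<Rightarrow> (if q1 S = accst Mp then (ACCs, co, r, N, N, N)
             else if q1 S = rejst Mp then (REJs, co, r, N, N, N)
             else (startR GW1 S, co, r, N, N, N))
   | ACC \<Rightarrow> (S, co, r, N, N, N)
   | REJ \<Rightarrow> (S, co, r, N, N, N)
   | MHEAD \<Rightarrow> (if q2 S = accst Mr \<or> q2 S = rejst Mr then (S\<lparr>ph := COMMIT, av := 0\<rparr>, co, r, N, N, N)
               else (startR GW2 S, co, r, N, N, N))
   | MSTEP \<Rightarrow> (case delta Mr (q2 S) a (s2 S) (i2 S) None of (q', s', mw, i', mi, _, ow) \<Rightarrow>
        (case ow of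
           Some b \<Rightarrow> (if eqf S then (S\<lparr>ph := COMMIT, av := Suc b\<rparr>, co, r, N, N, N)
                      else (startR AW2 (S\<lparr>q2 := q', wv2 := s', wm2 := mw, xv2 := i', xm2 := mi, inc := True\<rparr>), co, r, N, N, N))
         | None \<Rightarrow> (startR AW2 (S\<lparr>q2 := q', wv2 := s', wm2 := mw, xv2 := i', xm2 := mi, inc := False\<rparr>), co, r, N, N, N)))
   | COMMIT \<Rightarrow> (case delta Mp (q1 S) (avd (av S)) (s1 S) (i1 S) c of (q', s', mw, i', mi, mc, _) \<Rightarrow>
        (startR AW1 (S\<lparr>q1 := q', wv1 := s', wm1 := mw, xv1 := i', xm1 := mi\<rparr>), co, r, N, N, mc))
   | SR j \<Rightarrow> (case rstep j S co r of (S', co', r', cont) \<Rightarrow>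
        if cont then (S', co', r', R, R, N) else (S'\<lparr>ph := SL j, pnd := False, dn := False\<rparr>, co', r', L, L, N))
   | SL j \<Rightarrow> (case lstep j S co r of (S', co', r') \<Rightarrow>
        if orgo co then (finish j S', co', r', N, N, N) else (S', co', r', L, L, N)))"

definition validS :: "ast \<Rightarrow> bool" where
  "validS S \<longleftrightarrow> q1 S < nstates Mp \<and> q2 S < nstates Mr \<and> av S < 4 \<and> s1 S < nsyms Mp \<and> i1 S < nsyms Mp
     \<and> s2 S < nsyms Mr \<and> i2 S < nsyms Mr \<and> wv1 S < nsyms Mp \<and> xv1 S < nsyms Mp
     \<and> wv2 S < nsyms Mr \<and> xv2 S < nsyms Mr"

definition validC :: "cell option \<Rightarrow> bool" where
  "validC co \<longleftrightarrow> (case co of None \<Rightarrow> True | Some c \<Rightarrow> w1 c < nsyms Mp \<and> x1 c < nsyms Mp \<and> w2 c < nsyms Mr)"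

definition BB :: nat where "BB = 29 + nstates Mp + nstates Mr + nsyms Mp + nsyms Mr"

definition NSt :: nat where
  "NSt = Suc (Suc (list_encode [BB, BB, BB, BB, BB, BB, BB, BB, BB, BB, BB, BB, BB, BB, BB, BB, BB, BB, BB, BB, BB]))"
definition NSy :: nat where
  "NSy = Suc (Suc (list_encode [BB, BB, BB, BB, BB, BB, BB, BB, BB])) + nsyms Mr"

definition cdelta :: "nat \<Rightarrow> nat option \<Rightarrow> nat \<Rightarrow> nat \<Rightarrow> bool option \<Rightarrow> nat \<times> nat \<times> move \<times> nat \<times> move \<times> move \<times> nat option" where
  "cdelta q a s i c = (case adelta (decS q) a (decC s) i c of (S', co, r', mw, mi, mc) \<Rightarrow>
     if validS S' \<and> validC co \<and> r' < nsyms Mr then (encS S', encC co, mw, r', mi, mc, None)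
     else (encS REJs, 0, N, 0, N, N, None))"

definition cM :: tm where
  "cM = \<lparr>nstates = NSt, nsyms = NSy, delta = cdelta, accst = encS ACCs, rejst = encS REJs\<rparr>"

definition astep :: "nat list \<Rightarrow> (nat \<Rightarrow> bool) \<Rightarrow> acfg \<Rightarrow> acfg" where
  "astep w c A = (if ahalted (AS A) then A else
     (case adelta (AS A) (inp w (idxval (AR A))) (AT A (AH A)) (AR A (AG A)) (chsym c (AC A)) of
       (S', co, r', mw, mi, mc) \<Rightarrow>
         A\<lparr>AS := S', AT := (AT A)(AH A := co), AH := mv mw (AH A), AR := (AR A)(AG A := r'),
           AG := mv mi (AG A), AC := mv mc (AC A)\<rparr>))"

definition arun :: "nat list \<Rightarrow> (nat \<Rightarrow> bool) \<Rightarrow> nat \<Rightarrow> acfg" where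
  "arun w c t = (astep w c ^^ t) A0"

definition validA :: "acfg \<Rightarrow> bool" where
  "validA A \<longleftrightarrow> validS (AS A) \<and> (\<forall>j. validC (AT A j)) \<and> (\<forall>j. AR A j < nsyms Mr)"

end


lemma triangle_mono: "a \<le> b \<Longrightarrow> triangle a \<le> triangle b"
  unfolding triangle_def by (intro div_le_mono mult_le_mono) auto

lemma prod_encode_mono: "a \<le> a' \<Longrightarrow> b \<le> b' \<Longrightarrow> prod_encode (a, b) \<le> prod_encode (a', b')"
  unfolding prod_encode_def using triangle_mono[of "a + b" "a' + b'"] by simp

lemma list_encode_mono: "list_all2 (\<le>) xs ys \<Longrightarrow> list_encode xs \<le> list_encode ys"
  by (induction rule: list_all2_induct) (auto intro: prod_encode_mono)

context cc begin

lemma BB_ge: "nstates Mp < BB" "nstates Mr < BB" "nsyms Mp < BB" "nsyms Mr < BB" "29 \<le> BB"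
  by (auto simp: BB_def)

lemma bn_BB: "bn b \<le> BB" and mvn_BB: "mvn m \<le> BB"
  using bn_lt[of b] mvn_lt[of m] BB_ge(5) by linarith+

lemma validS_enc: assumes "validS S" shows "encS S < NSt"
proof -
  have "list_encode (slist S) \<le> list_encode [BB, BB, BB, BB, BB, BB, BB, BB, BB, BB, BB, BB, BB, BB, BB, BB, BB, BB, BB, BB, BB]"
    apply (rule list_encode_mono)
    using assms BB_ge phn_lt[of "ph S"] bn_BB mvn_BB
    unfolding slist_def validS_def
    by (simp add: less_imp_le)
  then show ?thesis unfolding encS_def NSt_def by auto
qed

lemma validC_enc: assumes "validC co" shows "encC co < NSy"
proof (cases co)
  case None then show ?thesis by (simp add: NSy_def)
next
  case (Some c)
  have "list_encode (clist c) \<le> list_encode [BB, BB, BB, BB, BB, BB, BB, BB, BB]"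
    apply (rule list_encode_mono)
    using assms Some BB_ge bn_BB
    unfolding clist_def validC_def
    by (simp add: less_imp_le)
  then show ?thesis using Some unfolding encC_def NSy_def by auto
qed

lemma nsyms_ge: "3 \<le> nsyms Mr" "3 \<le> nsyms Mp" "0 < nstates Mr" "0 < nstates Mp"
  using wfr wfp by (auto simp: wf_tm_def)

lemma validS_S0: "validS (S0\<lparr>ph := p\<rparr>)" using nsyms_ge by (simp add: validS_def S0_def)
lemma validS_ACCs: "validS ACCs" and validS_REJs: "validS REJs"
  using validS_S0 by (simp_all add: ACCs_def REJs_def)

lemma validS_startR[simp]: "validS (startR j S) = validS S" by (simp add: startR_def validS_def)

lemma validS_finish: "validS S \<Longrightarrow> validS (finish j S)"
  using nsyms_ge by (cases j) (simp_all add: finish_def validS_def startR_def)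

lemma validC_cdef: "validC (Some cdef)" "validC (Some (setm j b cdef))" "validC (Some (cdef\<lparr>bt := b\<rparr>))"
  using nsyms_ge by (cases j; simp add: validC_def cdef_def)+

lemma validC_setm: "validC (Some c) \<Longrightarrow> validC (Some (setm j b c))"
  by (cases j) (simp_all add: validC_def)

lemma rstep_valid:
  assumes "validS S" "validC co" "r < nsyms Mr" "rstep j S co r = (S', co', r', b)"
  shows "validS S' \<and> validC co' \<and> r' < nsyms Mr"
proof (cases co)
  case None then show ?thesis using assms validC_cdef
    by (auto simp: rstep_def validS_def split: if_splits)
next
  case (Some c)
  then have vc: "w1 c < nsyms Mp" "x1 c < nsyms Mp" "w2 c < nsyms Mr" using assms(2) by (auto simp: validC_def)
  show ?thesis
  proof (cases j)
    case AW1 then show ?thesis using assms Some vc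
      by (auto simp: rstep_def validS_def validC_def split: if_splits)
  next
    case AX1 then show ?thesis using assms Some vc
      by (auto simp: rstep_def validS_def validC_def split: if_splits)
  next
    case AW2 then show ?thesis using assms Some vc
      by (auto simp: rstep_def validS_def validC_def split: if_splits)
  next
    case AX2 then show ?thesis using assms Some vc
      by (auto simp: rstep_def validS_def validC_def split: if_splits)
  qed (use assms Some vc nsyms_ge in \<open>auto simp: rstep_def validS_def validC_def split: if_splits\<close>)
qed

lemma lstep_valid:
  assumes "validS S" "validC co" "r < nsyms Mr" "lstep j S co r = (S', co', r')"
  shows "validS S' \<and> validC co' \<and> r' < nsyms Mr"
  using assms validC_setm by (auto simp: lstep_def validS_def split: option.splits if_splits)

lemma adelta_valid:
  assumes "validS S" "validC co" "r < nsyms Mr" "adelta S a co r c = (S', co', r', mw, mi, mc)"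
  shows "validS S' \<and> validC co' \<and> r' < nsyms Mr"
proof (cases "ph S")
  case INIT then show ?thesis using assms validS_S0 nsyms_ge
    by (auto simp: adelta_def validC_def cinit_def cdef_def)
next
  case TOP then show ?thesis using assms validS_ACCs validS_REJs
    by (auto simp: adelta_def split: if_splits)
next
  case MHEAD then show ?thesis using assms
    by (auto simp: adelta_def validS_def startR_def split: if_splits)
next
  case MSTEP
  obtain q' s' mw' i' mi' mc' ow where d: "delta Mr (q2 S) a (s2 S) (i2 S) None = (q', s', mw', i', mi', mc', ow)"
    by (metis prod_cases7)
  have b: "q' < nstates Mr \<and> s' < nsyms Mr \<and> i' < nsyms Mr \<and> (\<forall>b. ow = Some b \<longrightarrow> b < 3)"
    by (rule wf_delta[OF wfr _ _ _ d]) (use assms(1) in \<open>auto simp: validS_def\<close>)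
  show ?thesis using assms MSTEP d b
    by (auto simp: adelta_def validS_def startR_def split: if_splits option.splits)
next
  case COMMIT
  obtain q' s' mw' i' mi' mc' ow where d: "delta Mp (q1 S) (avd (av S)) (s1 S) (i1 S) c = (q', s', mw', i', mi', mc', ow)"
    by (metis prod_cases7)
  have b: "q' < nstates Mp \<and> s' < nsyms Mp \<and> i' < nsyms Mp"
    using wf_delta[OF wfp _ _ _ d] assms(1) by (auto simp: validS_def)
  show ?thesis using assms COMMIT d b
    by (auto simp: adelta_def validS_def startR_def)
next
  case (SR j)
  obtain S1 co1 r1 b where d: "rstep j S co r = (S1, co1, r1, b)" by (metis prod_cases4)
  show ?thesis using assms SR d rstep_valid[OF assms(1-3) d]
    by (auto simp: adelta_def validS_def split: if_splits)
next
  case (SL j)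
  obtain S1 co1 r1 where d: "lstep j S co r = (S1, co1, r1)" by (metis prod_cases3)
  show ?thesis using assms SL d lstep_valid[OF assms(1-3) d] validS_finish
    by (auto simp: adelta_def split: if_splits)
qed (use assms in \<open>auto simp: adelta_def\<close>)

lemma wf_cM: "wf_tm cM"
proof -
  have "encS ACCs < NSt" "encS REJs < NSt" using validS_enc validS_ACCs validS_REJs by auto
  moreover have "encS ACCs \<noteq> encS REJs" by (simp add: encS_inj ACCs_def REJs_def S0_def)
  moreover have "3 \<le> NSy" using nsyms_ge by (simp add: NSy_def)
  moreover have "case cdelta q a s i c of (q', s', _, i', _, _, ow) \<Rightarrow>
           q' < NSt \<and> s' < NSy \<and> i' < NSy \<and> (\<forall>b. ow = Some b \<longrightarrow> b < 3)" for q a s i c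
  proof -
    obtain S' co r' mw mi mc where d: "adelta (decS q) a (decC s) i c = (S', co, r', mw, mi, mc)"
      by (metis prod_cases6)
    show ?thesis using d validS_enc validC_enc validS_REJs by (auto simp: cdelta_def NSy_def)
  qed
  ultimately show ?thesis unfolding wf_tm_def cM_def by simp
qed

lemma step_conc:
  assumes "validA A"
  shows "step cM w c (conc A) = conc (astep w c A) \<and> validA (astep w c A)"
proof (cases "ahalted (AS A)")
  case True
  then have "st (conc A) = accst cM \<or> st (conc A) = rejst cM"
    by (auto simp: ahalted_def conc_def cM_def)
  then show ?thesis using True assms by (simp add: step_def astep_def)
next
  case False
  then have nh: "\<not> (st (conc A) = accst cM \<or> st (conc A) = rejst cM)"
    by (auto simp: ahalted_def conc_def cM_def encS_inj)
  obtain S' co r' mw mi mc where d: "adelta (AS A) (inp w (idxval (AR A))) (AT A (AH A)) (AR A (AG A)) (chsym c (AC A)) = (S', co, r', mw, mi, mc)"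
    by (metis prod_cases6)
  have v: "validS S' \<and> validC co \<and> r' < nsyms Mr"
    by (rule adelta_valid[OF _ _ _ d]) (use assms in \<open>auto simp: validA_def\<close>)
  have cd: "delta cM (st (conc A)) (inp w (idxval (it (conc A)))) (wt (conc A) (wh (conc A))) (it (conc A) (ih (conc A))) (chsym c (ch (conc A)))
     = (encS S', encC co, mw, r', mi, mc, None)"
    using d v by (simp add: cM_def cdelta_def conc_def)
  have "step cM w c (conc A) = conc (astep w c A)"
    unfolding step_def using nh cd False d
    by (simp add: astep_def conc_def fun_eq_iff)
  moreover have "validA (astep w c A)" using assms v False d
    by (simp add: astep_def validA_def)
  ultimately show ?thesis by simp
qed

lemma validA_A0: "validA A0"
  using nsyms_ge by (simp add: validA_def A0_def validS_def S0_def validC_def)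

lemma run_conc: "run cM w c t = conc (arun w c t) \<and> validA (arun w c t)"
proof (induction t)
  case 0 then show ?case by (simp add: arun_def conc_A0 validA_A0)
next
  case (Suc t)
  then show ?case using step_conc[of "arun w c t" w c] by (simp add: run_Suc arun_def)
qed

end

lemma rstep_ph: "rstep j S co r = (S', co', r', b) \<Longrightarrow> ph S' = ph S"
  by (auto simp: rstep_def split: option.splits job.splits if_splits prod.splits)

lemma lstep_ph: "lstep j S co r = (S', co', r') \<Longrightarrow> ph S' = ph S"
  by (auto simp: lstep_def split: option.splits if_splits)

lemma ahalted_ph: "ahalted S \<Longrightarrow> ph S = ACC \<or> ph S = REJ"
  by (auto simp: ahalted_def ACCs_def REJs_def S0_def)

lemma finish_ph: "ph (finish j S) \<noteq> ACC \<and> ph (finish j S) \<noteq> REJ"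
  by (cases j) (simp_all add: finish_def startR_def)

context cc begin

definition rs :: "nat list \<Rightarrow> (nat \<Rightarrow> bool) \<Rightarrow> acfg \<Rightarrow> nat \<Rightarrow> acfg \<Rightarrow> bool" where
  "rs w c A n B \<longleftrightarrow> (astep w c ^^ n) A = B \<and>
     (\<forall>s\<le>n. AC ((astep w c ^^ s) A) = AC A \<and> \<not> ahalted (AS ((astep w c ^^ s) A)))"

lemma rs_refl: "\<not> ahalted (AS A) \<Longrightarrow> rs w c A 0 A" by (simp add: rs_def)

lemma rs_trans:
  assumes "rs w c A n B" "rs w c B m D"
  shows "rs w c A (n + m) D"
proof -
  have B: "(astep w c ^^ n) A = B" and acB: "AC B = AC A" using assms(1) unfolding rs_def by auto
  have "AC ((astep w c ^^ s) A) = AC A \<and> \<not> ahalted (AS ((astep w c ^^ s) A))" if "s \<le> n + m" for s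
  proof (cases "s \<le> n")
    case True then show ?thesis using assms(1) unfolding rs_def by auto
  next
    case False
    then have "(astep w c ^^ s) A = (astep w c ^^ (s - n)) B"
      using B by (metis funpow_add le_add_diff_inverse2 nat_le_linear comp_apply)
    then show ?thesis using assms(2) that False acB unfolding rs_def by auto
  qed
  moreover have "(astep w c ^^ (n + m)) A = D" using assms unfolding rs_def
    by (simp add: funpow_add add.commute)
  ultimately show ?thesis unfolding rs_def by auto
qed

lemma rs_one:
  assumes "\<not> ahalted (AS A)" "astep w c A = B" "\<not> ahalted (AS B)" "AC B = AC A"
  shows "rs w c A 1 B"
proof -
  have "AC ((astep w c ^^ s) A) = AC A \<and> \<not> ahalted (AS ((astep w c ^^ s) A))" if "s \<le> 1" for s
  proof -
    have "s = 0 \<or> s = 1" using that by auto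
    then show ?thesis using assms by auto
  qed
  then show ?thesis using assms unfolding rs_def by auto
qed

lemma astep_unf:
  assumes "\<not> ahalted (AS A)"
    "adelta (AS A) (inp w (idxval (AR A))) (AT A (AH A)) (AR A (AG A)) (chsym c (AC A)) = (S', co, r', mw, mi, mc)"
  shows "astep w c A = A\<lparr>AS := S', AT := (AT A)(AH A := co), AH := mv mw (AH A), AR := (AR A)(AG A := r'),
           AG := mv mi (AG A), AC := mv mc (AC A)\<rparr>"
  using assms by (simp add: astep_def)

lemma not_ahalted_SR: "ph S = SR j \<Longrightarrow> \<not> ahalted S" and not_ahalted_SL: "ph S = SL j \<Longrightarrow> \<not> ahalted S"
  using ahalted_ph by fastforce+

lemma rpass:
  assumes "ph (AS A) = SR j" "AH A = p" "AG A = p" "p \<le> m" "\<sigma> p = AS A"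
    "\<And>i. p \<le> i \<Longrightarrow> i < m \<Longrightarrow> rstep j (\<sigma> i) (AT A i) (AR A i) = (\<sigma> (Suc i), T' i, R' i, True)"
    "rstep j (\<sigma> m) (AT A m) (AR A m) = (Sm, T' m, R' m, False)"
  shows "rs w c A (Suc (m - p)) (A\<lparr>AS := Sm\<lparr>ph := SL j, pnd := False, dn := False\<rparr>,
            AT := (\<lambda>i. if p \<le> i \<and> i \<le> m then T' i else AT A i),
            AH := m - 1, AR := (\<lambda>i. if p \<le> i \<and> i \<le> m then R' i else AR A i), AG := m - 1\<rparr>)"
  using assms
proof (induction "m - p" arbitrary: p A)
  case 0
  then have pm: "p = m" by simp
  have ph: "ph Sm = SR j" using rstep_ph[OF 0(8)] 0 pm by simp
  have "astep w c A = A\<lparr>AS := Sm\<lparr>ph := SL j, pnd := False, dn := False\<rparr>, AT := (AT A)(p := T' m),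
           AH := m - 1, AR := (AR A)(p := R' m), AG := m - 1\<rparr>"
    using 0 pm not_ahalted_SR[OF 0(2)] by (simp add: astep_def adelta_def)
  moreover have "(\<lambda>i. if p \<le> i \<and> i \<le> m then T' i else AT A i) = (AT A)(p := T' m)"
    "(\<lambda>i. if p \<le> i \<and> i \<le> m then R' i else AR A i) = (AR A)(p := R' m)"
    using pm by auto
  ultimately show ?case using pm rs_one[of A w c] not_ahalted_SR[OF 0(2)] not_ahalted_SL[of _ j]
    by simp
next
  case (Suc d)
  let ?A1 = "A\<lparr>AS := \<sigma> (Suc p), AT := (AT A)(p := T' p), AH := Suc p, AR := (AR A)(p := R' p), AG := Suc p\<rparr>"
  have pm: "p < m" using Suc.hyps(2) by simp
  have st0: "rstep j (\<sigma> p) (AT A p) (AR A p) = (\<sigma> (Suc p), T' p, R' p, True)"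
    using Suc.prems(6)[of p] pm by simp
  then have st1: "rstep j (AS A) (AT A p) (AR A p) = (\<sigma> (Suc p), T' p, R' p, True)"
    using Suc.prems(5) by simp
  have ph1: "ph (\<sigma> (Suc p)) = SR j" using rstep_ph[OF st1] Suc.prems(1) by simp
  have a1: "astep w c A = ?A1"
    using Suc.prems(1-3) st1 not_ahalted_SR[OF Suc.prems(1)] by (simp add: astep_def adelta_def)
  have r1: "rs w c A 1 ?A1" using rs_one[OF not_ahalted_SR[OF Suc.prems(1)] a1] not_ahalted_SR[OF ph1] by simp
  have ih: "rs w c ?A1 (Suc (m - Suc p)) (?A1\<lparr>AS := Sm\<lparr>ph := SL j, pnd := False, dn := False\<rparr>,
            AT := (\<lambda>i. if Suc p \<le> i \<and> i \<le> m then T' i else AT ?A1 i),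
            AH := m - 1, AR := (\<lambda>i. if Suc p \<le> i \<and> i \<le> m then R' i else AR ?A1 i), AG := m - 1\<rparr>)"
    by (rule Suc.hyps(1)) (use Suc.hyps(2) Suc.prems pm ph1 in auto)
  have eq: "?A1\<lparr>AS := Sm\<lparr>ph := SL j, pnd := False, dn := False\<rparr>,
            AT := (\<lambda>i. if Suc p \<le> i \<and> i \<le> m then T' i else AT ?A1 i),
            AH := m - 1, AR := (\<lambda>i. if Suc p \<le> i \<and> i \<le> m then R' i else AR ?A1 i), AG := m - 1\<rparr>
     = A\<lparr>AS := Sm\<lparr>ph := SL j, pnd := False, dn := False\<rparr>,
            AT := (\<lambda>i. if p \<le> i \<and> i \<le> m then T' i else AT A i),
            AH := m - 1, AR := (\<lambda>i. if p \<le> i \<and> i \<le> m then R' i else AR A i), AG := m - 1\<rparr>"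
    using pm by (auto simp: fun_eq_iff)
  have "Suc (m - p) = 1 + Suc (m - Suc p)" using pm by simp
  then show ?case using rs_trans[OF r1 ih] eq by simp
qed

lemma lpass:
  assumes "ph (AS A) = SL j" "AH A = p" "AG A = p" "\<tau> p = AS A"
    "\<And>i. 0 < i \<Longrightarrow> i \<le> p \<Longrightarrow> lstep j (\<tau> i) (AT A i) (AR A i) = (\<tau> (i - 1), T' i, R' i) \<and> \<not> orgo (AT A i)"
    "lstep j (\<tau> 0) (AT A 0) (AR A 0) = (Sf, T' 0, R' 0)" "orgo (AT A 0)"
  shows "rs w c A (Suc p) (A\<lparr>AS := finish j Sf,
            AT := (\<lambda>i. if i \<le> p then T' i else AT A i),
            AH := 0, AR := (\<lambda>i. if i \<le> p then R' i else AR A i), AG := 0\<rparr>)"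
  using assms
proof (induction p arbitrary: A)
  case 0
  have "astep w c A = A\<lparr>AS := finish j Sf, AT := (AT A)(0 := T' 0), AH := 0, AR := (AR A)(0 := R' 0), AG := 0\<rparr>"
    using 0 not_ahalted_SL[OF 0(1)] by (simp add: astep_def adelta_def)
  moreover have "(\<lambda>i. if i \<le> 0 then T' i else AT A i) = (AT A)(0 := T' 0)"
    "(\<lambda>i. if i \<le> (0::nat) then R' i else AR A i) = (AR A)(0 := R' 0)" by auto
  moreover have "\<not> ahalted (finish j Sf)" using finish_ph ahalted_ph by blast
  ultimately show ?case using rs_one[of A w c] not_ahalted_SL[OF 0(1)] by simp
next
  case (Suc p)
  let ?A1 = "A\<lparr>AS := \<tau> p, AT := (AT A)(Suc p := T' (Suc p)), AH := p, AR := (AR A)(Suc p := R' (Suc p)), AG := p\<rparr>"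
  have st1: "lstep j (\<tau> (Suc p)) (AT A (Suc p)) (AR A (Suc p)) = (\<tau> p, T' (Suc p), R' (Suc p))"
    and no: "\<not> orgo (AT A (Suc p))" using Suc.prems(5)[of "Suc p"] by auto
  have st2: "lstep j (AS A) (AT A (Suc p)) (AR A (Suc p)) = (\<tau> p, T' (Suc p), R' (Suc p))"
    using st1 Suc.prems(4) by simp
  have ph1: "ph (\<tau> p) = SL j" using lstep_ph[OF st2] Suc.prems(1) by simp
  have a1: "astep w c A = ?A1"
    using Suc.prems(1-3) st2 no not_ahalted_SL[OF Suc.prems(1)] by (simp add: astep_def adelta_def)
  have r1: "rs w c A 1 ?A1" using rs_one[OF not_ahalted_SL[OF Suc.prems(1)] a1] not_ahalted_SL[OF ph1] by simp
  have ih: "rs w c ?A1 (Suc p) (?A1\<lparr>AS := finish j Sf,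
            AT := (\<lambda>i. if i \<le> p then T' i else AT ?A1 i),
            AH := 0, AR := (\<lambda>i. if i \<le> p then R' i else AR ?A1 i), AG := 0\<rparr>)"
    by (rule Suc.IH) (use Suc.prems ph1 in auto)
  have eq: "?A1\<lparr>AS := finish j Sf,
            AT := (\<lambda>i. if i \<le> p then T' i else AT ?A1 i),
            AH := 0, AR := (\<lambda>i. if i \<le> p then R' i else AR ?A1 i), AG := 0\<rparr>
     = A\<lparr>AS := finish j Sf,
            AT := (\<lambda>i. if i \<le> Suc p then T' i else AT A i),
            AH := 0, AR := (\<lambda>i. if i \<le> Suc p then R' i else AR A i), AG := 0\<rparr>"
    by (auto simp: fun_eq_iff le_Suc_eq)
  have "Suc (Suc p) = 1 + Suc p" by simp
  then show ?case using rs_trans[OF r1 ih] eq by simp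
qed

end

fun vw :: "job \<Rightarrow> cell \<Rightarrow> nat \<Rightarrow> nat" where
  "vw AW1 c r = w1 c" | "vw AX1 c r = x1 c" | "vw AW2 c r = w2 c" | "vw AX2 c r = r" | "vw _ c r = 0"

definition track :: "job \<Rightarrow> (nat \<Rightarrow> cell option) \<Rightarrow> (nat \<Rightarrow> nat) \<Rightarrow> nat \<Rightarrow> (nat \<Rightarrow> nat) \<Rightarrow> nat \<Rightarrow> bool" where
  "track j T Rx E vals h \<longleftrightarrow> (\<forall>i<E. vw j (the (T i)) (Rx i) = vals i \<and> (getm j (the (T i)) \<longleftrightarrow> i = h))
     \<and> h < E \<and> (\<forall>i\<ge>E. vals i = 0)"

definition shape :: "(nat \<Rightarrow> cell option) \<Rightarrow> (nat \<Rightarrow> nat) \<Rightarrow> nat \<Rightarrow> bool" where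
  "shape T Rx E \<longleftrightarrow> (\<forall>i. (T i \<noteq> None) = (i < E)) \<and> (\<forall>i. orgo (T i) = (i = 0)) \<and> 0 < E \<and> (\<forall>i\<ge>E. Rx i = 0)"

definition ctr :: "(nat \<Rightarrow> cell option) \<Rightarrow> nat \<Rightarrow> nat \<Rightarrow> bool" where
  "ctr T E n \<longleftrightarrow> (\<forall>i<E. bt (the (T i)) = bit n i) \<and> n < 2 ^ E"

definition gj :: "job \<Rightarrow> bool" where "gj g \<longleftrightarrow> g \<in> {GW1, GX1, GW2, GX2}"

fun tj :: "job \<Rightarrow> job" where
  "tj GW1 = AW1" | "tj GX1 = AX1" | "tj GW2 = AW2" | "tj GX2 = AX2" | "tj j = j"

fun gupd :: "job \<Rightarrow> ast \<Rightarrow> nat \<Rightarrow> ast" where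
  "gupd GW1 S v = S\<lparr>s1 := v\<rparr>" | "gupd GX1 S v = S\<lparr>i1 := v\<rparr>" | "gupd GW2 S v = S\<lparr>s2 := v\<rparr>"
| "gupd GX2 S v = S\<lparr>i2 := v\<rparr>" | "gupd _ S v = S"

lemma rstep_gather: "gj g \<Longrightarrow> rstep g S (Some c) r = (if getm (tj g) c then gupd g S (vw (tj g) c r) else S, Some c, r, True)"
  by (auto simp: gj_def rstep_def)

lemma gupd_fields[simp]: "ph (gupd g S v) = ph S" "pnd (gupd g S v) = pnd S"
  by (cases g; simp)+

lemma gupd_upd[simp]: "(gupd g S v)\<lparr>ph := p, pnd := a, dn := b\<rparr> = gupd g (S\<lparr>ph := p, pnd := a, dn := b\<rparr>) v"
  by (cases g; simp)

lemma lstep_id: "\<not> (isap j \<and> jmv j S = L) \<Longrightarrow> lstep j S co r = (S, co, r)"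
  by (auto simp: lstep_def split: option.splits)

lemma rstep_None: "\<not> pnd S \<Longrightarrow> j \<noteq> INC \<Longrightarrow> rstep j S None r = (S, None, r, False)"
  by (simp add: rstep_def)

context cc begin

lemma sweep_idL:
  assumes "ph (AS A) = SR j" "AH A = 0" "AG A = 0" "0 < m" "\<sigma> 0 = AS A"
    "\<And>i. i < m \<Longrightarrow> rstep j (\<sigma> i) (AT A i) (AR A i) = (\<sigma> (Suc i), T' i, R' i, True)"
    "rstep j (\<sigma> m) (AT A m) (AR A m) = (Sm, T' m, R' m, False)"
    "\<not> (isap j \<and> jmv j Sm = L)"
    "orgo (T' 0)" "\<And>i. 0 < i \<Longrightarrow> i < m \<Longrightarrow> \<not> orgo (T' i)"
  shows "rs w c A (Suc m + m) (A\<lparr>AS := finish j (Sm\<lparr>ph := SL j, pnd := False, dn := False\<rparr>),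
            AT := (\<lambda>i. if i \<le> m then T' i else AT A i),
            AH := 0, AR := (\<lambda>i. if i \<le> m then R' i else AR A i), AG := 0\<rparr>)"
proof -
  let ?S1 = "Sm\<lparr>ph := SL j, pnd := False, dn := False\<rparr>"
  let ?A1 = "A\<lparr>AS := ?S1, AT := (\<lambda>i. if 0 \<le> i \<and> i \<le> m then T' i else AT A i),
            AH := m - 1, AR := (\<lambda>i. if 0 \<le> i \<and> i \<le> m then R' i else AR A i), AG := m - 1\<rparr>"
  have r1: "rs w c A (Suc (m - 0)) ?A1"
    by (rule rpass[where \<sigma>=\<sigma>]) (use assms in auto)
  have li: "lstep j ?S1 co r = (?S1, co, r)" for co r
    by (rule lstep_id) (use assms(8) in \<open>cases j; simp\<close>)
  have r2: "rs w c ?A1 (Suc (m - 1)) (?A1\<lparr>AS := finish j ?S1,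
            AT := (\<lambda>i. if i \<le> m - 1 then AT ?A1 i else AT ?A1 i),
            AH := 0, AR := (\<lambda>i. if i \<le> m - 1 then AR ?A1 i else AR ?A1 i), AG := 0\<rparr>)"
    by (rule lpass[where \<tau>="\<lambda>_. ?S1"]) (use assms li in auto)
  have "Suc m + m = Suc (m - 0) + Suc (m - 1)" using assms(4) by simp
  then show ?thesis using rs_trans[OF r1 r2] assms(2,3) by (simp add: fun_eq_iff)
qed

lemma gather_sweep:
  assumes "ph (AS A) = SR g" "gj g" "AH A = 0" "AG A = 0" "\<not> pnd (AS A)"
    "shape (AT A) (AR A) E" "track (tj g) (AT A) (AR A) E vals h"
  shows "rs w c A (Suc E + E) (A\<lparr>AS := finish g (gupd g ((AS A)\<lparr>ph := SL g, pnd := False, dn := False\<rparr>) (vals h))\<rparr>)"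
proof -
  let ?S = "AS A"
  define \<sigma> where "\<sigma> i = (if h < i then gupd g ?S (vals h) else ?S)" for i
  have E: "0 < E" "\<forall>i. (AT A i \<noteq> None) = (i < E)" "\<forall>i. orgo (AT A i) = (i = 0)"
    using assms(6) by (auto simp: shape_def)
  have tr: "\<forall>i<E. vw (tj g) (the (AT A i)) (AR A i) = vals i \<and> (getm (tj g) (the (AT A i)) \<longleftrightarrow> i = h)" "h < E"
    using assms(7) by (auto simp: track_def)
  have st: "rstep g (\<sigma> i) (AT A i) (AR A i) = (\<sigma> (Suc i), AT A i, AR A i, True)" if "i < E" for i
  proof -
    have "AT A i \<noteq> None" using E(2) that by simp
    then obtain cl where cl: "AT A i = Some cl" by auto
    show ?thesis using tr that cl by (auto simp: rstep_gather[OF assms(2)] \<sigma>_def)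
  qed
  have ng: "g \<noteq> INC" using assms(2) by (auto simp: gj_def)
  have pn: "\<not> pnd (\<sigma> E)" using assms(5) by (simp add: \<sigma>_def)
  have stE: "rstep g (\<sigma> E) (AT A E) (AR A E) = (\<sigma> E, AT A E, AR A E, False)"
    using E(2) rstep_None[OF pn ng] by auto
  have "rs w c A (Suc E + E) (A\<lparr>AS := finish g ((\<sigma> E)\<lparr>ph := SL g, pnd := False, dn := False\<rparr>),
            AT := (\<lambda>i. if i \<le> E then AT A i else AT A i),
            AH := 0, AR := (\<lambda>i. if i \<le> E then AR A i else AR A i), AG := 0\<rparr>)"
    by (rule sweep_idL[where \<sigma>=\<sigma>]) (use assms E st stE in \<open>auto simp: \<sigma>_def isap_def gj_def\<close>)
  moreover have "A\<lparr>AS := X, AT := AT A, AH := 0, AR := AR A, AG := 0\<rparr> = A\<lparr>AS := X\<rparr>" for X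
    using assms(3,4) by (cases A) simp
  ultimately show ?thesis using tr(2) by (simp add: \<sigma>_def)
qed

end

section \<open>Bit lemmas\<close>

lemma bit_sum_pow: "finite A \<Longrightarrow> bit (\<Sum>i\<in>A. (2::nat) ^ i) l \<longleftrightarrow> l \<in> A"
proof (induction A arbitrary: l rule: finite_induct)
  case empty then show ?case by simp
next
  case (insert a A)
  have "bit ((2::nat) ^ a + (\<Sum>i\<in>A. 2 ^ i)) l \<longleftrightarrow> bit ((2::nat) ^ a) l \<or> bit (\<Sum>i\<in>A. (2::nat) ^ i) l"
    by (rule bit_disjunctive_add_iff) (use insert.IH insert.hyps in \<open>auto simp: bit_exp_iff\<close>)
  then show ?case using insert by (auto simp: bit_exp_iff)
qed

lemma bit_idxval: "finite {i. t i = 2} \<Longrightarrow> bit (idxval t) l \<longleftrightarrow> t l = 2"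
  unfolding idxval_def using bit_sum_pow by auto

lemma bit_lt_pow: "(n::nat) < 2 ^ E \<Longrightarrow> E \<le> l \<Longrightarrow> \<not> bit n l"
proof -
  assume a: "n < 2 ^ E" "E \<le> l"
  have "(2::nat) ^ E \<le> 2 ^ l" using a(2) by (simp add: power_increasing)
  then have "n < 2 ^ l" using a(1) by linarith
  then have "n div 2 ^ l = 0" by simp
  then show ?thesis by (simp add: bit_iff_odd)
qed

lemma eq_by_bits: "(n::nat) < 2 ^ E \<Longrightarrow> p < 2 ^ E \<Longrightarrow> (\<forall>l<E. bit n l \<longleftrightarrow> bit p l) \<Longrightarrow> n = p"
  by (rule bit_eqI) (metis bit_lt_pow not_less)

lemma bit_inc: "bit (Suc n) j \<longleftrightarrow> (bit n j \<noteq> (\<forall>i<j. bit n i))"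
proof (induction j arbitrary: n)
  case 0 then show ?case by (simp add: bit_0)
next
  case (Suc j)
  show ?case
  proof (cases "even n")
    case True
    then have "Suc n div 2 = n div 2" by presburger
    moreover have "\<not> (\<forall>i<Suc j. bit n i)" using True by (auto simp: bit_0)
    ultimately show ?thesis by (simp add: bit_Suc)
  next
    case False
    then have "Suc n div 2 = Suc (n div 2)" by presburger
    moreover have "(\<forall>i<Suc j. bit n i) \<longleftrightarrow> (\<forall>i<j. bit (n div 2) i)"
      using False by (auto simp: bit_0 bit_Suc less_Suc_eq_0_disj)
    ultimately show ?thesis using Suc[of "n div 2"] by (simp add: bit_Suc)
  qed
qed

lemma all_bits_pow: assumes "(n::nat) < 2 ^ E" "\<forall>l<E. bit n l" shows "Suc n = 2 ^ E"
proof -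
  have "n = mask E"
  proof (rule bit_eqI)
    fix l show "bit n l \<longleftrightarrow> bit (mask E :: nat) l"
      using assms(2) bit_lt_pow[OF assms(1), of l] by (cases "l < E") (auto simp: bit_mask_iff)
  qed
  then show ?thesis by (simp add: mask_eq_exp_minus_1)
qed

lemma not_all_bits: assumes "(n::nat) < 2 ^ E" "\<not> (\<forall>l<E. bit n l)" shows "Suc n < 2 ^ E"
proof (rule ccontr)
  assume "\<not> Suc n < 2 ^ E"
  then have "Suc n = 2 ^ E" using assms(1) by simp
  then have "n = mask E" by (simp add: mask_eq_exp_minus_1)
  then show False using assms(2) by (simp add: bit_mask_iff)
qed


lemma shape_Some: "shape T Rx E \<Longrightarrow> i < E \<Longrightarrow> T i = Some (the (T i))"
  by (auto simp: shape_def)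
lemma shape_dom: "shape T Rx E \<Longrightarrow> (T i \<noteq> None) = (i < E)"
  by (simp add: shape_def)
lemma shape_None: "shape T Rx E \<Longrightarrow> E \<le> i \<Longrightarrow> T i = None"
  using shape_dom[of T Rx E i] by auto
lemma shape_org: "shape T Rx E \<Longrightarrow> i < E \<Longrightarrow> org (the (T i)) = (i = 0)"
  by (auto simp: shape_def orgo_def dest!: spec[of _ i] split: option.splits)
lemma shape_R: "shape T Rx E \<Longrightarrow> E \<le> i \<Longrightarrow> Rx i = 0"
  by (auto simp: shape_def)
lemma shape_pos: "shape T Rx E \<Longrightarrow> 0 < E" by (auto simp: shape_def)

lemma shapeI:
  assumes "\<And>i. i < E \<Longrightarrow> \<exists>c. T i = Some c \<and> org c = (i = 0)" "\<And>i. E \<le> i \<Longrightarrow> T i = None \<and> Rx i = 0" "0 < E"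
  shows "shape T Rx E"
  unfolding shape_def orgo_def
proof (intro conjI allI)
  fix i show "(T i \<noteq> None) = (i < E)" using assms by (cases "i < E") force+
next
  fix i show "(case T i of None \<Rightarrow> False | Some c \<Rightarrow> org c) = (i = 0)"
    using assms by (cases "i < E") force+
next
  show "0 < E" by fact
next
  fix i show "E \<le> i \<longrightarrow> Rx i = 0" using assms by auto
qed

definition keep :: "job \<Rightarrow> cell \<Rightarrow> cell \<Rightarrow> nat \<Rightarrow> nat \<Rightarrow> bool" where
  "keep j c c' r r' \<longleftrightarrow> vw j c' r' = vw j c r \<and> getm j c' = getm j c"

lemma track_mono:
  assumes "track j T Rx E vals h" "E \<le> E'"
    "\<And>i. i < E \<Longrightarrow> keep j (the (T i)) (the (T2 i)) (Rx i) (R2 i)"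
    "\<And>i. E \<le> i \<Longrightarrow> i < E' \<Longrightarrow> vw j (the (T2 i)) (R2 i) = 0 \<and> \<not> getm j (the (T2 i))"
  shows "track j T2 R2 E' vals h"
proof -
  have a: "vw j (the (T2 i)) (R2 i) = vals i \<and> getm j (the (T2 i)) = (i = h)" if i: "i < E'" for i
  proof (cases "i < E")
    case True then show ?thesis using assms(1) assms(3)[of i] by (auto simp: track_def keep_def)
  next
    case False then show ?thesis using assms(1) assms(4)[of i] i by (auto simp: track_def)
  qed
  have b: "h < E'" using assms(1,2) by (auto simp: track_def)
  have c: "vals i = 0" if "E' \<le> i" for i using assms(1,2) that by (auto simp: track_def)
  show ?thesis unfolding track_def using a b c by blast
qed

lemma ctr_mono:
  assumes "ctr T E n" "E \<le> E'" "\<And>i. i < E \<Longrightarrow> bt (the (T2 i)) = bt (the (T i))"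
    "\<And>i. E \<le> i \<Longrightarrow> i < E' \<Longrightarrow> \<not> bt (the (T2 i))"
  shows "ctr T2 E' n"
  unfolding ctr_def
proof (intro conjI allI impI)
  fix i assume i: "i < E'"
  show "bt (the (T2 i)) = bit n i"
  proof (cases "i < E")
    case True then show ?thesis using assms(1) assms(3)[of i] by (auto simp: ctr_def)
  next
    case False then show ?thesis using assms(1) assms(4)[of i] i bit_lt_pow[of n E i] by (auto simp: ctr_def)
  qed
next
  have "(2::nat) ^ E \<le> 2 ^ E'" using assms(2) by (simp add: power_increasing)
  then show "n < 2 ^ E'" using assms(1) unfolding ctr_def by linarith
qed

definition rc :: "cell \<Rightarrow> cell" where "rc c = c\<lparr>w2 := 0, m2 := org c, n2 := org c, bt := False\<rparr>"

context cc begin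

lemma rst_sweep:
  assumes "ph (AS A) = SR RST" "AH A = 0" "AG A = 0" "\<not> pnd (AS A)" "shape (AT A) (AR A) E"
  shows "\<exists>n B. rs w c A n B \<and> AS B = finish RST ((AS A)\<lparr>ph := SL RST, pnd := False, dn := False\<rparr>)
     \<and> AH B = 0 \<and> AG B = 0 \<and> AR B = (\<lambda>_. 0)
     \<and> (\<forall>i. AT B i = (if i < E then Some (rc (the (AT A i))) else None))"
proof -
  let ?S = "AS A"
  define T' where "T' i = (if i < E then Some (rc (the (AT A i))) else None)" for i
  define R' where "R' i = (0::nat)" for i :: nat
  have E0: "0 < E" using shape_pos[OF assms(5)] .
  have st: "rstep RST ((\<lambda>_. ?S) i) (AT A i) (AR A i) = ((\<lambda>_. ?S) (Suc i), T' i, R' i, True)" if i: "i < E" for i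
  proof -
    obtain cl where cl: "AT A i = Some cl" using shape_Some[OF assms(5) i] by blast
    show ?thesis using cl i by (simp add: rstep_def T'_def R'_def rc_def)
  qed
  have stE: "rstep RST ?S (AT A E) (AR A E) = (?S, T' E, R' E, False)"
    using shape_None[OF assms(5), of E] shape_R[OF assms(5), of E] rstep_None[OF assms(4), of RST]
    by (simp add: T'_def R'_def)
  have org0: "orgo (T' 0)" using shape_org[OF assms(5) E0] E0 by (simp add: T'_def orgo_def rc_def)
  have orgi: "\<not> orgo (T' i)" if "0 < i" "i < E" for i
    using shape_org[OF assms(5) that(2)] that by (simp add: T'_def orgo_def rc_def)
  have r: "rs w c A (Suc E + E) (A\<lparr>AS := finish RST (?S\<lparr>ph := SL RST, pnd := False, dn := False\<rparr>),
            AT := (\<lambda>i. if i \<le> E then T' i else AT A i),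
            AH := 0, AR := (\<lambda>i. if i \<le> E then R' i else AR A i), AG := 0\<rparr>)"
    by (rule sweep_idL[where \<sigma>="\<lambda>_. ?S"]) (use assms E0 st stE org0 orgi in \<open>auto simp: isap_def\<close>)
  have "(\<lambda>i. if i \<le> E then T' i else AT A i) = T'"
    using shape_None[OF assms(5)] by (auto simp: T'_def fun_eq_iff)
  moreover have "(\<lambda>i. if i \<le> E then R' i else AR A i) = (\<lambda>_. 0)"
    using shape_R[OF assms(5)] by (auto simp: R'_def fun_eq_iff)
  ultimately have "rs w c A (Suc E + E) (A\<lparr>AS := finish RST (?S\<lparr>ph := SL RST, pnd := False, dn := False\<rparr>),
            AT := T', AH := 0, AR := (\<lambda>_. 0), AG := 0\<rparr>)" using r by simp
  then show ?thesis unfolding T'_def by (intro exI) auto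
qed

lemma cmp_sweep:
  assumes "ph (AS A) = SR CMP" "AH A = 0" "AG A = 0" "\<not> pnd (AS A)" "shape (AT A) (AR A) E"
  shows "\<exists>n B. rs w c A n B \<and> AS B = finish CMP ((AS A)\<lparr>eqf := (eqf (AS A) \<and> (\<forall>l<E. bt (the (AT A l)) = (x1 (the (AT A l)) = 2))),
         ph := SL CMP, pnd := False, dn := False\<rparr>)
     \<and> AH B = 0 \<and> AG B = 0 \<and> AR B = AR A \<and> AT B = AT A"
proof -
  let ?S = "AS A"
  define \<sigma> where "\<sigma> i = ?S\<lparr>eqf := (eqf ?S \<and> (\<forall>l<i. bt (the (AT A l)) = (x1 (the (AT A l)) = 2)))\<rparr>" for i
  have E0: "0 < E" using shape_pos[OF assms(5)] .
  have st: "rstep CMP (\<sigma> i) (AT A i) (AR A i) = (\<sigma> (Suc i), AT A i, AR A i, True)" if i: "i < E" for i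
  proof -
    obtain cl where cl: "AT A i = Some cl" using shape_Some[OF assms(5) i] by blast
    show ?thesis using cl i by (auto simp: rstep_def \<sigma>_def All_less_Suc conj_ac)
  qed
  have stE: "rstep CMP (\<sigma> E) (AT A E) (AR A E) = (\<sigma> E, AT A E, AR A E, False)"
    using shape_None[OF assms(5), of E] rstep_None[of "\<sigma> E" CMP] assms(4) by (simp add: \<sigma>_def)
  have r: "rs w c A (Suc E + E) (A\<lparr>AS := finish CMP ((\<sigma> E)\<lparr>ph := SL CMP, pnd := False, dn := False\<rparr>),
            AT := (\<lambda>i. if i \<le> E then AT A i else AT A i),
            AH := 0, AR := (\<lambda>i. if i \<le> E then AR A i else AR A i), AG := 0\<rparr>)"
  proof (rule sweep_idL[where \<sigma>=\<sigma>])
    show "orgo (AT A 0)" using assms(5) E0 by (auto simp: shape_def)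
    show "\<not> orgo (AT A i)" if "0 < i" "i < E" for i using assms(5) that by (auto simp: shape_def)
  qed (use assms E0 st stE in \<open>auto simp: isap_def \<sigma>_def\<close>)
  then show ?thesis unfolding \<sigma>_def by (intro exI) auto
qed

end

lemma rstep_INC_None: "\<not> pnd S \<Longrightarrow> \<not> cry S \<Longrightarrow> rstep INC S None r = (S, None, r, False)"
  by (simp add: rstep_def)

lemma keep_bt: "isap j \<Longrightarrow> keep j c (c\<lparr>bt := b\<rparr>) r r"
  by (cases j) (auto simp: keep_def isap_def)

lemma cdef_views: "vw j cdef 0 = 0" "\<not> getm j cdef" "vw j (cdef\<lparr>bt := b\<rparr>) 0 = 0" "\<not> getm j (cdef\<lparr>bt := b\<rparr>)"
  by (cases j; simp add: cdef_def)+

context cc begin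

lemma inc_sweep:
  assumes "ph (AS A) = SR INC" "AH A = 0" "AG A = 0" "\<not> pnd (AS A)" "cry (AS A)"
    "shape (AT A) (AR A) E" "ctr (AT A) E n" "Suc n < 2 ^ Bnd" "E \<le> Bnd"
  shows "\<exists>k B E'. rs w c A k B \<and> (\<exists>S'. AS B = finish INC S' \<and> q1 S' = q1 (AS A) \<and> q2 S' = q2 (AS A)
     \<and> s1 S' = s1 (AS A) \<and> i1 S' = i1 (AS A)) \<and> AH B = 0 \<and> AG B = 0 \<and> AR B = AR A
     \<and> E \<le> E' \<and> E' \<le> Bnd \<and> shape (AT B) (AR B) E' \<and> ctr (AT B) E' (Suc n)
     \<and> (\<forall>j vals h. isap j \<longrightarrow> track j (AT A) (AR A) E vals h \<longrightarrow> track j (AT B) (AR B) E' vals h)"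
proof -
  let ?S = "AS A"
  let ?T = "AT A" let ?R = "AR A"
  define \<sigma>0 where "\<sigma>0 i = ?S\<lparr>cry := (\<forall>l<i. bit n l)\<rparr>" for i
  have E0: "0 < E" using shape_pos[OF assms(6)] .
  have bits: "\<forall>i<E. bt (the (?T i)) = bit n i" "n < 2 ^ E" using assms(7) by (auto simp: ctr_def)
  define Tn where "Tn i = Some ((the (?T i))\<lparr>bt := bit (Suc n) i\<rparr>)" for i
  have st: "rstep INC (\<sigma>0 i) (?T i) (?R i) = (\<sigma>0 (Suc i), Tn i, ?R i, True)" if i: "i < E" for i
  proof -
    obtain cl where cl: "?T i = Some cl" using shape_Some[OF assms(6) i] by blast
    have "bt cl = bit n i" using bits i cl by auto
    then show ?thesis using cl i assms(5) by (auto simp: rstep_def \<sigma>0_def Tn_def All_less_Suc bit_inc)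
  qed
  have org0: "orgo (Tn 0)" using shape_org[OF assms(6) E0] by (simp add: Tn_def orgo_def)
  have orgi: "\<not> orgo (Tn i)" if "0 < i" "i < E" for i using shape_org[OF assms(6) that(2)] that by (simp add: Tn_def orgo_def)
  have keepT: "keep j (the (?T i)) (the (Tn i)) (?R i) (?R i)" if "isap j" for j i
    using keep_bt[OF that] by (simp add: Tn_def)
  show ?thesis
  proof (cases "\<forall>l<E. bit n l")
    case False
    have stE: "rstep INC (\<sigma>0 E) (?T E) (?R E) = (\<sigma>0 E, ?T E, ?R E, False)"
    proof -
      have "(\<forall>l<E. bit n l) = False" using False by simp
      then show ?thesis using shape_None[OF assms(6), of E] rstep_INC_None[of "\<sigma>0 E"] assms(4) by (simp add: \<sigma>0_def)
    qed
    have r: "rs w c A (Suc E + E) (A\<lparr>AS := finish INC ((\<sigma>0 E)\<lparr>ph := SL INC, pnd := False, dn := False\<rparr>),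
            AT := (\<lambda>i. if i \<le> E then (Tn(E := ?T E)) i else ?T i),
            AH := 0, AR := (\<lambda>i. if i \<le> E then ?R i else ?R i), AG := 0\<rparr>)"
      by (rule sweep_idL[where \<sigma>=\<sigma>0]) (use assms E0 st stE org0 orgi in \<open>auto simp: isap_def \<sigma>0_def\<close>)
    let ?T2 = "\<lambda>i. if i \<le> E then (Tn(E := ?T E)) i else ?T i"
    have T2: "?T2 i = (if i < E then Tn i else None)" for i
      using shape_None[OF assms(6), of i] by auto
    have sh: "shape ?T2 ?R E"
      by (rule shapeI) (use T2 shape_org[OF assms(6)] shape_R[OF assms(6)] shape_None[OF assms(6)] E0 in \<open>auto simp: Tn_def\<close>)
    have ct: "ctr ?T2 E (Suc n)" using T2 not_all_bits[OF bits(2) False] by (auto simp: ctr_def Tn_def)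
    have tr: "track j ?T2 ?R E vals h" if "isap j" "track j ?T ?R E vals h" for j vals h
      by (rule track_mono[OF that(2) order_refl]) (use keepT[OF that(1)] T2 in auto)
    show ?thesis
      apply (rule exI[where x="Suc E + E"])
      apply (rule exI[where x="A\<lparr>AS := finish INC ((\<sigma>0 E)\<lparr>ph := SL INC, pnd := False, dn := False\<rparr>),
            AT := ?T2, AH := 0, AR := (\<lambda>i. if i \<le> E then ?R i else ?R i), AG := 0\<rparr>"])
      apply (rule exI[where x=E])
      using r sh ct tr assms(9) by (auto simp: \<sigma>0_def finish_def)
  next
    case True
    define \<sigma> where "\<sigma> i = (if i \<le> E then \<sigma>0 i else (\<sigma>0 E)\<lparr>cry := False\<rparr>)" for i
    define T' where "T' i = (if i < E then Tn i else if i = E then Some (cdef\<lparr>bt := True\<rparr>) else None)" for i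
    have EB: "Suc E \<le> Bnd"
    proof -
      have "Suc n = 2 ^ E" using all_bits_pow[OF bits(2) True] .
      then have "(2::nat) ^ E < 2 ^ Bnd" using assms(8) by simp
      then show ?thesis by simp
    qed
    have st': "rstep INC (\<sigma> i) (?T i) (?R i) = (\<sigma> (Suc i), T' i, ?R i, True)" if i: "i < Suc E" for i
    proof (cases "i < E")
      case True then show ?thesis using st[of i] by (simp add: \<sigma>_def T'_def)
    next
      case False
      then have iE: "i = E" using i by simp
      have "cry (\<sigma>0 E)" using True by (simp add: \<sigma>0_def)
      then show ?thesis using iE shape_None[OF assms(6), of E] assms(4)
        by (simp add: rstep_def \<sigma>_def T'_def \<sigma>0_def)
    qed
    have stE: "rstep INC (\<sigma> (Suc E)) (?T (Suc E)) (?R (Suc E)) = (\<sigma> (Suc E), T' (Suc E), ?R (Suc E), False)"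
      using shape_None[OF assms(6), of "Suc E"] rstep_INC_None[of "\<sigma> (Suc E)"] assms(4)
      by (simp add: \<sigma>_def \<sigma>0_def T'_def)
    have r: "rs w c A (Suc (Suc E) + Suc E) (A\<lparr>AS := finish INC ((\<sigma> (Suc E))\<lparr>ph := SL INC, pnd := False, dn := False\<rparr>),
            AT := (\<lambda>i. if i \<le> Suc E then T' i else ?T i),
            AH := 0, AR := (\<lambda>i. if i \<le> Suc E then ?R i else ?R i), AG := 0\<rparr>)"
    proof (rule sweep_idL[where \<sigma>=\<sigma>])
      show "orgo (T' 0)" using org0 E0 by (simp add: T'_def)
      show "\<not> orgo (T' i)" if "0 < i" "i < Suc E" for i
        using orgi[of i] that by (cases "i < E") (auto simp: T'_def orgo_def cdef_def)
    qed (use assms st' stE in \<open>auto simp: isap_def \<sigma>_def \<sigma>0_def\<close>)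
    let ?T2 = "\<lambda>i. if i \<le> Suc E then T' i else ?T i"
    have T2: "?T2 i = T' i" for i
      using shape_None[OF assms(6), of i] by (auto simp: T'_def)
    have sh: "shape ?T2 ?R (Suc E)"
      by (rule shapeI) (use T2 shape_org[OF assms(6)] shape_R[OF assms(6)] shape_None[OF assms(6)] E0 in \<open>auto simp: Tn_def T'_def cdef_def\<close>)
    have ct: "ctr ?T2 (Suc E) (Suc n)"
    proof -
      have "bt (the (T' i)) = bit (Suc n) i" if "i < Suc E" for i
      proof (cases "i < E")
        case True then show ?thesis by (simp add: T'_def Tn_def)
      next
        case False
        then have "i = E" using that by simp
        then show ?thesis using bit_inc[of n E] True bit_lt_pow[OF bits(2), of E] by (simp add: T'_def)
      qed
      moreover have "Suc n < 2 ^ Suc E" using all_bits_pow[OF bits(2) True] by simp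
      ultimately show ?thesis using T2 by (simp add: ctr_def)
    qed
    have tr: "track j ?T2 ?R (Suc E) vals h" if "isap j" "track j ?T ?R E vals h" for j vals h
    proof (rule track_mono[OF that(2)])
      show "keep j (the (?T i)) (the (?T2 i)) (?R i) (?R i)" if "i < E" for i
        using keepT[OF \<open>isap j\<close>, of i] that T2 by (simp add: T'_def)
      show "vw j (the (?T2 i)) (?R i) = 0 \<and> \<not> getm j (the (?T2 i))" if "E \<le> i" "i < Suc E" for i
      proof -
        have "i = E" using that by simp
        then show ?thesis using shape_R[OF assms(6), of E] cdef_views[of j] T2 by (simp add: T'_def)
      qed
    qed simp
    show ?thesis
      apply (rule exI[where x="Suc (Suc E) + Suc E"])
      apply (rule exI[where x="A\<lparr>AS := finish INC ((\<sigma> (Suc E))\<lparr>ph := SL INC, pnd := False, dn := False\<rparr>),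
            AT := ?T2, AH := 0, AR := (\<lambda>i. if i \<le> Suc E then ?R i else ?R i), AG := 0\<rparr>"])
      apply (rule exI[where x="Suc E"])
      using r sh ct tr EB by (auto simp: \<sigma>_def \<sigma>0_def finish_def)
  qed
qed

end

lemma isap_cases: "isap j \<Longrightarrow> j = AW1 \<or> j = AX1 \<or> j = AW2 \<or> j = AX2"
  by (auto simp: isap_def)

lemma rstep_ap: "isap j \<Longrightarrow> rstep j S (Some c) r =
  (if pnd S then (S\<lparr>pnd := False, dn := True\<rparr>, Some (setm j True c), r, True)
   else if getm j c \<and> \<not> dn S then
     (if jmv j S = R then (S\<lparr>pnd := True, dn := True\<rparr>, Some (setm j False (fst (setv j (jval j S) c r))), snd (setv j (jval j S) c r), True)
      else (S\<lparr>dn := True\<rparr>, Some (fst (setv j (jval j S) c r)), snd (setv j (jval j S) c r), True))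
   else (S, Some c, r, True))"
  by (auto simp: isap_def rstep_def split: prod.splits)

lemma lstep_apL: "isap j \<Longrightarrow> jmv j S = L \<Longrightarrow> lstep j S (Some c) r =
  (if pnd S then (S\<lparr>pnd := False, dn := True\<rparr>, Some (setm j True c), r)
   else if getm j c \<and> \<not> dn S \<and> \<not> org c then (S\<lparr>pnd := True, dn := True\<rparr>, Some (setm j False c), r)
   else (S, Some c, r))"
  by (simp add: lstep_def)

lemma jmv_upd[simp]: "jmv j (S\<lparr>pnd := a\<rparr>) = jmv j S" "jmv j (S\<lparr>dn := a\<rparr>) = jmv j S" "jmv j (S\<lparr>ph := p\<rparr>) = jmv j S"
  by (cases j; simp)+
lemma jval_upd[simp]: "jval j (S\<lparr>pnd := a\<rparr>) = jval j S" "jval j (S\<lparr>dn := a\<rparr>) = jval j S" "jval j (S\<lparr>ph := p\<rparr>) = jval j S"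
  by (cases j; simp)+

lemma setm_views: "isap j \<Longrightarrow> getm j (setm j b c) = b" "vw j' (setm j b c) r = vw j' c r"
  "isap j \<Longrightarrow> j' \<noteq> j \<Longrightarrow> getm j' (setm j b c) = getm j' c" "org (setm j b c) = org c" "bt (setm j b c) = bt c"
  by (cases j; cases j'; simp add: isap_def)+

lemma setv_views: "isap j \<Longrightarrow> vw j (fst (setv j v c r)) (snd (setv j v c r)) = v"
  "getm j' (fst (setv j v c r)) = getm j' c"
  "isap j \<Longrightarrow> j' \<noteq> j \<Longrightarrow> vw j' (fst (setv j v c r)) (snd (setv j v c r)) = vw j' c r"
  "org (fst (setv j v c r)) = org c" "bt (fst (setv j v c r)) = bt c"
  by (cases j; cases j'; simp add: isap_def)+

lemma keep_refl: "keep j c c r r" by (simp add: keep_def)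

context cc begin

lemma ap_rpass_nR:
  assumes "ph (AS A) = SR j" "isap j" "AH A = 0" "AG A = 0" "\<not> pnd (AS A)" "\<not> dn (AS A)"
    "shape (AT A) (AR A) E" "track j (AT A) (AR A) E vals h" "jmv j (AS A) \<noteq> R"
  shows "rs w c A (Suc E) (A\<lparr>AS := (AS A)\<lparr>dn := True, ph := SL j, pnd := False, dn := False\<rparr>,
     AT := (AT A)(h := Some (fst (setv j (jval j (AS A)) (the (AT A h)) (AR A h)))), AH := E - 1,
     AR := (AR A)(h := snd (setv j (jval j (AS A)) (the (AT A h)) (AR A h))), AG := E - 1\<rparr>)"
proof -
  let ?S = "AS A" let ?T = "AT A" let ?R = "AR A"
  let ?c1 = "fst (setv j (jval j ?S) (the (?T h)) (?R h))"
  let ?r1 = "snd (setv j (jval j ?S) (the (?T h)) (?R h))"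
  define \<sigma> where "\<sigma> i = (if i \<le> h then ?S else ?S\<lparr>dn := True\<rparr>)" for i
  define T' where "T' i = (if i = h then Some ?c1 else ?T i)" for i
  define R' where "R' i = (if i = h then ?r1 else ?R i)" for i
  have tr: "\<forall>i<E. getm j (the (?T i)) = (i = h)" "h < E" using assms(8) by (auto simp: track_def)
  have st: "rstep j (\<sigma> i) (?T i) (?R i) = (\<sigma> (Suc i), T' i, R' i, True)" if i: "i < E" for i
  proof -
    obtain cl where cl: "?T i = Some cl" using shape_Some[OF assms(7) i] by blast
    have g: "getm j cl = (i = h)" using tr i cl by auto
    show ?thesis using cl g assms(5,6,9) by (auto simp: rstep_ap[OF assms(2)] \<sigma>_def T'_def R'_def)
  qed
  have ne: "j \<noteq> INC" using assms(2) by (auto simp: isap_def)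
  have stE: "rstep j (\<sigma> E) (?T E) (?R E) = (\<sigma> E, T' E, R' E, False)"
    using shape_None[OF assms(7), of E] rstep_None[of "\<sigma> E" j] assms(5) ne tr(2)
    by (simp add: \<sigma>_def T'_def R'_def)
  have "rs w c A (Suc (E - 0)) (A\<lparr>AS := (\<sigma> E)\<lparr>ph := SL j, pnd := False, dn := False\<rparr>,
            AT := (\<lambda>i. if 0 \<le> i \<and> i \<le> E then T' i else ?T i),
            AH := E - 1, AR := (\<lambda>i. if 0 \<le> i \<and> i \<le> E then R' i else ?R i), AG := E - 1\<rparr>)"
    by (rule rpass[where \<sigma>=\<sigma>]) (use assms st stE in \<open>auto simp: \<sigma>_def\<close>)
  moreover have "(\<lambda>i. if 0 \<le> i \<and> i \<le> E then T' i else ?T i) = ?T(h := Some ?c1)"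
    "(\<lambda>i. if 0 \<le> i \<and> i \<le> E then R' i else ?R i) = ?R(h := ?r1)"
    using tr(2) by (auto simp: fun_eq_iff T'_def R'_def)
  ultimately show ?thesis using tr(2) by (simp add: \<sigma>_def)
qed

lemma lpass_id:
  assumes "ph (AS A) = SL j" "AH A = p" "AG A = p" "\<not> (isap j \<and> jmv j (AS A) = L)"
    "\<And>i. 0 < i \<Longrightarrow> i \<le> p \<Longrightarrow> \<not> orgo (AT A i)" "orgo (AT A 0)"
  shows "rs w c A (Suc p) (A\<lparr>AS := finish j (AS A), AH := 0, AG := 0\<rparr>)"
proof -
  have li: "lstep j (AS A) co r = (AS A, co, r)" for co r by (rule lstep_id[OF assms(4)])
  have "rs w c A (Suc p) (A\<lparr>AS := finish j (AS A),
            AT := (\<lambda>i. if i \<le> p then AT A i else AT A i),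
            AH := 0, AR := (\<lambda>i. if i \<le> p then AR A i else AR A i), AG := 0\<rparr>)"
    by (rule lpass[where \<tau>="\<lambda>_. AS A"]) (use assms li in auto)
  then show ?thesis by simp
qed

end

definition apres :: "job \<Rightarrow> acfg \<Rightarrow> acfg \<Rightarrow> nat \<Rightarrow> nat \<Rightarrow> (nat \<Rightarrow> nat) \<Rightarrow> nat \<Rightarrow> bool" where
 "apres j A B E E' vals h \<longleftrightarrow> (\<exists>P D. AS B = finish j ((AS A)\<lparr>ph := SL j, pnd := P, dn := D\<rparr>)) \<and> AH B = 0 \<and> AG B = 0
   \<and> E' = max E (Suc (mv (jmv j (AS A)) h)) \<and> shape (AT B) (AR B) E'
   \<and> track j (AT B) (AR B) E' (vals(h := jval j (AS A))) (mv (jmv j (AS A)) h)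
   \<and> (\<forall>j' vals' h'. isap j' \<and> j' \<noteq> j \<longrightarrow> track j' (AT A) (AR A) E vals' h' \<longrightarrow> track j' (AT B) (AR B) E' vals' h')
   \<and> (\<forall>n. ctr (AT A) E n \<longrightarrow> ctr (AT B) E' n)"

lemma apres_intro:
  assumes "\<exists>P D. AS B = finish j ((AS A)\<lparr>ph := SL j, pnd := P, dn := D\<rparr>)" "AH B = 0" "AG B = 0"
    "isap j" "shape (AT A) (AR A) E" "track j (AT A) (AR A) E vals h"
    "E' = max E (Suc (mv (jmv j (AS A)) h))"
    "\<And>i. i < E' \<Longrightarrow> AT B i \<noteq> None \<and> org (the (AT B i)) = (i = 0)"
    "\<And>i. E' \<le> i \<Longrightarrow> AT B i = None \<and> AR B i = 0"
    "\<And>i j'. i < E \<Longrightarrow> isap j' \<Longrightarrow> j' \<noteq> j \<Longrightarrow> keep j' (the (AT A i)) (the (AT B i)) (AR A i) (AR B i)"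
    "\<And>i. i < E \<Longrightarrow> bt (the (AT B i)) = bt (the (AT A i))"
    "\<And>i. E \<le> i \<Longrightarrow> i < E' \<Longrightarrow> the (AT B i) = setm j True cdef \<and> AR B i = 0"
    "\<And>i. i < E' \<Longrightarrow> vw j (the (AT B i)) (AR B i) = (vals(h := jval j (AS A))) i
        \<and> getm j (the (AT B i)) = (i = mv (jmv j (AS A)) h)"
  shows "apres j A B E E' vals h"
  unfolding apres_def
proof (intro conjI allI impI)
  show "\<exists>P D. AS B = finish j ((AS A)\<lparr>ph := SL j, pnd := P, dn := D\<rparr>)" by fact
  show "AH B = 0" "AG B = 0" by fact+
  show "E' = max E (Suc (mv (jmv j (AS A)) h))" by fact
  have E0: "0 < E'" using assms(7) by simp
  show "shape (AT B) (AR B) E'"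
  proof (rule shapeI)
    fix i assume i: "i < E'"
    then obtain y where "AT B i = Some y" using assms(8)[OF i] by auto
    then show "\<exists>c. AT B i = Some c \<and> org c = (i = 0)" using assms(8)[OF i] by auto
  qed (use assms(9) E0 in auto)
  have hE: "h < E" "\<forall>i\<ge>E. vals i = 0" using assms(6) by (auto simp: track_def)
  show "track j (AT B) (AR B) E' (vals(h := jval j (AS A))) (mv (jmv j (AS A)) h)"
    unfolding track_def using assms(13) assms(7) hE by auto
  show "track j' (AT B) (AR B) E' vals' h'" if "isap j' \<and> j' \<noteq> j" "track j' (AT A) (AR A) E vals' h'" for j' vals' h'
  proof (rule track_mono[OF that(2)])
    show "E \<le> E'" using assms(7) by simp
    show "keep j' (the (AT A i)) (the (AT B i)) (AR A i) (AR B i)" if "i < E" for i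
      using assms(10) that \<open>isap j' \<and> j' \<noteq> j\<close> by blast
    show "vw j' (the (AT B i)) (AR B i) = 0 \<and> \<not> getm j' (the (AT B i))" if "E \<le> i" "i < E'" for i
      using assms(12)[OF that] cdef_views[of j'] setm_views(2)[of j' j True cdef 0] setm_views(3)[OF assms(4), of j' True cdef]
        \<open>isap j' \<and> j' \<noteq> j\<close> by auto
  qed
  show "ctr (AT B) E' n" if "ctr (AT A) E n" for n
  proof (rule ctr_mono[OF that])
    show "E \<le> E'" using assms(7) by simp
    show "bt (the (AT B i)) = bt (the (AT A i))" if "i < E" for i using assms(11) that by blast
    show "\<not> bt (the (AT B i))" if "E \<le> i" "i < E'" for i
      using assms(12)[OF that] setm_views(5)[of j True cdef] by (simp add: cdef_def)
  qed
qed

context cc begin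

lemma apply_N:
  assumes "ph (AS A) = SR j" "isap j" "AH A = 0" "AG A = 0" "\<not> pnd (AS A)" "\<not> dn (AS A)"
    "shape (AT A) (AR A) E" "track j (AT A) (AR A) E vals h"
    "jmv j (AS A) = N \<or> (jmv j (AS A) = L \<and> h = 0)"
  shows "\<exists>k B. rs w c A k B \<and> apres j A B E E vals h"
proof -
  let ?S = "AS A" let ?T = "AT A" let ?R = "AR A"
  let ?c1 = "fst (setv j (jval j ?S) (the (?T h)) (?R h))"
  let ?r1 = "snd (setv j (jval j ?S) (the (?T h)) (?R h))"
  let ?S1 = "?S\<lparr>dn := True, ph := SL j, pnd := False, dn := False\<rparr>"
  let ?A1 = "A\<lparr>AS := ?S1, AT := ?T(h := Some ?c1), AH := E - 1, AR := ?R(h := ?r1), AG := E - 1\<rparr>"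
  have nR: "jmv j ?S \<noteq> R" using assms(9) by auto
  have r1: "rs w c A (Suc E) ?A1" by (rule ap_rpass_nR) (use assms nR in auto)
  have tr: "\<forall>i<E. vw j (the (?T i)) (?R i) = vals i \<and> getm j (the (?T i)) = (i = h)" "h < E" "\<forall>i\<ge>E. vals i = 0"
    using assms(8) by (auto simp: track_def)
  have E0: "0 < E" using shape_pos[OF assms(7)] .
  have orgs: "orgo ((?T(h := Some ?c1)) i) = (i = 0)" for i
  proof (cases "i < E")
    case True
    obtain cl where cl: "?T i = Some cl" using shape_Some[OF assms(7) True] by blast
    obtain ch where ch: "?T h = Some ch" using shape_Some[OF assms(7) tr(2)] by blast
    show ?thesis using cl ch shape_org[OF assms(7) True] shape_org[OF assms(7) tr(2)] setv_views(4)
      by (auto simp: orgo_def)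
  next
    case False then show ?thesis using shape_None[OF assms(7)] tr(2) by (auto simp: orgo_def)
  qed
  have li: "lstep j ?S1 ((?T(h := Some ?c1)) i) ((?R(h := ?r1)) i) = (?S1, (?T(h := Some ?c1)) i, (?R(h := ?r1)) i)" for i
  proof (cases "jmv j ?S = L")
    case False then show ?thesis using lstep_id[of j ?S1] by simp
  next
    case jL: True
    then have h0: "h = 0" using assms(9) by auto
    show ?thesis
    proof (cases "i < E")
      case iE: True
      obtain cl where cl: "?T i = Some cl" using shape_Some[OF assms(7) iE] by blast
      show ?thesis
      proof (cases "i = 0")
        case True then show ?thesis using h0 cl shape_org[OF assms(7) iE] setv_views(4) jL
          by (simp add: lstep_apL[OF assms(2)] True)
      next
        case False then show ?thesis using h0 cl tr(1) iE lstep_apL[OF assms(2)] jL by auto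
      qed
    next
      case False then show ?thesis using shape_None[OF assms(7)] tr(2) by (simp add: lstep_def)
    qed
  qed
  have r2: "rs w c ?A1 (Suc (E - 1)) (?A1\<lparr>AS := finish j ?S1,
            AT := (\<lambda>i. if i \<le> E - 1 then (?T(h := Some ?c1)) i else AT ?A1 i),
            AH := 0, AR := (\<lambda>i. if i \<le> E - 1 then (?R(h := ?r1)) i else AR ?A1 i), AG := 0\<rparr>)"
  proof (rule lpass[where \<tau>="\<lambda>_. ?S1"])
    show "lstep j ((\<lambda>_. ?S1) 0) (AT ?A1 0) (AR ?A1 0) = (?S1, (?T(h := Some ?c1)) 0, (?R(h := ?r1)) 0)"
      using li[of 0] by simp
    show "orgo (AT ?A1 0)" using orgs[of 0] by simp
    show "lstep j ((\<lambda>_. ?S1) i) (AT ?A1 i) (AR ?A1 i) = ((\<lambda>_. ?S1) (i - 1), (?T(h := Some ?c1)) i, (?R(h := ?r1)) i)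
       \<and> \<not> orgo (AT ?A1 i)" if "0 < i" "i \<le> E - 1" for i
      using li[of i] orgs[of i] that by simp
  qed simp_all
  let ?B = "?A1\<lparr>AS := finish j ?S1,
            AT := (\<lambda>i. if i \<le> E - 1 then (?T(h := Some ?c1)) i else AT ?A1 i),
            AH := 0, AR := (\<lambda>i. if i \<le> E - 1 then (?R(h := ?r1)) i else AR ?A1 i), AG := 0\<rparr>"
  have rB: "rs w c A (Suc E + Suc (E - 1)) ?B" by (rule rs_trans[OF r1 r2])
  have TB: "AT ?B = ?T(h := Some ?c1)" "AR ?B = ?R(h := ?r1)" by (auto simp: fun_eq_iff)
  have mvh: "mv (jmv j ?S) h = h" using assms(9) by auto
  have "apres j A ?B E E vals h"
  proof (rule apres_intro[OF _ _ _ assms(2,7,8)])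
    show "\<exists>P D. AS ?B = finish j (?S\<lparr>ph := SL j, pnd := P, dn := D\<rparr>)" by auto
    show "E = max E (Suc (mv (jmv j ?S) h))" using mvh tr(2) by simp
    show "AT ?B i \<noteq> None \<and> org (the (AT ?B i)) = (i = 0)" if "i < E" for i
    proof -
      have "(?T(h := Some ?c1)) i \<noteq> None" using shape_dom[OF assms(7), of i] that by auto
      then obtain x where x: "(?T(h := Some ?c1)) i = Some x" by blast
      then show ?thesis using TB orgs[of i] by (simp add: orgo_def)
    qed
    show "AT ?B i = None \<and> AR ?B i = 0" if "E \<le> i" for i
      using TB that tr(2) shape_None[OF assms(7) that] shape_R[OF assms(7) that] by auto
    show "keep j' (the (?T i)) (the (AT ?B i)) (?R i) (AR ?B i)" if "i < E" "isap j'" "j' \<noteq> j" for i j'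
      using TB setv_views(2) setv_views(3)[OF assms(2) that(3)] by (auto simp: keep_def)
    show "bt (the (AT ?B i)) = bt (the (?T i))" if "i < E" for i using TB setv_views(5) by auto
    show "the (AT ?B i) = setm j True cdef \<and> AR ?B i = 0" if "E \<le> i" "i < E" for i using that by simp
    show "vw j (the (AT ?B i)) (AR ?B i) = (vals(h := jval j ?S)) i \<and> getm j (the (AT ?B i)) = (i = mv (jmv j ?S) h)"
      if "i < E" for i
      using TB tr(1) that setv_views(1)[OF assms(2)] setv_views(2) mvh by auto
  qed (simp_all)
  then show ?thesis using rB by blast
qed

end

context cc begin

lemma apply_R:
  assumes "ph (AS A) = SR j" "isap j" "AH A = 0" "AG A = 0" "\<not> pnd (AS A)" "\<not> dn (AS A)"
    "shape (AT A) (AR A) E" "track j (AT A) (AR A) E vals h" "jmv j (AS A) = R"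
  shows "\<exists>k B. rs w c A k B \<and> apres j A B E (max E (Suc (Suc h))) vals h"
proof -
  let ?S = "AS A" let ?T = "AT A" let ?R = "AR A"
  let ?c1 = "fst (setv j (jval j ?S) (the (?T h)) (?R h))"
  let ?r1 = "snd (setv j (jval j ?S) (the (?T h)) (?R h))"
  have tr: "\<forall>i<E. vw j (the (?T i)) (?R i) = vals i \<and> getm j (the (?T i)) = (i = h)" "h < E" "\<forall>i\<ge>E. vals i = 0"
    using assms(8) by (auto simp: track_def)
  define m where "m = max E (Suc (Suc h))"
  have m: "m = (if Suc h = E then Suc E else E)" using tr(2) by (auto simp: m_def)
  define \<sigma> where "\<sigma> i = (if i \<le> h then ?S else if i = Suc h then ?S\<lparr>pnd := True, dn := True\<rparr> else ?S\<lparr>pnd := False, dn := True\<rparr>)" for i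
  define nc where "nc = setm j True (if Suc h < E then the (?T (Suc h)) else cdef)"
  define T' where "T' i = (if i = h then Some (setm j False ?c1) else if i = Suc h then Some nc else ?T i)" for i
  define R' where "R' i = (if i = h then ?r1 else ?R i)" for i
  have ne: "j \<noteq> INC" using assms(2) by (auto simp: isap_def)
  have st: "rstep j (\<sigma> i) (?T i) (?R i) = (\<sigma> (Suc i), T' i, R' i, True)" if i: "i < m" for i
  proof (cases "i < E")
    case True
    obtain cl where cl: "?T i = Some cl" using shape_Some[OF assms(7) True] by blast
    have g: "getm j cl = (i = h)" using tr True cl by auto
    show ?thesis
    proof (cases "i = Suc h")
      case True then show ?thesis using cl g assms(5,6,9) \<open>i < E\<close>
        by (simp add: rstep_ap[OF assms(2)] \<sigma>_def T'_def R'_def nc_def)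
    next
      case False then show ?thesis using cl g assms(5,6,9)
        by (auto simp: rstep_ap[OF assms(2)] \<sigma>_def T'_def R'_def)
    qed
  next
    case False
    then have "i = E" "Suc h = E" using i m by (auto split: if_splits)
    then show ?thesis using shape_None[OF assms(7), of E] shape_R[OF assms(7), of E]
      by (simp add: rstep_def \<sigma>_def T'_def R'_def nc_def)
  qed
  have mge: "Suc h < m" "E \<le> m" using m tr(2) by auto
  have stE: "rstep j (\<sigma> m) (?T m) (?R m) = (\<sigma> m, T' m, R' m, False)"
  proof -
    have "\<not> pnd (\<sigma> m)" using mge assms(5) by (simp add: \<sigma>_def)
    then show ?thesis using shape_None[OF assms(7) mge(2)] rstep_None[of "\<sigma> m" j] ne mge
      by (simp add: T'_def R'_def)
  qed
  have orgT: "org (the (?T i)) = (i = 0)" if "i < E" for i using shape_org[OF assms(7) that] .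
  have orgs: "orgo (T' i) = (i = 0)" if "i < m" for i
  proof -
    have "orgo (?T i) = (i = 0)" using assms(7) by (simp add: shape_def)
    moreover have "org (setm j False ?c1) = (h = 0)" using setv_views(4) setm_views(4) orgT[OF tr(2)] by simp
    moreover have "\<not> org nc" using setm_views(4) orgT[of "Suc h"] by (simp add: nc_def cdef_def)
    ultimately show ?thesis by (auto simp: T'_def orgo_def)
  qed
  have r: "rs w c A (Suc m + m) (A\<lparr>AS := finish j ((\<sigma> m)\<lparr>ph := SL j, pnd := False, dn := False\<rparr>),
            AT := (\<lambda>i. if i \<le> m then T' i else ?T i),
            AH := 0, AR := (\<lambda>i. if i \<le> m then R' i else ?R i), AG := 0\<rparr>)"
  proof (rule sweep_idL[where \<sigma>=\<sigma>])
    show "orgo (T' 0)" using orgs[of 0] mge by simp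
    show "\<not> orgo (T' i)" if "0 < i" "i < m" for i using orgs[of i] that by simp
    show "\<not> (isap j \<and> jmv j (\<sigma> m) = L)" using assms(9) by (simp add: \<sigma>_def)
  qed (use assms st stE mge in \<open>auto simp: \<sigma>_def\<close>)
  let ?B = "A\<lparr>AS := finish j ((\<sigma> m)\<lparr>ph := SL j, pnd := False, dn := False\<rparr>),
            AT := (\<lambda>i. if i \<le> m then T' i else ?T i),
            AH := 0, AR := (\<lambda>i. if i \<le> m then R' i else ?R i), AG := 0\<rparr>"
  have TB: "AT ?B i = (if i < m then T' i else None)" for i
    using shape_None[OF assms(7), of i] mge stE by (auto simp: T'_def)
  have RB: "AR ?B i = (if i < m then R' i else 0)" for i
    using shape_R[OF assms(7), of i] mge by (auto simp: R'_def)
  have mvh: "mv (jmv j ?S) h = Suc h" using assms(9) by simp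
  have "apres j A ?B E m vals h"
  proof (rule apres_intro[OF _ _ _ assms(2,7,8)])
    show "\<exists>P D. AS ?B = finish j (?S\<lparr>ph := SL j, pnd := P, dn := D\<rparr>)" by (auto simp: \<sigma>_def)
    show "m = max E (Suc (mv (jmv j ?S) h))" using mvh m_def by simp
    show "AT ?B i \<noteq> None \<and> org (the (AT ?B i)) = (i = 0)" if "i < m" for i
    proof -
      have "T' i \<noteq> None" using that shape_dom[OF assms(7), of i] m by (auto simp: T'_def split: if_splits)
      then show ?thesis using TB orgs[OF that] that by (auto simp: orgo_def)
    qed
    show "AT ?B i = None \<and> AR ?B i = 0" if "m \<le> i" for i using TB RB that by auto
    show "keep j' (the (?T i)) (the (AT ?B i)) (?R i) (AR ?B i)" if "i < E" "isap j'" "j' \<noteq> j" for i j'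
      using TB RB mge that setv_views(2) setv_views(3)[OF assms(2) that(3)] setm_views(2) setm_views(3)[OF assms(2) that(3)]
      by (auto simp: keep_def T'_def R'_def nc_def)
    show "bt (the (AT ?B i)) = bt (the (?T i))" if "i < E" for i
      using TB mge that setv_views(5) setm_views(5) by (auto simp: T'_def nc_def)
    show "the (AT ?B i) = setm j True cdef \<and> AR ?B i = 0" if "E \<le> i" "i < m" for i
    proof -
      have "i = E" "Suc h = E" using that m by (auto split: if_splits)
      then show ?thesis using TB RB shape_R[OF assms(7), of E] that by (simp add: T'_def R'_def nc_def)
    qed
    show "vw j (the (AT ?B i)) (AR ?B i) = (vals(h := jval j ?S)) i \<and> getm j (the (AT ?B i)) = (i = mv (jmv j ?S) h)"
      if "i < m" for i
    proof (cases "i < E")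
      case True then show ?thesis
        using TB RB tr that setv_views(1)[OF assms(2)] setv_views(2) setm_views(1)[OF assms(2)] setm_views(2) mvh
        by (auto simp: T'_def R'_def nc_def)
    next
      case False
      then have "i = E" "Suc h = E" using that m by (auto split: if_splits)
      then show ?thesis using TB RB tr shape_R[OF assms(7), of E] setm_views(1)[OF assms(2)] setm_views(2) cdef_views mvh that
        by (simp add: T'_def R'_def nc_def)
    qed
  qed (simp_all)
  then show ?thesis using r m_def by blast
qed

end

context cc begin

lemma apply_L:
  assumes "ph (AS A) = SR j" "isap j" "AH A = 0" "AG A = 0" "\<not> pnd (AS A)" "\<not> dn (AS A)"
    "shape (AT A) (AR A) E" "track j (AT A) (AR A) E vals h" "jmv j (AS A) = L" "0 < h"
  shows "\<exists>k B. rs w c A k B \<and> apres j A B E E vals h"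
proof -
  let ?S = "AS A" let ?T = "AT A" let ?R = "AR A"
  let ?c1 = "fst (setv j (jval j ?S) (the (?T h)) (?R h))"
  let ?r1 = "snd (setv j (jval j ?S) (the (?T h)) (?R h))"
  let ?S1 = "?S\<lparr>dn := True, ph := SL j, pnd := False, dn := False\<rparr>"
  let ?T1 = "?T(h := Some ?c1)" let ?R1 = "?R(h := ?r1)"
  let ?A1 = "A\<lparr>AS := ?S1, AT := ?T1, AH := E - 1, AR := ?R1, AG := E - 1\<rparr>"
  have r1: "rs w c A (Suc E) ?A1" by (rule ap_rpass_nR) (use assms in auto)
  have tr: "\<forall>i<E. vw j (the (?T i)) (?R i) = vals i \<and> getm j (the (?T i)) = (i = h)" "h < E" "\<forall>i\<ge>E. vals i = 0"
    using assms(8) by (auto simp: track_def)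
  have orgT: "org (the (?T i)) = (i = 0)" if "i < E" for i using shape_org[OF assms(7) that] .
  define \<tau> where "\<tau> i = (if h \<le> i then ?S1 else if i = h - 1 then ?S1\<lparr>pnd := True, dn := True\<rparr> else ?S1\<lparr>pnd := False, dn := True\<rparr>)" for i
  define T'' where "T'' i = (if i = h then Some (setm j False ?c1) else if i = h - 1 then Some (setm j True (the (?T (h - 1)))) else ?T1 i)" for i
  have jL: "jmv j ?S1 = L" "\<not> pnd ?S1" "\<not> dn ?S1" using assms(9) by simp_all
  have lst: "lstep j (\<tau> i) (?T1 i) (?R1 i) = (\<tau> (i - 1), T'' i, ?R1 i)" if i: "i < E" and i0: "0 < i" for i
  proof -
    obtain cl where cl: "?T i = Some cl" using shape_Some[OF assms(7) i] by blast
    have g: "getm j cl = (i = h)" using tr i cl by auto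
    have o: "org cl = (i = 0)" using orgT[OF i] cl by simp
    consider "h < i" | "i = h" | "i = h - 1" | "i < h - 1" by linarith
    then show ?thesis
    proof cases
      case 1 then show ?thesis using cl g jL by (simp add: lstep_apL[OF assms(2)] \<tau>_def T''_def)
    next
      case 2 then show ?thesis using cl g o jL assms(10) setv_views(2,4)
        by (simp add: lstep_apL[OF assms(2)] \<tau>_def T''_def)
    next
      case 3
      then have "\<not> h \<le> i" "i \<noteq> h" "\<not> h \<le> i - 1" "i - 1 \<noteq> h - 1" using i0 assms(10) by auto
      then show ?thesis using cl g jL 3 by (simp add: lstep_apL[OF assms(2)] \<tau>_def T''_def)
    next
      case 4
      then have "\<not> h \<le> i" "i \<noteq> h" "i \<noteq> h - 1" "\<not> h \<le> i - 1" "i - 1 \<noteq> h - 1" using i0 assms(10) by auto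
      then show ?thesis using cl g jL 4 by (simp add: lstep_apL[OF assms(2)] \<tau>_def T''_def)
    qed
  qed
  have orgs: "orgo (?T1 i) = (i = 0)" if "i < E" for i
    using assms(7) setv_views(4) orgT[OF tr(2)] assms(10) by (auto simp: shape_def orgo_def)
  have E1: "0 < E - 1 \<or> E = 1" using tr(2) by linarith
  let ?Sf = "?S1\<lparr>pnd := False, dn := True\<rparr>"
  have t0: "\<tau> 0 = (if h = 1 then ?S1\<lparr>pnd := True, dn := True\<rparr> else ?Sf)" using assms(10) by (auto simp: \<tau>_def)
  have lst0: "lstep j (\<tau> 0) (?T1 0) (?R1 0) = (?Sf, T'' 0, ?R1 0)"
  proof -
    obtain cl where cl: "?T 0 = Some cl" using shape_Some[OF assms(7)] tr(2) by fastforce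
    have g: "getm j cl = (0 = h)" using tr cl by auto
    show ?thesis
    proof (cases "h = 1")
      case True then show ?thesis using cl g jL t0 by (simp add: lstep_apL[OF assms(2)] T''_def)
    next
      case False
      then have "0 \<noteq> h - 1" "0 \<noteq> h" using assms(10) by auto
      then show ?thesis using cl g jL t0 False by (simp add: lstep_apL[OF assms(2)] T''_def)
    qed
  qed
  have r2: "rs w c ?A1 (Suc (E - 1)) (?A1\<lparr>AS := finish j ?Sf,
            AT := (\<lambda>i. if i \<le> E - 1 then T'' i else AT ?A1 i),
            AH := 0, AR := (\<lambda>i. if i \<le> E - 1 then ?R1 i else AR ?A1 i), AG := 0\<rparr>)"
  proof (rule lpass[where \<tau>=\<tau>])
    show "\<tau> (E - 1) = AS ?A1" using tr(2) by (simp add: \<tau>_def)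
    show "lstep j (\<tau> 0) (AT ?A1 0) (AR ?A1 0) = (?Sf, T'' 0, ?R1 0)" using lst0 by simp
    show "orgo (AT ?A1 0)" using orgs[of 0] tr(2) by simp
    show "lstep j (\<tau> i) (AT ?A1 i) (AR ?A1 i) = (\<tau> (i - 1), T'' i, ?R1 i) \<and> \<not> orgo (AT ?A1 i)"
      if "0 < i" "i \<le> E - 1" for i
      using lst[of i] orgs[of i] that by simp
  qed simp_all
  let ?B = "?A1\<lparr>AS := finish j ?Sf,
            AT := (\<lambda>i. if i \<le> E - 1 then T'' i else AT ?A1 i),
            AH := 0, AR := (\<lambda>i. if i \<le> E - 1 then ?R1 i else AR ?A1 i), AG := 0\<rparr>"
  have rB: "rs w c A (Suc E + Suc (E - 1)) ?B" by (rule rs_trans[OF r1 r2])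
  have TB: "AT ?B i = (if i < E then T'' i else None)" for i
    using shape_None[OF assms(7), of i] tr(2) by (auto simp: T''_def)
  have RB: "AR ?B i = (if i < E then ?R1 i else 0)" for i
    using shape_R[OF assms(7), of i] tr(2) by auto
  have mvh: "mv (jmv j ?S) h = h - 1" using assms(9) by simp
  have "apres j A ?B E E vals h"
  proof (rule apres_intro[OF _ _ _ assms(2,7,8)])
    show "\<exists>P D. AS ?B = finish j (?S\<lparr>ph := SL j, pnd := P, dn := D\<rparr>)" by auto
    show "E = max E (Suc (mv (jmv j ?S) h))" using mvh tr(2) by simp
    show "AT ?B i \<noteq> None \<and> org (the (AT ?B i)) = (i = 0)" if iE: "i < E" for i
    proof -
      obtain cl where cl: "?T i = Some cl" using shape_Some[OF assms(7) iE] by blast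
      show ?thesis using TB iE cl orgT[OF that] orgT[OF tr(2)] setv_views(4) setm_views(4) assms(10)
        by (auto simp: T''_def)
    qed
    show "AT ?B i = None \<and> AR ?B i = 0" if "E \<le> i" for i using TB RB that by auto
    show "keep j' (the (?T i)) (the (AT ?B i)) (?R i) (AR ?B i)" if "i < E" "isap j'" "j' \<noteq> j" for i j'
      using TB RB that setv_views(2) setv_views(3)[OF assms(2) that(3)] setm_views(2) setm_views(3)[OF assms(2) that(3)]
      by (auto simp: keep_def T''_def)
    show "bt (the (AT ?B i)) = bt (the (?T i))" if "i < E" for i
      using TB that setv_views(5) setm_views(5) by (auto simp: T''_def)
    show "the (AT ?B i) = setm j True cdef \<and> AR ?B i = 0" if "E \<le> i" "i < E" for i using that by simp
    show "vw j (the (AT ?B i)) (AR ?B i) = (vals(h := jval j ?S)) i \<and> getm j (the (AT ?B i)) = (i = mv (jmv j ?S) h)"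
      if "i < E" for i
      using TB RB tr that setv_views(1)[OF assms(2)] setv_views(2) setm_views(1)[OF assms(2)] setm_views(2) mvh assms(10)
      by (auto simp: T''_def)
  qed (simp_all)
  then show ?thesis using rB by blast
qed

lemma apply_sweep:
  assumes "ph (AS A) = SR j" "isap j" "AH A = 0" "AG A = 0" "\<not> pnd (AS A)" "\<not> dn (AS A)"
    "shape (AT A) (AR A) E" "track j (AT A) (AR A) E vals h"
  shows "\<exists>k B E'. rs w c A k B \<and> apres j A B E E' vals h"
proof (cases "jmv j (AS A)")
  case L then show ?thesis
  proof (cases "h = 0")
    case True then show ?thesis using apply_N[OF assms] L by blast
  next
    case False then show ?thesis using apply_L[OF assms L] by blast
  qed
next
  case N then show ?thesis using apply_N[OF assms] by blast
next
  case R then show ?thesis using apply_R[OF assms R] by blast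
qed

end

context cc begin

lemma ctrl_step:
  assumes "\<not> ahalted (AS A)"
    "adelta (AS A) (inp w (idxval (AR A))) (AT A (AH A)) (AR A (AG A)) (chsym c (AC A)) = (S', AT A (AH A), AR A (AG A), N, N, mc)"
  shows "astep w c A = A\<lparr>AS := S', AC := mv mc (AC A)\<rparr>"
  using assms by (simp add: astep_def)

lemma ahalted_phase: "ph S \<notin> {ACC, REJ} \<Longrightarrow> \<not> ahalted S"
  using ahalted_ph by blast

lemma startR_simps[simp]: "ph (startR j S) = SR j" "pnd (startR j S) = False" "dn (startR j S) = False"
  "cry (startR j S) = True" "eqf (startR j S) = True" "q1 (startR j S) = q1 S" "q2 (startR j S) = q2 S"
  "s1 (startR j S) = s1 S" "i1 (startR j S) = i1 S" "s2 (startR j S) = s2 S" "i2 (startR j S) = i2 S"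
  "inc (startR j S) = inc S" "wv1 (startR j S) = wv1 S" "xv1 (startR j S) = xv1 S" "wm1 (startR j S) = wm1 S"
  "xm1 (startR j S) = xm1 S" "wv2 (startR j S) = wv2 S" "xv2 (startR j S) = xv2 S" "wm2 (startR j S) = wm2 S"
  "xm2 (startR j S) = xm2 S" "av (startR j S) = av S"
  by (simp_all add: startR_def)

end

definition rel1 :: "acfg \<Rightarrow> cfg \<Rightarrow> nat \<Rightarrow> bool" where
  "rel1 A C E \<longleftrightarrow> track AW1 (AT A) (AR A) E (wt C) (wh C) \<and> track AX1 (AT A) (AR A) E (it C) (ih C)"
definition rel2 :: "acfg \<Rightarrow> cfg \<Rightarrow> nat \<Rightarrow> bool" where
  "rel2 A C E \<longleftrightarrow> track AW2 (AT A) (AR A) E (wt C) (wh C) \<and> track AX2 (AT A) (AR A) E (it C) (ih C)"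

lemma isap_simps[simp]: "isap AW1" "isap AX1" "isap AW2" "isap AX2" by (simp_all add: isap_def)
lemma gj_simps[simp]: "gj GW1" "gj GX1" "gj GW2" "gj GX2" by (simp_all add: gj_def)

lemma track_AX2_R: "track AX2 T Rx E vals h \<Longrightarrow> shape T Rx E \<Longrightarrow> Rx = vals"
  by (auto simp: track_def shape_def fun_eq_iff)

lemma track_vals0: "track j T Rx E vals h \<Longrightarrow> E \<le> i \<Longrightarrow> vals i = 0"
  by (auto simp: track_def)
lemma track_h: "track j T Rx E vals h \<Longrightarrow> h < E"
  by (auto simp: track_def)

lemma finite_idx: fixes E :: nat assumes "\<And>i. E \<le> i \<Longrightarrow> t i = (0::nat)" shows "finite {i. t i = 2}"
proof (rule finite_subset[of _ "{..<E}"])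
  show "{i. t i = 2} \<subseteq> {..<E}"
  proof
    fix i assume "i \<in> {i. t i = 2}"
    then have t2: "t i = 2" by simp
    show "i \<in> {..<E}"
    proof (rule ccontr)
      assume "i \<notin> {..<E}" then have "E \<le> i" by simp
      then show False using assms[of i] t2 by simp
    qed
  qed
qed simp

lemma cmp_iff:
  assumes "track AX1 T Rx E vals h" "ctr T E n"
  shows "(\<forall>l<E. bt (the (T l)) = (x1 (the (T l)) = 2)) \<longleftrightarrow> n = idxval vals"
proof -
  have fin: "finite {i. vals i = 2}" using finite_idx[of E vals] track_vals0[OF assms(1)] by blast
  have bv: "bit (idxval vals) l \<longleftrightarrow> vals l = 2" for l using bit_idxval[OF fin] .
  have x: "\<forall>l<E. x1 (the (T l)) = vals l" using assms(1) by (auto simp: track_def)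
  have b: "\<forall>l<E. bt (the (T l)) = bit n l" "n < 2 ^ E" using assms(2) by (auto simp: ctr_def)
  have pE: "idxval vals < 2 ^ E"
  proof -
    have "idxval vals \<le> (\<Sum>i<E. (2::nat) ^ i)" unfolding idxval_def
    proof (rule sum_mono2)
      show "{i. vals i = 2} \<subseteq> {..<E}"
      proof
        fix i assume "i \<in> {i. vals i = 2}"
        then have t2: "vals i = 2" by simp
        show "i \<in> {..<E}"
        proof (rule ccontr)
          assume "i \<notin> {..<E}" then have "E \<le> i" by simp
          then show False using track_vals0[OF assms(1), of i] t2 by simp
        qed
      qed
    qed auto
    also have "\<dots> < 2 ^ E" by (induction E) auto
    finally show ?thesis .
  qed
  show ?thesis
  proof
    assume "\<forall>l<E. bt (the (T l)) = (x1 (the (T l)) = 2)"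
    then have "\<forall>l<E. bit n l \<longleftrightarrow> bit (idxval vals) l" using x b bv by auto
    then show "n = idxval vals" using eq_by_bits[OF b(2) pE] by blast
  next
    assume "n = idxval vals"
    then show "\<forall>l<E. bt (the (T l)) = (x1 (the (T l)) = 2)" using x b bv by auto
  qed
qed


definition mheadR :: "nat \<Rightarrow> acfg \<Rightarrow> cfg \<Rightarrow> cfg \<Rightarrow> nat \<Rightarrow> bool" where
 "mheadR Bnd A C' C n \<longleftrightarrow> ph (AS A) = MHEAD \<and> q1 (AS A) = st C' \<and> s1 (AS A) = wt C' (wh C') \<and> i1 (AS A) = it C' (ih C')
   \<and> q2 (AS A) = st C \<and> AH A = 0 \<and> AG A = 0
   \<and> (\<exists>E. E \<le> Bnd \<and> shape (AT A) (AR A) E \<and> rel1 A C' E \<and> rel2 A C E \<and> ctr (AT A) E n)"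

definition commitR :: "nat \<Rightarrow> nat list \<Rightarrow> acfg \<Rightarrow> cfg \<Rightarrow> bool" where
 "commitR Bnd wp A C' \<longleftrightarrow> ph (AS A) = COMMIT \<and> q1 (AS A) = st C' \<and> s1 (AS A) = wt C' (wh C') \<and> i1 (AS A) = it C' (ih C')
   \<and> avd (av (AS A)) = inp wp (idxval (it C')) \<and> AH A = 0 \<and> AG A = 0
   \<and> (\<exists>E. E \<le> Bnd \<and> shape (AT A) (AR A) E \<and> rel1 A C' E)"

locale sim = cc +
  fixes w wp :: "nat list" and c :: "nat \<Rightarrow> bool" and Bnd th :: nat
  assumes detr: "\<And>t. ch (run Mr w (\<lambda>_. False) t) = 0"
  and hb2: "\<And>t. wh (run Mr w (\<lambda>_. False) t) < Bnd" "\<And>t. ih (run Mr w (\<lambda>_. False) t) < Bnd"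
  and hb1: "\<And>t. wh (run Mp wp c t) < Bnd" "\<And>t. ih (run Mp wp c t) < Bnd"
  and hth: "halted Mr (run Mr w (\<lambda>_. False) th)" and horc: "orc (run Mr w (\<lambda>_. False) th) = wp"
  and hb3: "length wp < 2 ^ Bnd"
begin

abbreviation "Cr t \<equiv> run Mr w (\<lambda>_. False) t"
abbreviation "Cp t \<equiv> run Mp wp c t"

lemma Cr_halted_eq: "halted Mr (Cr t) \<Longrightarrow> Cr t = Cr th"
  by (metis hth nat_le_linear run_halted_stay)

lemma orc_Cr_prefix: "t \<le> th \<Longrightarrow> \<exists>zs. wp = orc (Cr t) @ zs"
  using run_orc_prefix[of t th Mr w "\<lambda>_. False"] horc by auto

lemma Cr_step:
  assumes "\<not> halted Mr (Cr t)"
    "delta Mr (st (Cr t)) (inp w (idxval (it (Cr t)))) (wt (Cr t) (wh (Cr t))) (it (Cr t) (ih (Cr t))) None = (q', s', mw, i', mi, mc, ow)"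
  shows "Cr (Suc t) = (Cr t)\<lparr>st := q', wt := (wt (Cr t))(wh (Cr t) := s'), wh := mv mw (wh (Cr t)),
            it := (it (Cr t))(ih (Cr t) := i'), ih := mv mi (ih (Cr t)), ch := mv mc (ch (Cr t)),
            orc := orc (Cr t) @ (case ow of None \<Rightarrow> [] | Some b \<Rightarrow> [b])\<rparr>"
proof -
  have "chsym (\<lambda>_. False) (ch (Cr t)) = None" using detr[of t] by (simp add: chsym_def)
  then show ?thesis using step_unfold[OF assms(1)] assms(2) by (simp add: run_Suc)
qed

lemma mloop:
  assumes "mheadR Bnd A C' (Cr t) n" "n = length (orc (Cr t))" "n \<le> idxval (it C')"
  shows "\<exists>k B. rs w c A k B \<and> commitR Bnd wp B C'"
  using assms
proof (induction "th - t" arbitrary: t A n rule: less_induct)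
  case less
  let ?p = "idxval (it C')"
  let ?S = "AS A"
  obtain E where E: "E \<le> Bnd" "shape (AT A) (AR A) E" "rel1 A C' E" "rel2 A (Cr t) E" "ctr (AT A) E n"
    using less.prems(1) by (auto simp: mheadR_def)
  have mh: "ph ?S = MHEAD" "q1 ?S = st C'" "s1 ?S = wt C' (wh C')" "i1 ?S = it C' (ih C')" "q2 ?S = st (Cr t)"
    "AH A = 0" "AG A = 0" using less.prems(1) by (auto simp: mheadR_def)
  have nh: "\<not> ahalted ?S" using mh(1) ahalted_phase by simp
  show ?case
  proof (cases "halted Mr (Cr t)")
    case True
    then have "Cr t = Cr th" by (rule Cr_halted_eq)
    then have "orc (Cr t) = wp" using horc by simp
    then have inpN: "inp wp ?p = None" using less.prems(2,3) by (simp add: inp_def)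
    let ?B = "A\<lparr>AS := ?S\<lparr>ph := COMMIT, av := 0\<rparr>, AC := mv N (AC A)\<rparr>"
    have aB: "astep w c A = ?B"
      by (rule ctrl_step[OF nh]) (use True mh in \<open>simp add: adelta_def halted_def\<close>)
    have "rs w c A 1 ?B" using rs_one[OF nh aB] ahalted_phase by simp
    moreover have "commitR Bnd wp ?B C'" using mh E inpN by (auto simp: commitR_def avd_def rel1_def)
    ultimately show ?thesis by blast
  next
    case False
    have tth: "t < th" using False hth run_halted_stay[of Mr w "\<lambda>_. False" th t] by (cases "t < th") auto
    let ?A1 = "A\<lparr>AS := startR GW2 ?S, AC := mv N (AC A)\<rparr>"
    have a1: "astep w c A = ?A1"
      by (rule ctrl_step[OF nh]) (use False mh in \<open>simp add: adelta_def halted_def\<close>)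
    have r1: "rs w c A 1 ?A1" using rs_one[OF nh a1] ahalted_phase by simp
    have trW2: "track AW2 (AT A) (AR A) E (wt (Cr t)) (wh (Cr t))" and trX2: "track AX2 (AT A) (AR A) E (it (Cr t)) (ih (Cr t))"
      using E(4) by (auto simp: rel2_def)
    let ?A2 = "?A1\<lparr>AS := finish GW2 (gupd GW2 ((AS ?A1)\<lparr>ph := SL GW2, pnd := False, dn := False\<rparr>) (wt (Cr t) (wh (Cr t))))\<rparr>"
    have r2: "rs w c ?A1 (Suc E + E) ?A2"
      by (rule gather_sweep) (use mh E trW2 in auto)
    let ?A3 = "?A2\<lparr>AS := finish GX2 (gupd GX2 ((AS ?A2)\<lparr>ph := SL GX2, pnd := False, dn := False\<rparr>) (it (Cr t) (ih (Cr t))))\<rparr>"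
    have r3: "rs w c ?A2 (Suc E + E) ?A3"
      by (rule gather_sweep) (use mh E trX2 in \<open>auto simp: finish_def\<close>)
    have S3: "ph (AS ?A3) = SR CMP" "\<not> pnd (AS ?A3)" "eqf (AS ?A3)" by (simp_all add: finish_def)
    obtain k4 A4 where r4: "rs w c ?A3 k4 A4"
      and A4: "AS A4 = finish CMP ((AS ?A3)\<lparr>eqf := (eqf (AS ?A3) \<and> (\<forall>l<E. bt (the (AT ?A3 l)) = (x1 (the (AT ?A3 l)) = 2))),
         ph := SL CMP, pnd := False, dn := False\<rparr>)" "AH A4 = 0" "AG A4 = 0" "AR A4 = AR ?A3" "AT A4 = AT ?A3"
      using cmp_sweep[of ?A3 E w c] S3 mh E by auto
    have eqv: "(\<forall>l<E. bt (the (AT A l)) = (x1 (the (AT A l)) = 2)) \<longleftrightarrow> n = ?p"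
      by (rule cmp_iff) (use E in \<open>auto simp: rel1_def\<close>)
    have S4: "ph (AS A4) = MSTEP" "eqf (AS A4) = (n = ?p)" "q2 (AS A4) = st (Cr t)"
      "s2 (AS A4) = wt (Cr t) (wh (Cr t))" "i2 (AS A4) = it (Cr t) (ih (Cr t))"
      "q1 (AS A4) = st C'" "s1 (AS A4) = wt C' (wh C')" "i1 (AS A4) = it C' (ih C')"
      using A4(1) eqv mh by (simp_all add: finish_def)
    have RA: "AR A = it (Cr t)" using track_AX2_R[OF trX2 E(2)] .
    have AR4: "AR A4 = it (Cr t)" using A4(4) RA by simp
    have AT4: "AT A4 = AT A" using A4(5) by simp
    obtain q' s' mw i' mi mc ow where d:
      "delta Mr (st (Cr t)) (inp w (idxval (it (Cr t)))) (wt (Cr t) (wh (Cr t))) (it (Cr t) (ih (Cr t))) None = (q', s', mw, i', mi, mc, ow)"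
      by (metis prod_cases7)
    have Cs: "Cr (Suc t) = (Cr t)\<lparr>st := q', wt := (wt (Cr t))(wh (Cr t) := s'), wh := mv mw (wh (Cr t)),
            it := (it (Cr t))(ih (Cr t) := i'), ih := mv mi (ih (Cr t)), ch := mv mc (ch (Cr t)),
            orc := orc (Cr t) @ (case ow of None \<Rightarrow> [] | Some b \<Rightarrow> [b])\<rparr>"
      by (rule Cr_step[OF False d])
    have nh4: "\<not> ahalted (AS A4)" using S4(1) ahalted_phase by simp
    have r14: "rs w c A (1 + (Suc E + E) + (Suc E + E) + k4) A4"
      using rs_trans[OF rs_trans[OF rs_trans[OF r1 r2] r3] r4] .
    show ?thesis
    proof (cases "\<exists>b. ow = Some b \<and> n = ?p")
      case True
      then obtain b where b: "ow = Some b" "n = ?p" by blast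
      let ?B = "A4\<lparr>AS := (AS A4)\<lparr>ph := COMMIT, av := Suc b\<rparr>, AC := mv N (AC A4)\<rparr>"
      have aB: "astep w c A4 = ?B"
        by (rule ctrl_step[OF nh4]) (use S4 d b AR4 in \<open>simp add: adelta_def\<close>)
      have r5: "rs w c A4 1 ?B" using rs_one[OF nh4 aB] ahalted_phase by simp
      have "Suc t \<le> th" using tth by simp
      then obtain zs where zs: "wp = orc (Cr (Suc t)) @ zs" using orc_Cr_prefix by blast
      then have "wp = orc (Cr t) @ [b] @ zs" using Cs b by simp
      then have "inp wp ?p = Some b" using b less.prems(2) by (simp add: inp_def nth_append)
      then have "commitR Bnd wp ?B C'" using S4 A4 E b mh
        by (auto simp: commitR_def avd_def rel1_def)
      then show ?thesis using rs_trans[OF r14 r5] by blast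
    next
      case nb: False
      let ?inc = "ow \<noteq> None"
      let ?S5 = "startR AW2 ((AS A4)\<lparr>q2 := q', wv2 := s', wm2 := mw, xv2 := i', xm2 := mi, inc := ?inc\<rparr>)"
      let ?A5 = "A4\<lparr>AS := ?S5, AC := mv N (AC A4)\<rparr>"
      have aB: "astep w c A4 = ?A5"
        by (rule ctrl_step[OF nh4]) (use S4 d nb AR4 in \<open>auto simp: adelta_def split: option.splits\<close>)
      have r5: "rs w c A4 1 ?A5" using rs_one[OF nh4 aB] ahalted_phase by simp
      have tr5: "track AW2 (AT ?A5) (AR ?A5) E (wt (Cr t)) (wh (Cr t))" using trW2 AT4 AR4 RA by simp
      obtain k6 A6 E6 where r6: "rs w c ?A5 k6 A6" and ap6: "apres AW2 ?A5 A6 E E6 (wt (Cr t)) (wh (Cr t))"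
        using apply_sweep[of ?A5 AW2 E "wt (Cr t)" "wh (Cr t)" w c] tr5 E(2) AT4 AR4 RA A4 by auto
      have Cs1: "wh (Cr (Suc t)) = mv mw (wh (Cr t))" "ih (Cr (Suc t)) = mv mi (ih (Cr t))"
        "wt (Cr (Suc t)) = (wt (Cr t))(wh (Cr t) := s')" "it (Cr (Suc t)) = (it (Cr t))(ih (Cr t) := i')"
        "st (Cr (Suc t)) = q'" using Cs by simp_all
      obtain P6 D6 where S6: "AS A6 = finish AW2 (?S5\<lparr>ph := SL AW2, pnd := P6, dn := D6\<rparr>)"
        using ap6 by (auto simp: apres_def)
      have E6: "E6 = max E (Suc (wh (Cr (Suc t))))" "shape (AT A6) (AR A6) E6" "AH A6 = 0" "AG A6 = 0"
        "track AW2 (AT A6) (AR A6) E6 (wt (Cr (Suc t))) (wh (Cr (Suc t)))"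
        using ap6 Cs1 by (auto simp: apres_def)
      have E6b: "E6 \<le> Bnd" using E6(1) E(1) hb2(1)[of "Suc t"] by simp
      have fr6: "track j' (AT A6) (AR A6) E6 vals' h'" if "isap j'" "j' \<noteq> AW2" "track j' (AT A) (AR A) E vals' h'" for j' vals' h'
        using ap6 that AT4 AR4 RA by (auto simp: apres_def)
      have ct6: "ctr (AT A6) E6 n" using ap6 E(5) AT4 by (auto simp: apres_def)
      have S6f: "ph (AS A6) = SR AX2" "\<not> pnd (AS A6)" "\<not> dn (AS A6)" "jval AX2 (AS A6) = i'" "jmv AX2 (AS A6) = mi"
        "inc (AS A6) = ?inc" "q1 (AS A6) = st C'" "s1 (AS A6) = wt C' (wh C')" "i1 (AS A6) = it C' (ih C')" "q2 (AS A6) = q'"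
        using S6 S4 by (simp_all add: finish_def)
      have tr6: "track AX2 (AT A6) (AR A6) E6 (it (Cr t)) (ih (Cr t))" using fr6[OF _ _ trX2] by simp
      obtain k7 A7 E7 where r7: "rs w c A6 k7 A7" and ap7: "apres AX2 A6 A7 E6 E7 (it (Cr t)) (ih (Cr t))"
        using apply_sweep[of A6 AX2 E6 "it (Cr t)" "ih (Cr t)" w c] tr6 E6 S6f by auto
      obtain P7 D7 where S7: "AS A7 = finish AX2 ((AS A6)\<lparr>ph := SL AX2, pnd := P7, dn := D7\<rparr>)"
        using ap7 by (auto simp: apres_def)
      have E7: "E7 = max E6 (Suc (ih (Cr (Suc t))))" "shape (AT A7) (AR A7) E7" "AH A7 = 0" "AG A7 = 0"
        "track AX2 (AT A7) (AR A7) E7 (it (Cr (Suc t))) (ih (Cr (Suc t)))"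
        using ap7 Cs1 S6f by (auto simp: apres_def)
      have E7b: "E7 \<le> Bnd" using E7(1) E6b hb2(2)[of "Suc t"] by simp
      have fr7: "track j' (AT A7) (AR A7) E7 vals' h'" if "isap j'" "j' \<noteq> AX2" "track j' (AT A6) (AR A6) E6 vals' h'" for j' vals' h'
        using ap7 that by (auto simp: apres_def)
      have ct7: "ctr (AT A7) E7 n" using ap7 ct6 by (auto simp: apres_def)
      have rel1_7: "rel1 A7 C' E7" using fr7 fr6 E(3) by (simp add: rel1_def)
      have rel2_7: "rel2 A7 (Cr (Suc t)) E7" using fr7[OF _ _ E6(5)] E7(5) by (simp add: rel2_def)
      have r17: "rs w c A (1 + (Suc E + E) + (Suc E + E) + k4 + 1 + k6 + k7) A7"
        using rs_trans[OF rs_trans[OF rs_trans[OF r14 r5] r6] r7] by simp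
      have n'le: "length (orc (Cr (Suc t))) \<le> ?p"
      proof (cases ow)
        case None then show ?thesis using Cs less.prems(2,3) by simp
      next
        case (Some b) then have "n \<noteq> ?p" using nb by auto
        then show ?thesis using Cs less.prems(2,3) Some by simp
      qed
      have lenwp: "length (orc (Cr (Suc t))) \<le> length wp"
        using orc_Cr_prefix[of "Suc t"] tth by auto
      have "\<exists>k8 A8. rs w c A k8 A8 \<and> mheadR Bnd A8 C' (Cr (Suc t)) (length (orc (Cr (Suc t))))"
      proof (cases ow)
        case None
        have S7f: "ph (AS A7) = MHEAD" "q1 (AS A7) = st C'" "s1 (AS A7) = wt C' (wh C')" "i1 (AS A7) = it C' (ih C')"
          "q2 (AS A7) = st (Cr (Suc t))" using S7 S6f None Cs1 by (simp_all add: finish_def)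
        have "length (orc (Cr (Suc t))) = n" using Cs None less.prems(2) by simp
        then have "mheadR Bnd A7 C' (Cr (Suc t)) (length (orc (Cr (Suc t))))"
          using S7f E7 E7b rel1_7 rel2_7 ct7 unfolding mheadR_def by blast
        then show ?thesis using r17 by blast
      next
        case (Some b)
        have S7f: "ph (AS A7) = SR INC" "\<not> pnd (AS A7)" "cry (AS A7)" "q1 (AS A7) = st C'" "s1 (AS A7) = wt C' (wh C')"
          "i1 (AS A7) = it C' (ih C')" "q2 (AS A7) = st (Cr (Suc t))" using S7 S6f Some Cs1 by (simp_all add: finish_def)
        have ln: "length (orc (Cr (Suc t))) = Suc n" using Cs Some less.prems(2) by simp
        have "Suc n < 2 ^ Bnd" using ln lenwp hb3 by linarith
        then obtain k8 A8 E8 where r8: "rs w c A7 k8 A8"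
          and A8: "\<exists>S'. AS A8 = finish INC S' \<and> q1 S' = q1 (AS A7) \<and> q2 S' = q2 (AS A7) \<and> s1 S' = s1 (AS A7) \<and> i1 S' = i1 (AS A7)"
            "AH A8 = 0" "AG A8 = 0" "E8 \<le> Bnd" "shape (AT A8) (AR A8) E8" "ctr (AT A8) E8 (Suc n)"
            "\<forall>j vals h. isap j \<longrightarrow> track j (AT A7) (AR A7) E7 vals h \<longrightarrow> track j (AT A8) (AR A8) E8 vals h"
          using inc_sweep[of A7 E7 n Bnd w c] S7f E7 E7b ct7 by blast
        have "ph (AS A8) = MHEAD" "q1 (AS A8) = st C'" "s1 (AS A8) = wt C' (wh C')" "i1 (AS A8) = it C' (ih C')"
          "q2 (AS A8) = st (Cr (Suc t))" using A8(1) S7f by (auto simp: finish_def)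
        moreover have "rel1 A8 C' E8" "rel2 A8 (Cr (Suc t)) E8" using A8(7) rel1_7 rel2_7 by (auto simp: rel1_def rel2_def)
        ultimately have "mheadR Bnd A8 C' (Cr (Suc t)) (length (orc (Cr (Suc t))))"
          using A8 ln unfolding mheadR_def by auto
        then show ?thesis using rs_trans[OF r17 r8] by blast
      qed
      then obtain k8 A8 where r8: "rs w c A k8 A8" and m8: "mheadR Bnd A8 C' (Cr (Suc t)) (length (orc (Cr (Suc t))))" by blast
      have "th - Suc t < th - t" using tth by simp
      then obtain k9 B where "rs w c A8 k9 B" "commitR Bnd wp B C'"
        using less.hyps[of "Suc t" A8 "length (orc (Cr (Suc t)))"] m8 n'le by blast
      then show ?thesis using rs_trans[OF r8] by blast
    qed
  qed
qed

end

definition topR :: "nat \<Rightarrow> acfg \<Rightarrow> cfg \<Rightarrow> bool" where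
 "topR Bnd A C' \<longleftrightarrow> ph (AS A) = TOP \<and> q1 (AS A) = st C' \<and> AH A = 0 \<and> AG A = 0 \<and> AC A = ch C'
   \<and> (\<exists>E. E \<le> Bnd \<and> shape (AT A) (AR A) E \<and> rel1 A C' E)"

lemma run_0_init: "run M w c 0 = init_cfg" by simp

context sim begin

lemma Cp_step:
  assumes "\<not> halted Mp (Cp t)"
    "delta Mp (st (Cp t)) (inp wp (idxval (it (Cp t)))) (wt (Cp t) (wh (Cp t))) (it (Cp t) (ih (Cp t))) (chsym c (ch (Cp t))) = (q', s', mw, i', mi, mc, ow)"
  shows "Cp (Suc t) = (Cp t)\<lparr>st := q', wt := (wt (Cp t))(wh (Cp t) := s'), wh := mv mw (wh (Cp t)),
            it := (it (Cp t))(ih (Cp t) := i'), ih := mv mi (ih (Cp t)), ch := mv mc (ch (Cp t)),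
            orc := orc (Cp t) @ (case ow of None \<Rightarrow> [] | Some b \<Rightarrow> [b])\<rparr>"
  using step_unfold[OF assms(1) assms(2)] by (simp add: run_Suc)

lemma top_step:
  assumes "topR Bnd A (Cp t')" "\<not> halted Mp (Cp t')"
  shows "\<exists>k1 B k2 A'. rs w c A k1 B \<and> rs w c (astep w c B) k2 A' \<and> AC (astep w c B) = ch (Cp (Suc t'))
     \<and> topR Bnd A' (Cp (Suc t'))"
proof -
  let ?S = "AS A"
  let ?C = "Cp t'"
  obtain E where E: "E \<le> Bnd" "shape (AT A) (AR A) E" "rel1 A ?C E" using assms(1) by (auto simp: topR_def)
  have tp: "ph ?S = TOP" "q1 ?S = st ?C" "AH A = 0" "AG A = 0" "AC A = ch ?C" using assms(1) by (auto simp: topR_def)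
  have nh: "\<not> ahalted ?S" using tp(1) ahalted_phase by simp
  have trW: "track AW1 (AT A) (AR A) E (wt ?C) (wh ?C)" and trX: "track AX1 (AT A) (AR A) E (it ?C) (ih ?C)"
    using E(3) by (auto simp: rel1_def)
  let ?A1 = "A\<lparr>AS := startR GW1 ?S, AC := mv N (AC A)\<rparr>"
  have a1: "astep w c A = ?A1"
    by (rule ctrl_step[OF nh]) (use assms(2) tp in \<open>simp add: adelta_def halted_def\<close>)
  have r1: "rs w c A 1 ?A1" using rs_one[OF nh a1] ahalted_phase by simp
  let ?A2 = "?A1\<lparr>AS := finish GW1 (gupd GW1 ((AS ?A1)\<lparr>ph := SL GW1, pnd := False, dn := False\<rparr>) (wt ?C (wh ?C)))\<rparr>"
  have r2: "rs w c ?A1 (Suc E + E) ?A2"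
    by (rule gather_sweep) (use tp E trW in auto)
  let ?A3 = "?A2\<lparr>AS := finish GX1 (gupd GX1 ((AS ?A2)\<lparr>ph := SL GX1, pnd := False, dn := False\<rparr>) (it ?C (ih ?C)))\<rparr>"
  have r3: "rs w c ?A2 (Suc E + E) ?A3"
    by (rule gather_sweep) (use tp E trX in \<open>auto simp: finish_def\<close>)
  have S3: "ph (AS ?A3) = SR RST" "\<not> pnd (AS ?A3)" by (simp_all add: finish_def)
  obtain k4 A4 where r4: "rs w c ?A3 k4 A4"
    and A4: "AS A4 = finish RST ((AS ?A3)\<lparr>ph := SL RST, pnd := False, dn := False\<rparr>)" "AH A4 = 0" "AG A4 = 0"
      "AR A4 = (\<lambda>_. 0)" "\<forall>i. AT A4 i = (if i < E then Some (rc (the (AT A i))) else None)"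
    using rst_sweep[of ?A3 E w c] S3 tp E by auto
  have E0: "0 < E" using shape_pos[OF E(2)] .
  have sh4: "shape (AT A4) (AR A4) E"
    by (rule shapeI) (use A4 shape_org[OF E(2)] E0 in \<open>auto simp: rc_def\<close>)
  have keep4: "keep j (the (AT A i)) (the (AT A4 i)) (AR A i) (AR A4 i)" if "j = AW1 \<or> j = AX1" "i < E" for j i
    using that A4(5) by (auto simp: keep_def rc_def)
  have rel1_4: "rel1 A4 ?C E"
    unfolding rel1_def using track_mono[OF trW order_refl keep4] track_mono[OF trX order_refl keep4] by auto
  have Cr0: "Cr 0 = init_cfg" by simp
  have rel2_4: "rel2 A4 (Cr 0) E"
    using A4(4,5) shape_org[OF E(2)] E0 by (auto simp: rel2_def track_def rc_def init_cfg_def)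
  have ctr4: "ctr (AT A4) E 0" using A4(5) by (auto simp: ctr_def rc_def)
  have mh4: "mheadR Bnd A4 ?C (Cr 0) 0"
    unfolding mheadR_def using A4 rel1_4 rel2_4 ctr4 sh4 E(1) tp by (auto simp: finish_def init_cfg_def)
  obtain k5 B where r5: "rs w c A4 k5 B" and cB: "commitR Bnd wp B ?C"
    using mloop[OF mh4] by (auto simp: init_cfg_def)
  have rB: "rs w c A (1 + (Suc E + E) + (Suc E + E) + k4 + k5) B"
    using rs_trans[OF rs_trans[OF rs_trans[OF rs_trans[OF r1 r2] r3] r4] r5] .
  have acB: "AC B = ch ?C" using rB tp(5) by (auto simp: rs_def)
  have cm: "ph (AS B) = COMMIT" "q1 (AS B) = st ?C" "s1 (AS B) = wt ?C (wh ?C)" "i1 (AS B) = it ?C (ih ?C)"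
    "avd (av (AS B)) = inp wp (idxval (it ?C))" "AH B = 0" "AG B = 0"
    using cB by (auto simp: commitR_def)
  obtain EB where EB: "EB \<le> Bnd" "shape (AT B) (AR B) EB" "rel1 B ?C EB" using cB by (auto simp: commitR_def)
  have nhB: "\<not> ahalted (AS B)" using cm(1) ahalted_phase by simp
  obtain q' s' mw i' mi mc ow where d:
    "delta Mp (st ?C) (inp wp (idxval (it ?C))) (wt ?C (wh ?C)) (it ?C (ih ?C)) (chsym c (ch ?C)) = (q', s', mw, i', mi, mc, ow)"
    by (metis prod_cases7)
  have Cs: "Cp (Suc t') = ?C\<lparr>st := q', wt := (wt ?C)(wh ?C := s'), wh := mv mw (wh ?C),
            it := (it ?C)(ih ?C := i'), ih := mv mi (ih ?C), ch := mv mc (ch ?C),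
            orc := orc ?C @ (case ow of None \<Rightarrow> [] | Some b \<Rightarrow> [b])\<rparr>" by (rule Cp_step[OF assms(2) d])
  let ?S5 = "startR AW1 ((AS B)\<lparr>q1 := q', wv1 := s', wm1 := mw, xv1 := i', xm1 := mi\<rparr>)"
  let ?B' = "B\<lparr>AS := ?S5, AC := mv mc (AC B)\<rparr>"
  have aB: "astep w c B = ?B'"
    by (rule ctrl_step[OF nhB]) (use cm d acB in \<open>simp add: adelta_def\<close>)
  have acB': "AC (astep w c B) = ch (Cp (Suc t'))" using aB acB Cs by simp
  have trW5: "track AW1 (AT ?B') (AR ?B') EB (wt ?C) (wh ?C)" and trX5: "track AX1 (AT ?B') (AR ?B') EB (it ?C) (ih ?C)"
    using EB(3) by (auto simp: rel1_def)
  have nh5: "\<not> ahalted ?S5" using ahalted_phase by simp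
  obtain k6 A6 E6 where r6: "rs w c ?B' k6 A6" and ap6: "apres AW1 ?B' A6 EB E6 (wt ?C) (wh ?C)"
    using apply_sweep[of ?B' AW1 EB "wt ?C" "wh ?C" w c] trW5 EB cm by auto
  have Cs1: "wh (Cp (Suc t')) = mv mw (wh ?C)" "ih (Cp (Suc t')) = mv mi (ih ?C)"
    "wt (Cp (Suc t')) = (wt ?C)(wh ?C := s')" "it (Cp (Suc t')) = (it ?C)(ih ?C := i')"
    "st (Cp (Suc t')) = q'" using Cs by simp_all
  obtain P6 D6 where S6: "AS A6 = finish AW1 (?S5\<lparr>ph := SL AW1, pnd := P6, dn := D6\<rparr>)"
    using ap6 by (auto simp: apres_def)
  have E6: "E6 = max EB (Suc (wh (Cp (Suc t'))))" "shape (AT A6) (AR A6) E6" "AH A6 = 0" "AG A6 = 0"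
    "track AW1 (AT A6) (AR A6) E6 (wt (Cp (Suc t'))) (wh (Cp (Suc t')))"
    using ap6 Cs1 by (auto simp: apres_def)
  have E6b: "E6 \<le> Bnd" using E6(1) EB(1) hb1(1)[of "Suc t'"] by simp
  have tr6: "track AX1 (AT A6) (AR A6) E6 (it ?C) (ih ?C)" using ap6 trX5 by (auto simp: apres_def)
  have S6f: "ph (AS A6) = SR AX1" "\<not> pnd (AS A6)" "\<not> dn (AS A6)" "jval AX1 (AS A6) = i'" "jmv AX1 (AS A6) = mi"
    "q1 (AS A6) = q'" using S6 by (simp_all add: finish_def)
  obtain k7 A7 E7 where r7: "rs w c A6 k7 A7" and ap7: "apres AX1 A6 A7 E6 E7 (it ?C) (ih ?C)"
    using apply_sweep[of A6 AX1 E6 "it ?C" "ih ?C" w c] tr6 E6 S6f by auto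
  obtain P7 D7 where S7: "AS A7 = finish AX1 ((AS A6)\<lparr>ph := SL AX1, pnd := P7, dn := D7\<rparr>)"
    using ap7 by (auto simp: apres_def)
  have E7: "E7 = max E6 (Suc (ih (Cp (Suc t'))))" "shape (AT A7) (AR A7) E7" "AH A7 = 0" "AG A7 = 0"
    "track AX1 (AT A7) (AR A7) E7 (it (Cp (Suc t'))) (ih (Cp (Suc t')))"
    using ap7 Cs1 S6f by (auto simp: apres_def)
  have E7b: "E7 \<le> Bnd" using E7(1) E6b hb1(2)[of "Suc t'"] by simp
  have tr7: "track AW1 (AT A7) (AR A7) E7 (wt (Cp (Suc t'))) (wh (Cp (Suc t')))" using ap7 E6(5) by (auto simp: apres_def)
  have r57: "rs w c ?B' (k6 + k7) A7" by (rule rs_trans[OF r6 r7])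
  have ac7: "AC A7 = ch (Cp (Suc t'))" using r57 acB' aB by (auto simp: rs_def)
  have ex7: "\<exists>E. E \<le> Bnd \<and> shape (AT A7) (AR A7) E \<and> rel1 A7 (Cp (Suc t')) E"
    using E7(2,5) E7b tr7 unfolding rel1_def by blast
  have "topR Bnd A7 (Cp (Suc t'))"
    unfolding topR_def using S7 S6f Cs1 E7 ex7 ac7 by (simp add: finish_def)
  then show ?thesis using rB r57 aB acB' by metis
qed

lemma init_top:
  assumes "0 < Bnd"
  shows "topR Bnd (astep w c A0) (Cp 0) \<and> \<not> ahalted (AS A0)"
proof -
  have nh: "\<not> ahalted (AS A0)" using ahalted_phase by (simp add: A0_def S0_def)
  have a: "astep w c A0 = A0\<lparr>AS := S0\<lparr>ph := TOP\<rparr>, AT := (\<lambda>_. None)(0 := Some cinit), AR := (\<lambda>_. 0)\<rparr>"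
    using nh by (simp add: astep_def adelta_def A0_def S0_def fun_eq_iff)
  have sh: "shape ((\<lambda>_. None)(0 := Some cinit)) (\<lambda>_. 0) 1"
    by (rule shapeI) (auto simp: cinit_def cdef_def)
  have r: "rel1 (astep w c A0) (Cp 0) 1" unfolding a
    by (auto simp: rel1_def track_def init_cfg_def cinit_def cdef_def A0_def)
  have e: "\<exists>E. E \<le> Bnd \<and> shape (AT (astep w c A0)) (AR (astep w c A0)) E \<and> rel1 (astep w c A0) (Cp 0) E"
    using r sh assms a by (intro exI[of _ 1]) simp
  have "topR Bnd (astep w c A0) (Cp 0)"
    unfolding topR_def using e a by (simp add: A0_def S0_def init_cfg_def)
  then show ?thesis using nh by simp
qed

lemma top_halt:
  assumes "topR Bnd A (Cp t')" "halted Mp (Cp t')"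
  shows "astep w c A = A\<lparr>AS := (if st (Cp t') = accst Mp then ACCs else REJs), AC := mv N (AC A)\<rparr>"
proof -
  have nh: "\<not> ahalted (AS A)" using assms(1) ahalted_phase by (simp add: topR_def)
  show ?thesis
    by (rule ctrl_step[OF nh]) (use assms in \<open>auto simp: adelta_def halted_def topR_def\<close>)
qed

end

definition hinv :: "acfg \<Rightarrow> nat \<Rightarrow> bool" where
  "hinv A E \<longleftrightarrow> (\<forall>i. (AT A i \<noteq> None) = (i < E)) \<and> AH A \<le> E \<and> AG A = AH A"

lemma rstep_dom: "rstep j S co r = (S', co', r', b) \<Longrightarrow> (co \<noteq> None \<longrightarrow> co' \<noteq> None) \<and> (b \<longrightarrow> co' \<noteq> None)"
  by (auto simp: rstep_def split: option.splits job.splits if_splits prod.splits)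

lemma lstep_dom: "lstep j S co r = (S', co', r') \<Longrightarrow> (co \<noteq> None \<longrightarrow> co' \<noteq> None)"
  by (auto simp: lstep_def split: option.splits if_splits)

context cc begin

lemma adelta_dom:
  assumes "adelta S a co r ch0 = (S', co', r', mw, mi, mc)"
  shows "mi = mw \<and> (co \<noteq> None \<longrightarrow> co' \<noteq> None) \<and> (mw = R \<longrightarrow> co' \<noteq> None)"
proof (cases "ph S")
  case (SR j)
  obtain S1 co1 r1 b where d: "rstep j S co r = (S1, co1, r1, b)" by (metis prod_cases4)
  show ?thesis using assms SR d rstep_dom[OF d] by (auto simp: adelta_def split: if_splits)
next
  case (SL j)
  obtain S1 co1 r1 where d: "lstep j S co r = (S1, co1, r1)" by (metis prod_cases3)
  show ?thesis using assms SL d lstep_dom[OF d] by (auto simp: adelta_def split: if_splits)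
next
  case MSTEP then show ?thesis using assms by (auto simp: adelta_def split: if_splits prod.splits option.splits)
next
  case COMMIT then show ?thesis using assms by (auto simp: adelta_def split: if_splits prod.splits option.splits)
qed (use assms in \<open>auto simp: adelta_def split: if_splits\<close>)

lemma hinv_step:
  assumes "hinv A E"
  shows "\<exists>E'. E \<le> E' \<and> hinv (astep w c A) E'"
proof (cases "ahalted (AS A)")
  case True then show ?thesis using assms by (auto simp: astep_def)
next
  case False
  obtain S' co r' mw mi mc where d: "adelta (AS A) (inp w (idxval (AR A))) (AT A (AH A)) (AR A (AG A)) (chsym c (AC A)) = (S', co, r', mw, mi, mc)"
    by (metis prod_cases6)
  have dd: "mi = mw" "AT A (AH A) \<noteq> None \<longrightarrow> co \<noteq> None" "mw = R \<longrightarrow> co \<noteq> None" using adelta_dom[OF d] by auto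
  have a: "astep w c A = A\<lparr>AS := S', AT := (AT A)(AH A := co), AH := mv mw (AH A), AR := (AR A)(AG A := r'),
           AG := mv mi (AG A), AC := mv mc (AC A)\<rparr>" using False d by (simp add: astep_def)
  have h: "\<forall>i. (AT A i \<noteq> None) = (i < E)" "AH A \<le> E" "AG A = AH A" using assms by (auto simp: hinv_def)
  show ?thesis
  proof (cases "AH A < E")
    case True
    then have "co \<noteq> None" using h dd by auto
    then have "hinv (astep w c A) E" using a h dd True by (cases mw) (auto simp: hinv_def)
    then show ?thesis by blast
  next
    case False
    then have HE: "AH A = E" using h by simp
    show ?thesis
    proof (cases co)
      case None
      then have "hinv (astep w c A) E" using a h dd HE by (cases mw) (auto simp: hinv_def)
      then show ?thesis by blast
    next
      case (Some x)
      then have "hinv (astep w c A) (Suc E)" using a h dd HE by (cases mw) (auto simp: hinv_def less_Suc_eq)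
      then show ?thesis by (intro exI[of _ "Suc E"]) simp
    qed
  qed
qed

lemma dom_step: "AT A i \<noteq> None \<Longrightarrow> AT (astep w c A) i \<noteq> None"
proof (cases "ahalted (AS A)")
  case True then show "AT A i \<noteq> None \<Longrightarrow> ?thesis" by (simp add: astep_def)
next
  case False
  assume ai: "AT A i \<noteq> None"
  obtain S' co r' mw mi mc where d: "adelta (AS A) (inp w (idxval (AR A))) (AT A (AH A)) (AR A (AG A)) (chsym c (AC A)) = (S', co, r', mw, mi, mc)"
    by (metis prod_cases6)
  show ?thesis using adelta_dom[OF d] False d ai by (auto simp: astep_def)
qed

lemma arun_Suc: "arun w c (Suc t) = astep w c (arun w c t)" by (simp add: arun_def)
lemma arun_add: "arun w c (t + s) = (astep w c ^^ s) (arun w c t)" by (simp add: arun_def funpow_add add.commute)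

lemma hinv_arun: "\<exists>E. hinv (arun w c t) E"
proof (induction t)
  case 0 then show ?case by (intro exI[of _ 0]) (simp add: hinv_def arun_def A0_def)
next
  case (Suc t) then show ?case using hinv_step by (metis arun_Suc)
qed

lemma dom_arun: "t \<le> t' \<Longrightarrow> AT (arun w c t) i \<noteq> None \<Longrightarrow> AT (arun w c t') i \<noteq> None"
proof (induction t' rule: dec_induct)
  case base then show ?case by simp
next
  case (step n) then show ?case using dom_step by (simp add: arun_Suc)
qed

lemma head_bound:
  assumes "t \<le> T" "shape (AT (arun w c T)) Rx E"
  shows "AH (arun w c t) \<le> E \<and> AG (arun w c t) = AH (arun w c t)"
proof -
  obtain E0 where h: "hinv (arun w c t) E0" using hinv_arun by blast
  have "E0 \<le> E"
  proof (rule ccontr)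
    assume "\<not> E0 \<le> E"
    then have "AT (arun w c t) E \<noteq> None" using h by (simp add: hinv_def)
    then have "AT (arun w c T) E \<noteq> None" using dom_arun[OF assms(1)] by blast
    then show False using shape_dom[OF assms(2), of E] by simp
  qed
  then show ?thesis using h by (auto simp: hinv_def)
qed

lemma rs_arun:
  assumes "rs w c (arun w c T) k B" "s \<le> k"
  shows "AC (arun w c (T + s)) = AC (arun w c T) \<and> \<not> ahalted (AS (arun w c (T + s)))"
  using assms by (simp add: rs_def arun_add)

lemma rs_arun_end: "rs w c (arun w c T) k B \<Longrightarrow> arun w c (T + k) = B"
  by (simp add: rs_def arun_add)

end


context sim begin

lemma Bnd_pos: "0 < Bnd" using hb1(1)[of 0] by simp

abbreviation "K t \<equiv> arun w c t"

definition tl_ok :: "nat \<Rightarrow> nat \<Rightarrow> bool" where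
  "tl_ok t' T \<longleftrightarrow> t' < T \<and> topR Bnd (K T) (Cp t') \<and> (\<forall>s\<le>T. \<not> ahalted (AS (K s)))
    \<and> (\<forall>s\<le>T. \<exists>s'\<le>t'. AC (K s) = ch (Cp s')) \<and> (\<forall>s'\<le>t'. \<exists>s\<le>T. AC (K s) = ch (Cp s'))
    \<and> (\<forall>s<T. AC (K (Suc s)) = AC (K s) \<or> (\<exists>s'<t'. AC (K s) = ch (Cp s') \<and> AC (K (Suc s)) = ch (Cp (Suc s'))))"

lemma tops: "(\<forall>s<t'. \<not> halted Mp (Cp s)) \<Longrightarrow> \<exists>T. tl_ok t' T"
proof (induction t')
  case 0
  have it: "topR Bnd (astep w c A0) (Cp 0)" "\<not> ahalted (AS A0)" using init_top[OF Bnd_pos] by auto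
  have K1: "K 1 = astep w c A0" by (simp add: arun_def)
  have K0: "K 0 = A0" by (simp add: arun_def)
  have ac: "AC (K 0) = 0" "AC (K 1) = 0" "ch (Cp 0) = 0"
    using it K1 by (auto simp: K0 A0_def topR_def init_cfg_def)
  have nh1: "\<not> ahalted (AS (K 1))" using it K1 ahalted_phase by (simp add: topR_def)
  have "tl_ok 0 1"
    unfolding tl_ok_def
  proof (intro conjI allI impI)
    show "topR Bnd (K 1) (Cp 0)" using it K1 by simp
    fix s assume "s \<le> (1::nat)" then have "s = 0 \<or> s = 1" by auto
    then show "\<not> ahalted (AS (K s))" using it nh1 K0 by auto
  next
    fix s assume "s \<le> (1::nat)" then have "s = 0 \<or> s = 1" by auto
    then show "\<exists>s'\<le>0. AC (K s) = ch (Cp s')" using ac by auto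
  next
    fix s' :: nat assume "s' \<le> 0" then show "\<exists>s\<le>1. AC (K s) = ch (Cp s')" using ac by (intro exI[of _ 0]) auto
  next
    fix s :: nat assume "s < 1" then show "AC (K (Suc s)) = AC (K s) \<or> (\<exists>s'<0. AC (K s) = ch (Cp s') \<and> AC (K (Suc s)) = ch (Cp (Suc s')))"
      using ac by auto
  qed simp
  then show ?case by blast
next
  case (Suc t')
  then obtain T where T: "tl_ok t' T" by auto
  have nh: "\<not> halted Mp (Cp t')" using Suc.prems by auto
  have tp: "topR Bnd (K T) (Cp t')" using T by (simp add: tl_ok_def)
  obtain k1 B k2 A' where r1: "rs w c (K T) k1 B" and r2: "rs w c (astep w c B) k2 A'"
    and acB: "AC (astep w c B) = ch (Cp (Suc t'))" and tpA: "topR Bnd A' (Cp (Suc t'))"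
    using top_step[OF tp nh] by blast
  have KB: "K (T + k1) = B" using rs_arun_end[OF r1] .
  have KB1: "K (Suc (T + k1)) = astep w c B" using KB by (simp add: arun_Suc)
  have r2': "rs w c (K (Suc (T + k1))) k2 A'" using r2 KB1 by simp
  have KA: "K (Suc (T + k1) + k2) = A'" using rs_arun_end[OF r2'] .
  let ?T' = "Suc (T + k1) + k2"
  have acT: "AC (K T) = ch (Cp t')" using tp by (simp add: topR_def)
  have seg1: "AC (K s) = ch (Cp t') \<and> \<not> ahalted (AS (K s))" if "T \<le> s" "s \<le> T + k1" for s
    using rs_arun[OF r1, of "s - T"] that acT by simp
  have seg2: "AC (K s) = ch (Cp (Suc t')) \<and> \<not> ahalted (AS (K s))" if "Suc (T + k1) \<le> s" "s \<le> ?T'" for s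
    using rs_arun[OF r2', of "s - Suc (T + k1)"] that acB KB1 by simp
  have old: "\<forall>s\<le>T. \<not> ahalted (AS (K s))" "\<forall>s\<le>T. \<exists>s'\<le>t'. AC (K s) = ch (Cp s')"
    "\<forall>s'\<le>t'. \<exists>s\<le>T. AC (K s) = ch (Cp s')"
    "\<forall>s<T. AC (K (Suc s)) = AC (K s) \<or> (\<exists>s'<t'. AC (K s) = ch (Cp s') \<and> AC (K (Suc s)) = ch (Cp (Suc s')))"
    "t' < T" using T by (auto simp: tl_ok_def)
  have "tl_ok (Suc t') ?T'"
    unfolding tl_ok_def
  proof (intro conjI allI impI)
    show "Suc t' < ?T'" using old(5) by simp
    show "topR Bnd (K ?T') (Cp (Suc t'))" using tpA KA by simp
    fix s assume s: "s \<le> ?T'"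
    show "\<not> ahalted (AS (K s))"
      using old(1) seg1 seg2 s by (metis not_less_eq_eq nat_le_linear)
  next
    fix s assume s: "s \<le> ?T'"
    show "\<exists>s'\<le>Suc t'. AC (K s) = ch (Cp s')"
    proof (cases "s \<le> T")
      case True then show ?thesis using old(2) by (meson le_Suc_eq)
    next
      case False
      then show ?thesis
      proof (cases "s \<le> T + k1")
        case True then show ?thesis using seg1[of s] False by (intro exI[of _ t']) auto
      next
        case False then show ?thesis using seg2[of s] s by (intro exI[of _ "Suc t'"]) auto
      qed
    qed
  next
    fix s' assume s': "s' \<le> Suc t'"
    show "\<exists>s\<le>?T'. AC (K s) = ch (Cp s')"
    proof (cases "s' \<le> t'")
      case True then obtain s where "s \<le> T" "AC (K s) = ch (Cp s')" using old(3) by blast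
      then show ?thesis by (intro exI[of _ s]) auto
    next
      case False then have "s' = Suc t'" using s' by simp
      then show ?thesis using seg2[of ?T'] by (intro exI[of _ ?T']) auto
    qed
  next
    fix s assume s: "s < ?T'"
    show "AC (K (Suc s)) = AC (K s) \<or> (\<exists>s'<Suc t'. AC (K s) = ch (Cp s') \<and> AC (K (Suc s)) = ch (Cp (Suc s')))"
    proof (cases "s < T")
      case True then show ?thesis using old(4) by (meson less_SucI)
    next
      case nT: False
      show ?thesis
      proof (cases "s < T + k1")
        case True then show ?thesis using seg1[of s] seg1[of "Suc s"] nT by auto
      next
        case False
        show ?thesis
        proof (cases "s = T + k1")
          case True then show ?thesis using seg1[of s] seg2[of "Suc s"] nT by auto
        next
          case False2: False
          then show ?thesis using seg2[of s] seg2[of "Suc s"] s False by auto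
        qed
      qed
    qed
  qed
  then show ?case by blast
qed

end

context sim begin

lemma K_halted_stay: "ahalted (AS (K t)) \<Longrightarrow> K (t + s) = K t"
  by (induction s) (auto simp: arun_Suc astep_def)

lemma halt_case:
  assumes "halted Mp (Cp th')" "\<forall>s<th'. \<not> halted Mp (Cp s)"
  obtains T where "tl_ok th' T" "\<And>s. K (Suc T + s) = (K T)\<lparr>AS := (if st (Cp th') = accst Mp then ACCs else REJs)\<rparr>"
proof -
  obtain T where T: "tl_ok th' T" using tops assms(2) by blast
  have tp: "topR Bnd (K T) (Cp th')" using T by (simp add: tl_ok_def)
  have "K (Suc T) = (K T)\<lparr>AS := (if st (Cp th') = accst Mp then ACCs else REJs), AC := mv N (AC (K T))\<rparr>"
    using top_halt[OF tp assms(1)] by (simp add: arun_Suc)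
  then have K1: "K (Suc T) = (K T)\<lparr>AS := (if st (Cp th') = accst Mp then ACCs else REJs)\<rparr>" by simp
  have "ahalted (AS (K (Suc T)))" using K1 by (simp add: ahalted_def)
  then have "K (Suc T + s) = K (Suc T)" for s using K_halted_stay by blast
  then show ?thesis using that T K1 by simp
qed

lemma F1: "AH (K t) \<le> Bnd \<and> AG (K t) = AH (K t)"
proof (cases "\<exists>s. halted Mp (Cp s)")
  case False
  then obtain T where T: "tl_ok t T" using tops by blast
  then obtain E where "E \<le> Bnd" "shape (AT (K T)) (AR (K T)) E" by (auto simp: tl_ok_def topR_def)
  then show ?thesis using head_bound[of t T] T by (force simp: tl_ok_def)
next
  case True
  define th' where "th' = (LEAST s. halted Mp (Cp s))"
  have h: "halted Mp (Cp th')" "\<forall>s<th'. \<not> halted Mp (Cp s)"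
    using True LeastI_ex[OF True] not_less_Least unfolding th'_def by auto
  obtain T where T: "tl_ok th' T" and KT: "\<And>s. K (Suc T + s) = (K T)\<lparr>AS := (if st (Cp th') = accst Mp then ACCs else REJs)\<rparr>"
    using halt_case[OF h] by blast
  obtain E where E: "E \<le> Bnd" "shape (AT (K T)) (AR (K T)) E" using T by (auto simp: tl_ok_def topR_def)
  show ?thesis
  proof (cases "t \<le> T")
    case True then show ?thesis using head_bound[OF True E(2)] E(1) by simp
  next
    case False
    then have "K t = (K T)\<lparr>AS := (if st (Cp th') = accst Mp then ACCs else REJs)\<rparr>"
      using KT[of "t - Suc T"] by simp
    then show ?thesis using T by (simp add: tl_ok_def topR_def)
  qed
qed

lemma F2: "\<exists>t'. AC (K t) = ch (Cp t')"
proof (cases "\<exists>s. halted Mp (Cp s)")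
  case False
  then obtain T where T: "tl_ok t T" using tops by blast
  then have "t \<le> T" by (simp add: tl_ok_def)
  then show ?thesis using T unfolding tl_ok_def by blast
next
  case True
  define th' where "th' = (LEAST s. halted Mp (Cp s))"
  have h: "halted Mp (Cp th')" "\<forall>s<th'. \<not> halted Mp (Cp s)"
    using True LeastI_ex[OF True] not_less_Least unfolding th'_def by auto
  obtain T where T: "tl_ok th' T" and KT: "\<And>s. K (Suc T + s) = (K T)\<lparr>AS := (if st (Cp th') = accst Mp then ACCs else REJs)\<rparr>"
    using halt_case[OF h] by blast
  show ?thesis
  proof (cases "t \<le> T")
    case True then show ?thesis using T by (auto simp: tl_ok_def)
  next
    case False
    then have "K t = (K T)\<lparr>AS := (if st (Cp th') = accst Mp then ACCs else REJs)\<rparr>"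
      using KT[of "t - Suc T"] by simp
    then show ?thesis using T by (auto simp: tl_ok_def topR_def)
  qed
qed

lemma F3:
  assumes "\<And>t'. ch (Cp t') \<le> ch (Cp (Suc t'))"
  shows "AC (K t) \<le> AC (K (Suc t))"
proof -
  have step: "AC (K t) \<le> AC (K (Suc t))" if "tl_ok t' T" "t < T" for t' T
    using that assms by (force simp: tl_ok_def)
  show ?thesis
  proof (cases "\<exists>s. halted Mp (Cp s)")
    case False
    then obtain T where T: "tl_ok t T" using tops by blast
    then show ?thesis using step[OF T] by (simp add: tl_ok_def)
  next
    case True
    define th' where "th' = (LEAST s. halted Mp (Cp s))"
    have h: "halted Mp (Cp th')" "\<forall>s<th'. \<not> halted Mp (Cp s)"
      using True LeastI_ex[OF True] not_less_Least unfolding th'_def by auto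
    obtain T where T: "tl_ok th' T" and KT: "\<And>s. K (Suc T + s) = (K T)\<lparr>AS := (if st (Cp th') = accst Mp then ACCs else REJs)\<rparr>"
      using halt_case[OF h] by blast
    show ?thesis
    proof (cases "t < T")
      case True then show ?thesis using step[OF T] by simp
    next
      case False
      then have "K (Suc t) = (K T)\<lparr>AS := (if st (Cp th') = accst Mp then ACCs else REJs)\<rparr>"
        using KT[of "t - T"] by simp
      moreover have "AC (K t) = AC (K T)"
      proof (cases "t = T")
        case True then show ?thesis by simp
      next
        case False
        then have "K t = (K T)\<lparr>AS := (if st (Cp th') = accst Mp then ACCs else REJs)\<rparr>"
          using KT[of "t - Suc T"] \<open>\<not> t < T\<close> by simp
        then show ?thesis by simp
      qed
      ultimately show ?thesis by simp
    qed
  qed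
qed

lemma Cp_halted_stay: "halted Mp (Cp t) \<Longrightarrow> t \<le> t' \<Longrightarrow> Cp t' = Cp t"
  by (rule run_halted_stay)

lemma F4:
  "(\<exists>t. AS (K t) = ACCs \<and> (\<forall>s\<le>t. AC (K s) \<le> Lx) \<and> (\<exists>s\<le>t. AC (K s) = Lx)) \<longleftrightarrow>
   (\<exists>t'. st (Cp t') = accst Mp \<and> (\<forall>s\<le>t'. ch (Cp s) \<le> Lx) \<and> (\<exists>s\<le>t'. ch (Cp s) = Lx))"
proof
  assume "\<exists>t. AS (K t) = ACCs \<and> (\<forall>s\<le>t. AC (K s) \<le> Lx) \<and> (\<exists>s\<le>t. AC (K s) = Lx)"
  then obtain t where t: "AS (K t) = ACCs" "\<forall>s\<le>t. AC (K s) \<le> Lx" "\<exists>s\<le>t. AC (K s) = Lx" by blast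
  have hl: "\<exists>s. halted Mp (Cp s)"
  proof (rule ccontr)
    assume "\<not> ?thesis"
    then obtain T where "tl_ok t T" using tops by blast
    then have "\<not> ahalted (AS (K t))" by (auto simp: tl_ok_def)
    then show False using t(1) by (simp add: ahalted_def)
  qed
  define th' where "th' = (LEAST s. halted Mp (Cp s))"
  have h: "halted Mp (Cp th')" "\<forall>s<th'. \<not> halted Mp (Cp s)"
    using hl LeastI_ex[OF hl] not_less_Least unfolding th'_def by auto
  obtain T where T: "tl_ok th' T" and KT: "\<And>s. K (Suc T + s) = (K T)\<lparr>AS := (if st (Cp th') = accst Mp then ACCs else REJs)\<rparr>"
    using halt_case[OF h] by blast
  have tT: "T < t"
  proof (rule ccontr)
    assume "\<not> T < t" then have "\<not> ahalted (AS (K t))" using T by (auto simp: tl_ok_def)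
    then show False using t(1) by (simp add: ahalted_def)
  qed
  have Kt: "K t = (K T)\<lparr>AS := (if st (Cp th') = accst Mp then ACCs else REJs)\<rparr>"
    using KT[of "t - Suc T"] tT by simp
  have acc: "st (Cp th') = accst Mp"
  proof (rule ccontr)
    assume "st (Cp th') \<noteq> accst Mp"
    then have "AS (K t) = REJs" using Kt by simp
    then show False using t(1) by (simp add: ACCs_def REJs_def S0_def)
  qed
  have ACeq: "AC (K s) = AC (K T)" if "T \<le> s" "s \<le> t" for s
  proof (cases "s = T")
    case False
    then have "K s = (K T)\<lparr>AS := (if st (Cp th') = accst Mp then ACCs else REJs)\<rparr>"
      using KT[of "s - Suc T"] that by simp
    then show ?thesis by simp
  qed simp
  have 1: "\<forall>s'\<le>th'. ch (Cp s') \<le> Lx"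
  proof (intro allI impI)
    fix s' assume "s' \<le> th'"
    then obtain s where "s \<le> T" "AC (K s) = ch (Cp s')" using T by (auto simp: tl_ok_def)
    then show "ch (Cp s') \<le> Lx" using t(2) tT by (metis less_imp_le_nat order.trans)
  qed
  have 2: "\<exists>s'\<le>th'. ch (Cp s') = Lx"
  proof -
    obtain s where s: "s \<le> t" "AC (K s) = Lx" using t(3) by blast
    obtain s0 where s0: "s0 \<le> T" "AC (K s0) = Lx"
    proof (cases "s \<le> T")
      case True then show ?thesis using that s by blast
    next
      case False then show ?thesis using that[of T] ACeq[of s] s by simp
    qed
    then obtain s' where "s' \<le> th'" "AC (K s0) = ch (Cp s')" using T by (auto simp: tl_ok_def)
    then show ?thesis using s0 by metis
  qed
  show "\<exists>t'. st (Cp t') = accst Mp \<and> (\<forall>s\<le>t'. ch (Cp s) \<le> Lx) \<and> (\<exists>s\<le>t'. ch (Cp s) = Lx)"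
    using acc 1 2 by blast
next
  assume "\<exists>t'. st (Cp t') = accst Mp \<and> (\<forall>s\<le>t'. ch (Cp s) \<le> Lx) \<and> (\<exists>s\<le>t'. ch (Cp s) = Lx)"
  then obtain ta where ta: "st (Cp ta) = accst Mp" "\<forall>s\<le>ta. ch (Cp s) \<le> Lx" "\<exists>s\<le>ta. ch (Cp s) = Lx" by blast
  have hl: "\<exists>s. halted Mp (Cp s)" using ta(1) by (auto simp: halted_def)
  define th' where "th' = (LEAST s. halted Mp (Cp s))"
  have h: "halted Mp (Cp th')" "\<forall>s<th'. \<not> halted Mp (Cp s)"
    using hl LeastI_ex[OF hl] not_less_Least unfolding th'_def by auto
  have le: "th' \<le> ta" unfolding th'_def using ta(1) by (auto simp: halted_def intro: Least_le)
  have same: "Cp s = Cp th'" if "th' \<le> s" for s using Cp_halted_stay[OF h(1) that] .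
  have acc: "st (Cp th') = accst Mp" using same[OF le] ta(1) by simp
  have c1: "\<forall>s\<le>th'. ch (Cp s) \<le> Lx" using ta(2) le by auto
  have c2: "\<exists>s\<le>th'. ch (Cp s) = Lx"
  proof -
    obtain s where s: "s \<le> ta" "ch (Cp s) = Lx" using ta(3) by blast
    show ?thesis
    proof (cases "s \<le> th'")
      case True then show ?thesis using s by blast
    next
      case False then show ?thesis using same[of s] s by (intro exI[of _ th']) auto
    qed
  qed
  obtain T where T: "tl_ok th' T" and KT: "\<And>s. K (Suc T + s) = (K T)\<lparr>AS := (if st (Cp th') = accst Mp then ACCs else REJs)\<rparr>"
    using halt_case[OF h] by blast
  have KS: "K (Suc T) = (K T)\<lparr>AS := ACCs\<rparr>" using KT[of 0] acc by simp
  have a1: "\<forall>s\<le>Suc T. AC (K s) \<le> Lx"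
  proof (intro allI impI)
    fix s assume s: "s \<le> Suc T"
    show "AC (K s) \<le> Lx"
    proof (cases "s \<le> T")
      case True
      then obtain s' where "s' \<le> th'" "AC (K s) = ch (Cp s')" using T by (auto simp: tl_ok_def)
      then show ?thesis using c1 by simp
    next
      case False then have "s = Suc T" using s by simp
      then have "AC (K s) = AC (K T)" using KS by simp
      moreover obtain s' where "s' \<le> th'" "AC (K T) = ch (Cp s')" using T by (auto simp: tl_ok_def)
      ultimately show ?thesis using c1 by simp
    qed
  qed
  have a2: "\<exists>s\<le>Suc T. AC (K s) = Lx"
  proof -
    obtain s' where "s' \<le> th'" "ch (Cp s') = Lx" using c2 by blast
    then obtain s where "s \<le> T" "AC (K s) = Lx" using T unfolding tl_ok_def by metis
    then show ?thesis by (intro exI[of _ s]) auto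
  qed
  show "\<exists>t. AS (K t) = ACCs \<and> (\<forall>s\<le>t. AC (K s) \<le> Lx) \<and> (\<exists>s\<le>t. AC (K s) = Lx)"
    using KS a1 a2 by (intro exI[of _ "Suc T"]) simp
qed

end

lemma sim_intro:
  assumes "wf_tm Mr" "wf_tm Mp" "\<And>t. ch (run Mr w (\<lambda>_. False) t) = 0"
    "\<And>t. wh (run Mr w (\<lambda>_. False) t) < Bnd" "\<And>t. ih (run Mr w (\<lambda>_. False) t) < Bnd"
    "\<And>t. wh (run Mp wp c t) < Bnd" "\<And>t. ih (run Mp wp c t) < Bnd"
    "halted Mr (run Mr w (\<lambda>_. False) th)" "orc (run Mr w (\<lambda>_. False) th) = wp" "length wp < 2 ^ Bnd"
  shows "sim Mr Mp w wp c Bnd th"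
  using assms by (auto simp: sim_def sim_axioms_def cc_def)

lemma len_enc: "length x \<le> length (enc x k)" by (simp add: enc_def)

locale red_setting =
  fixes Mr Mp :: tm and g fR f1 fk :: "nat \<Rightarrow> nat" and cR c1 :: nat and F F' :: "bool list \<Rightarrow> nat \<Rightarrow> nat"
  assumes wfr: "wf_tm Mr" and det: "deterministic Mr"
    and spR: "\<And>x k ch' t. wh (run Mr (enc x k) ch' t) + ih (run Mr (enc x k) ch' t) \<le> cR * (lg (length x) + fR k)"
    and red: "\<And>x k. \<exists>t x' k'. (st (run Mr (enc x k) (\<lambda>_. False) t) = accst Mr \<or> st (run Mr (enc x k) (\<lambda>_. False) t) = rejst Mr)
                     \<and> orc (run Mr (enc x k) (\<lambda>_. False) t) = enc x' k' \<and> k' \<le> g k \<and> F x k = F' x' k'"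
    and wfp: "wf_tm Mp"
    and spP: "\<And>x k ch' t. wh (run Mp (enc x k) ch' t) + ih (run Mp (enc x k) ch' t) \<le> c1 * (lg (length x) + f1 k)"
    and kbP: "\<And>x k c t. ch (run Mp (enc x k) c t) \<le> fk k * lg (length x)"
    and cnt: "\<And>x k. nacc Mp (enc x k) = F' x k"
    and cg: "computable g" and cfR: "computable fR" and cf1: "computable f1" and cfk: "computable fk"
begin

definition LV :: nat where "LV = lg (max (nstates Mr) (nsyms Mr))"
definition SM :: "bool list \<Rightarrow> nat \<Rightarrow> nat" where "SM x k = cR * (lg (length x) + fR k)"
definition LT :: "bool list \<Rightarrow> nat \<Rightarrow> nat" where "LT x k = (4 * SM x k + 5) * LV"
definition SF1 :: "nat \<Rightarrow> nat" where "SF1 k = (\<Sum>j\<le>g k. f1 j)"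
definition SFk :: "nat \<Rightarrow> nat" where "SFk k = (\<Sum>j\<le>g k. fk j)"
definition BndE :: "bool list \<Rightarrow> nat \<Rightarrow> nat" where "BndE x k = SM x k + 1 + c1 * (LT x k + SF1 k) + LT x k"

lemma per_input:
  "\<exists>x' k' th. k' \<le> g k \<and> F x k = F' x' k' \<and> (\<forall>c. sim Mr Mp (enc x k) (enc x' k') c (BndE x k) th)
     \<and> lg (length x') \<le> LT x k"
proof -
  let ?w = "enc x k" let ?F = "\<lambda>_::nat. False"
  obtain t x' k' where t: "halted Mr (run Mr ?w ?F t)" "orc (run Mr ?w ?F t) = enc x' k'" "k' \<le> g k" "F x k = F' x' k'"
    using red[of x k] by (auto simp: halted_def)
  define th0 where "th0 = (LEAST s. halted Mr (run Mr ?w ?F s))"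
  have h0: "halted Mr (run Mr ?w ?F th0)" "\<And>s. s < th0 \<Longrightarrow> \<not> halted Mr (run Mr ?w ?F s)"
    using LeastI[of "\<lambda>s. halted Mr (run Mr ?w ?F s)", OF t(1)] not_less_Least unfolding th0_def by auto
  have bw: "wh (run Mr ?w ?F s) \<le> SM x k" "ih (run Mr ?w ?F s) \<le> SM x k" for s
    using spR[of x k ?F s] unfolding SM_def by linarith+
  have chz: "ch (run Mr ?w ?F s) = 0" for s using det by (simp add: deterministic_def)
  have thb: "th0 \<le> (max (nstates Mr) (nsyms Mr)) ^ (4 * SM x k + 5)"
    by (rule halting_time_bound[OF wfr bw(1) bw(2) chz h0])
  have "th0 \<le> t" unfolding th0_def using t(1) by (rule Least_le)
  then have "run Mr ?w ?F t = run Mr ?w ?F th0" using run_halted_stay[OF h0(1)] by blast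
  then have orc0: "orc (run Mr ?w ?F th0) = enc x' k'" using t(2) by simp
  have lw: "length (enc x' k') \<le> th0" using run_orc_len[of Mr ?w ?F th0] orc0 by simp
  have V1: "1 \<le> max (nstates Mr) (nsyms Mr)" using wfr by (auto simp: wf_tm_def)
  have lgth: "lg th0 \<le> LT x k"
  proof -
    have "lg th0 \<le> lg ((max (nstates Mr) (nsyms Mr)) ^ (4 * SM x k + 5))" by (rule lg_mono[OF thb])
    also have "\<dots> \<le> (4 * SM x k + 5) * LV" unfolding LV_def by (rule lg_pow[OF V1]) simp
    finally show ?thesis by (simp add: LT_def)
  qed
  have lgx: "lg (length x') \<le> LT x k"
    using lg_mono[OF order.trans[OF len_enc[of x' k'] lw]] lgth by simp
  have f1b: "f1 k' \<le> SF1 k" unfolding SF1_def using t(3) by (intro member_le_sum) auto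
  have S1b: "c1 * (lg (length x') + f1 k') \<le> c1 * (LT x k + SF1 k)"
    using lgx f1b by (intro mult_le_mono2) simp
  have hb3: "length (enc x' k') < 2 ^ BndE x k"
  proof -
    have "length (enc x' k') < 2 ^ lg (length (enc x' k'))" by (rule lg_lt_pow)
    also have "\<dots> \<le> 2 ^ LT x k" using lg_mono[OF lw] lgth by (intro power_increasing) auto
    also have "\<dots> \<le> 2 ^ BndE x k" by (intro power_increasing) (auto simp: BndE_def)
    finally show ?thesis .
  qed
  have "sim Mr Mp ?w (enc x' k') c (BndE x k) th0" for c
  proof (rule sim_intro[OF wfr wfp chz])
    show "wh (run Mr ?w ?F s) < BndE x k" "ih (run Mr ?w ?F s) < BndE x k" for s
      using bw[of s] by (auto simp: BndE_def)
    show "wh (run Mp (enc x' k') c s) < BndE x k" "ih (run Mp (enc x' k') c s) < BndE x k" for s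
    proof -
      have "wh (run Mp (enc x' k') c s) + ih (run Mp (enc x' k') c s) \<le> c1 * (LT x k + SF1 k)"
        by (rule order.trans[OF spP S1b])
      then show "wh (run Mp (enc x' k') c s) < BndE x k" "ih (run Mp (enc x' k') c s) < BndE x k"
        unfolding BndE_def by linarith+
    qed
  qed (use h0 orc0 hb3 in auto)
  then show ?thesis using t lgx by blast
qed

end

sublocale red_setting \<subseteq> cc Mr Mp using wfr wfp by unfold_locales

context red_setting begin

lemma conc_fields: "st (conc A) = encS (AS A)" "ch (conc A) = AC A" "wh (conc A) = AH A" "ih (conc A) = AG A"
  by (simp_all add: conc_def)

lemma acc_cM: "st (run cM w c t) = accst cM \<longleftrightarrow> AS (arun w c t) = ACCs"
  using run_conc[of w c t] by (simp add: conc_def cM_def encS_inj)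

lemma acc_path_eq:
  assumes "sim Mr Mp w wp (\<lambda>i. i < length u \<and> u ! i) Bnd th"
  shows "acc_path cM w u \<longleftrightarrow> acc_path Mp wp u"
proof -
  let ?c = "\<lambda>i. i < length u \<and> u ! i"
  have ch: "ch (run cM w ?c t) = AC (arun w ?c t)" for t using run_conc[of w ?c t] by (simp add: conc_def)
  have "acc_path cM w u \<longleftrightarrow> (\<exists>t. AS (arun w ?c t) = ACCs \<and> (\<forall>s\<le>t. AC (arun w ?c s) \<le> length u) \<and> (\<exists>s\<le>t. AC (arun w ?c s) = length u))"
    unfolding acc_path_def Let_def acc_cM ch ..
  also have "\<dots> \<longleftrightarrow> acc_path Mp wp u"
    unfolding acc_path_def Let_def by (rule sim.F4[OF assms])
  finally show ?thesis .
qed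

lemma nacc_cM: "nacc cM (enc x k) = F x k"
proof -
  obtain x' k' th where p: "k' \<le> g k" "F x k = F' x' k'" "\<forall>c. sim Mr Mp (enc x k) (enc x' k') c (BndE x k) th"
    using per_input[of k x] by blast
  have "{u. acc_path cM (enc x k) u} = {u. acc_path Mp (enc x' k') u}"
    using acc_path_eq p(3) by blast
  then show ?thesis using p(2) cnt[of x' k'] by (simp add: nacc_def)
qed

lemma read_once_cM: "read_once Mp \<Longrightarrow> read_once cM"
proof -
  assume ro: "read_once Mp"
  show "read_once cM" unfolding read_once_def
  proof (intro allI)
    fix x k c t
    obtain x' k' th where p: "\<forall>c. sim Mr Mp (enc x k) (enc x' k') c (BndE x k) th"
      using per_input[of k x] by blast
    have "AC (arun (enc x k) c t) \<le> AC (arun (enc x k) c (Suc t))"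
      by (rule sim.F3[OF p[rule_format, of c]]) (use ro in \<open>simp add: read_once_def\<close>)
    then show "ch (run cM (enc x k) c t) \<le> ch (run cM (enc x k) c (Suc t))"
      using run_conc[of "enc x k" c t] run_conc[of "enc x k" c "Suc t"] by (simp add: conc_def)
  qed
qed

lemma lg_ge1: "1 \<le> lg n" by (rule lg_pos)

lemma BndE_bound: "2 * BndE x k \<le> (2 * (cR + 1 + c1 * (4 * cR + 5) * LV + c1 + (4 * cR + 5) * LV)) * (lg (length x) + (fR k + SF1 k))"
proof -
  let ?P = "lg (length x) + (fR k + SF1 k)"
  have P1: "1 \<le> ?P" using lg_ge1[of "length x"] by simp
  have sm: "SM x k \<le> cR * ?P" unfolding SM_def by (intro mult_le_mono2) simp
  have lt: "LT x k \<le> (4 * cR + 5) * LV * ?P"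
  proof -
    have "4 * SM x k + 5 \<le> 4 * (cR * ?P) + 5 * ?P"
      by (rule add_mono) (use sm P1 in simp_all)
    also have "\<dots> = (4 * cR + 5) * ?P" by (simp add: algebra_simps)
    finally have "4 * SM x k + 5 \<le> (4 * cR + 5) * ?P" .
    then have "(4 * SM x k + 5) * LV \<le> (4 * cR + 5) * ?P * LV" by (rule mult_le_mono1)
    then show ?thesis by (simp add: LT_def algebra_simps)
  qed
  have sf: "SF1 k \<le> ?P" by simp
  have "c1 * (LT x k + SF1 k) \<le> c1 * ((4 * cR + 5) * LV * ?P + ?P)"
    using lt sf by (intro mult_le_mono2 add_mono) auto
  also have "\<dots> = (c1 * (4 * cR + 5) * LV + c1) * ?P" by (simp add: algebra_simps)
  finally have c: "c1 * (LT x k + SF1 k) \<le> (c1 * (4 * cR + 5) * LV + c1) * ?P" .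
  have "BndE x k \<le> cR * ?P + ?P + (c1 * (4 * cR + 5) * LV + c1) * ?P + (4 * cR + 5) * LV * ?P"
    unfolding BndE_def using sm P1 c lt by linarith
  also have "\<dots> = (cR + 1 + c1 * (4 * cR + 5) * LV + c1 + (4 * cR + 5) * LV) * ?P" by (simp add: algebra_simps)
  finally have "2 * BndE x k \<le> 2 * ((cR + 1 + c1 * (4 * cR + 5) * LV + c1 + (4 * cR + 5) * LV) * ?P)" by simp
  then show ?thesis by (simp only: mult.assoc)
qed

lemma paraL_cM: "paraL_space cM"
  unfolding paraL_space_def
proof (intro exI conjI allI)
  show "computable (\<lambda>k. fR k + SF1 k)"
    unfolding SF1_def by (intro computable_add cfR computable_comp[OF computable_sum[OF cf1] cg])
  fix x k ch' t
  obtain x' k' th where p: "\<forall>c. sim Mr Mp (enc x k) (enc x' k') c (BndE x k) th"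
    using per_input[of k x] by blast
  have f1: "AH (arun (enc x k) ch' t) \<le> BndE x k \<and> AG (arun (enc x k) ch' t) = AH (arun (enc x k) ch' t)"
    by (rule sim.F1[OF p[rule_format, of ch']])
  have "wh (run cM (enc x k) ch' t) + ih (run cM (enc x k) ch' t) \<le> 2 * BndE x k"
    using run_conc[of "enc x k" ch' t] f1 by (simp add: conc_def)
  also have "\<dots> \<le> (2 * (cR + 1 + c1 * (4 * cR + 5) * LV + c1 + (4 * cR + 5) * LV)) * (lg (length x) + (fR k + SF1 k))"
    by (rule BndE_bound)
  finally show "wh (run cM (enc x k) ch' t) + ih (run cM (enc x k) ch' t)
      \<le> (2 * (cR + 1 + c1 * (4 * cR + 5) * LV + c1 + (4 * cR + 5) * LV)) * (lg (length x) + (fR k + SF1 k))" .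
qed

lemma kb_cM: "k_bounded cM"
  unfolding k_bounded_def
proof (intro exI conjI allI)
  show "computable (\<lambda>k. SFk k * ((4 * cR + 5) * LV * (1 + fR k)))"
    unfolding SFk_def
    by (intro computable_mul computable_comp[OF computable_sum[OF cfk] cg] computable_const computable_add cfR)
  fix x k c t
  obtain x' k' th where p: "k' \<le> g k" "\<forall>c. sim Mr Mp (enc x k) (enc x' k') c (BndE x k) th" "lg (length x') \<le> LT x k"
    using per_input[of k x] by blast
  obtain t' where t': "AC (arun (enc x k) c t) = ch (run Mp (enc x' k') c t')"
    using sim.F2[OF p(2)[rule_format, of c]] by blast
  have fk: "fk k' \<le> SFk k" unfolding SFk_def using p(1) by (intro member_le_sum) auto
  let ?n = "lg (length x)"
  have n1: "1 \<le> ?n" by (rule lg_ge1)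
  have lt: "LT x k \<le> (4 * cR + 5) * LV * (1 + fR k) * ?n"
  proof -
    have sm: "SM x k \<le> cR * ((1 + fR k) * ?n)" unfolding SM_def
      using n1 by (intro mult_le_mono2) (simp add: algebra_simps)
    have "4 * SM x k + 5 \<le> 4 * (cR * ((1 + fR k) * ?n)) + 5 * ((1 + fR k) * ?n)"
    proof (rule add_mono)
      show "4 * SM x k \<le> 4 * (cR * ((1 + fR k) * ?n))" using sm by simp
      have "1 \<le> (1 + fR k) * ?n" using n1 by (metis le_add1 mult_le_mono nat_mult_1 plus_1_eq_Suc)
      then show "5 \<le> 5 * ((1 + fR k) * ?n)" by simp
    qed
    also have "\<dots> = (4 * cR + 5) * (1 + fR k) * ?n" by (simp add: algebra_simps)
    finally have "4 * SM x k + 5 \<le> (4 * cR + 5) * (1 + fR k) * ?n" .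
    then have "(4 * SM x k + 5) * LV \<le> (4 * cR + 5) * (1 + fR k) * ?n * LV" by (rule mult_le_mono1)
    then show ?thesis by (simp add: LT_def algebra_simps)
  qed
  have "ch (run cM (enc x k) c t) = ch (run Mp (enc x' k') c t')"
    using run_conc[of "enc x k" c t] t' by (simp add: conc_def)
  also have "\<dots> \<le> fk k' * lg (length x')" by (rule kbP)
  also have "\<dots> \<le> SFk k * LT x k" using fk p(3) by (rule mult_le_mono)
  also have "\<dots> \<le> SFk k * ((4 * cR + 5) * LV * (1 + fR k) * ?n)" using lt by (rule mult_le_mono2)
  also have "\<dots> = SFk k * ((4 * cR + 5) * LV * (1 + fR k)) * ?n" by (simp add: algebra_simps)
  finally show "ch (run cM (enc x k) c t) \<le> SFk k * ((4 * cR + 5) * LV * (1 + fR k)) * lg (length x)" .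
qed

end

lemma class_closure:
  fixes F F' :: "bool list \<Rightarrow> nat \<Rightarrow> nat"
  assumes red: "plog_pars_red F F'"
    and wfp: "wf_tm Mp" and spP: "paraL_space Mp" and kbP: "k_bounded Mp" and cnt: "\<forall>x k. nacc Mp (enc x k) = F' x k"
  shows "\<exists>M. wf_tm M \<and> paraL_space M \<and> k_bounded M \<and> (\<forall>x k. nacc M (enc x k) = F x k)
           \<and> (read_once Mp \<longrightarrow> read_once M)"
proof -
  obtain Mr g where r: "wf_tm Mr" "deterministic Mr" "paraL_space Mr" "computable g"
    and rd: "\<forall>x k. \<exists>t x' k'. (st (run Mr (enc x k) (\<lambda>_. False) t) = accst Mr \<or>
                        st (run Mr (enc x k) (\<lambda>_. False) t) = rejst Mr)
                     \<and> orc (run Mr (enc x k) (\<lambda>_. False) t) = enc x' k'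
                     \<and> k' \<le> g k \<and> F x k = F' x' k'"
    using red unfolding plog_pars_red_def by blast
  obtain fR cR where fR: "computable fR" "\<forall>x k ch' t. wh (run Mr (enc x k) ch' t) + ih (run Mr (enc x k) ch' t)
                    \<le> cR * (lg (length x) + fR k)"
    using r(3) unfolding paraL_space_def by blast
  obtain f1 c1 where f1: "computable f1" "\<forall>x k ch' t. wh (run Mp (enc x k) ch' t) + ih (run Mp (enc x k) ch' t)
                    \<le> c1 * (lg (length x) + f1 k)"
    using spP unfolding paraL_space_def by blast
  obtain fk where fk: "computable fk" "\<forall>x k c t. ch (run Mp (enc x k) c t) \<le> fk k * lg (length x)"
    using kbP unfolding k_bounded_def by blast
  interpret red_setting Mr Mp g fR f1 fk cR c1 F F'
    by unfold_locales (use r rd fR f1 fk wfp cnt in auto)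
  show ?thesis using wf_cM paraL_cM kb_cM nacc_cM read_once_cM by blast
qed

theorem lemma11:
  fixes F F' :: "bool list \<Rightarrow> nat \<Rightarrow> nat"
  assumes "plog_pars_red F F'"
  shows "(F' \<in> sharp_para_W_L \<longrightarrow> F \<in> sharp_para_W_L)
       \<and> (F' \<in> sharp_para_beta_L \<longrightarrow> F \<in> sharp_para_beta_L)"
proof (intro conjI impI)
  assume "F' \<in> sharp_para_W_L"
  then obtain Mp where "wf_tm Mp" "paraL_space Mp" "k_bounded Mp" "\<forall>x k. nacc Mp (enc x k) = F' x k"
    unfolding sharp_para_W_L_def by blast
  then obtain M where "wf_tm M \<and> paraL_space M \<and> k_bounded M \<and> (\<forall>x k. nacc M (enc x k) = F x k)"
    using class_closure[OF assms] by blast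
  then show "F \<in> sharp_para_W_L" unfolding sharp_para_W_L_def by blast
next
  assume "F' \<in> sharp_para_beta_L"
  then obtain Mp where "wf_tm Mp" "paraL_space Mp" "k_bounded Mp" "read_once Mp" "\<forall>x k. nacc Mp (enc x k) = F' x k"
    unfolding sharp_para_beta_L_def by blast
  then obtain M where "wf_tm M \<and> paraL_space M \<and> k_bounded M \<and> (\<forall>x k. nacc M (enc x k) = F x k) \<and> read_once M"
    using class_closure[OF assms] by blast
  then show "F \<in> sharp_para_beta_L" unfolding sharp_para_beta_L_def by blast
qed


end
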